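(* Suppose $\sum_{k=0}^\infty\alpha_ky^k$ is a real power series with radius of convergence $0<r\le\infty$. There exists $D_W>0$ such that for $x\in\{c,1\}$ and $\sigma\ge1/4$ the map $W:\{u\in X_{\sigma,x}:\|u\|_{\sigma,x}<r\}\to X_{\sigma,x}$, $W(u):=\sum_{k=2}^\infty\alpha_ku^{*k}$, is analytic and: (a) for $j\in\mathbb{N}$, $u,y_1,\dots,y_j\in X_{\sigma,x}$ with $\|u\|_{\sigma,x}<r$, $(D^jW)(u)[y_1,\dots,y_j]=\sum_{k\ge\max(2,j)}\frac{k!}{(k-j)!}\alpha_ku^{*(k-j)}*y_1*\dots*y_j$; (b) for $2\le j\le22\nu^3+1$ and $y_1,\dots,y_{j-1},u\in X_{\sigma,x}$ with $\|u\|_{\sigma,x}\le\min(1,r)/2$: $\|W(u)\|_{\sigma,x}\le D_W\|u\|_{\sigma,x}^2$, $\|(DW)(u)\|_{\sigma,x}\le D_W\|u\|_{\sigma,x}$, and $\|D^jW(u)[y_1,\dots,y_{j-1},\cdot]\|_{\sigma,x}\le D_W\|y_1\|_{\sigma,x}\cdots\|y_{j-1}\|_{\sigma,x}$, where the norms of the linear maps $(DW)(u)$ and $D^jW(u)[y_1,\dots,y_{j-1},\cdot]$ are the matrix norms $\|\cdot\|_{\sigma,x}$ defined in the context; (c) for $L>0$ and $u\in X_{1,c}$ with $\|u\|_{1,c}\le\min(1,r)/2$ and $u(m)=0$ for $|m|\ge L$: $\|W(u)\chi_{\{|m|\ge3L\}}\|_{1/4,c}\le D_We^{-\frac94L^c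}\|u\|_{1,c}^2$.
   Context: $\nu\in\mathbb{N}$, $c:=0.01$, $|\cdot|$ the maximum norm on $\mathbb{Z}^\nu$. $D_{\nu,x}$ ($0<x\le1$) is $\sup_{n\in\mathbb{Z}^\nu,\sigma\ge1/4}\sum_m\frac{e^{\sigma|n|^x}}{e^{\sigma|m|^x}e^{\sigma|n-m|^x}}$ for $x<1$ and $\sup_{n,\sigma\ge1/4}\sum_m\frac{(1+|n|)^{\nu+1}e^{\sigma|n|}}{(1+|m|)^{\nu+1}e^{\sigma|m|}(1+|n-m|)^{\nu+1}e^{\sigma|n-m|}}$ for $x=1$; $D_N:=\max(D_{\nu,c},D_{\nu,1})$. Weights $w_{\sigma,c}(n)=D_Ne^{\sigma|n|^c}$, $w_{\sigma,1}(n)=D_N(1+|n|)^{\nu+1}e^{\sigma|n|}$. $X_{\sigma,x}$: sequences $u:\mathbb{Z}^\nu\to\mathbb{C}$ with $\|u\|_{\sigma,x}=\sum_mw_{\sigma,x}(m)|u(m)|<\infty$. For a matrix $R:\mathbb{Z}^\nu\times\mathbb{Z}^\nu\to\mathbb{C}$ (acting by $(Ru)(m)=\sum_nR(m,n)u(n)$), $\|R\|_{\sigma,x}:=\sup_n\sum_mw_{\sigma,x}(m-n)|R(m,n)|$. Convolution $(u*v)(m)=\sum_nu(m-n)v(n)$, $u^{*k}$ the $k$-th convolution power. $\chi_{\{|m|\ge3L\}}$ is the indicator function of $\{m:|m|\ge3L\}$ (multiplied pointwise). *)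

theory Defs
  imports "HOL-Analysis.Analysis"
begin

text \<open>Lattice points of Z^nu are modelled as int^'n with nu = CARD('n);
  sequences u : Z^nu -> C as functions int^'n => complex.\<close>

type_synonym 'n seq = "int^'n \<Rightarrow> complex"

definition cc :: real where "cc = 0.01"

definition maxnorm :: "int^'n::finite \<Rightarrow> real" where
  "maxnorm m = real_of_int (Max (range (\<lambda>i. \<bar>m $ i\<bar>)))"

definition Dc :: "'n::finite itself \<Rightarrow> real" where
  "Dc t = (SUP n\<in>(UNIV::(int^'n) set). SUP \<sigma>\<in>{1/4..}.
      infsum (\<lambda>m::int^'n. exp (\<sigma> * maxnorm n powr cc) /
        (exp (\<sigma> * maxnorm m powr cc) * exp (\<sigma> * maxnorm (n - m) powr cc))) UNIV)"

definition D1 :: "'n::finite itself \<Rightarrow> real" where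
  "D1 t = (SUP n\<in>(UNIV::(int^'n) set). SUP \<sigma>\<in>{1/4..}.
      infsum (\<lambda>m::int^'n.
        ((1 + maxnorm n) ^ (CARD('n) + 1) * exp (\<sigma> * maxnorm n)) /
        (((1 + maxnorm m) ^ (CARD('n) + 1) * exp (\<sigma> * maxnorm m)) *
         ((1 + maxnorm (n - m)) ^ (CARD('n) + 1) * exp (\<sigma> * maxnorm (n - m))))) UNIV)"

definition DN :: "'n::finite itself \<Rightarrow> real" where
  "DN t = max (Dc TYPE('n)) (D1 TYPE('n))"

text \<open>weights w_{sigma,x}; only x = cc and x = 1 are used\<close>
definition weight :: "real \<Rightarrow> real \<Rightarrow> int^'n::finite \<Rightarrow> real" where
  "weight \<sigma> x m = (if x = 1
      then DN TYPE('n) * (1 + maxnorm m) ^ (CARD('n) + 1) * exp (\<sigma> * maxnorm m)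
      else DN TYPE('n) * exp (\<sigma> * maxnorm m powr x))"

definition inX :: "real \<Rightarrow> real \<Rightarrow> 'n::finite seq \<Rightarrow> bool" where
  "inX \<sigma> x u \<longleftrightarrow> (\<lambda>m. weight \<sigma> x m * cmod (u m)) summable_on UNIV"

definition normX :: "real \<Rightarrow> real \<Rightarrow> 'n::finite seq \<Rightarrow> real" where
  "normX \<sigma> x u = infsum (\<lambda>m. weight \<sigma> x m * cmod (u m)) UNIV"

definition colsum :: "real \<Rightarrow> real \<Rightarrow> (int^'n::finite \<Rightarrow> int^'n \<Rightarrow> complex) \<Rightarrow> int^'n \<Rightarrow> ereal" where
  "colsum \<sigma> x R n = (if (\<lambda>m. weight \<sigma> x (m - n) * cmod (R m n)) summable_on UNIV
      then ereal (infsum (\<lambda>m. weight \<sigma> x (m - n) * cmod (R m n)) UNIV) else \<infinity>)"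

definition matnorm :: "real \<Rightarrow> real \<Rightarrow> (int^'n::finite \<Rightarrow> int^'n \<Rightarrow> complex) \<Rightarrow> ereal" where
  "matnorm \<sigma> x R = (SUP n. colsum \<sigma> x R n)"

definition matrix_of :: "('n::finite seq \<Rightarrow> 'n seq) \<Rightarrow> int^'n \<Rightarrow> int^'n \<Rightarrow> complex" where
  "matrix_of T m n = T (\<lambda>k. if k = n then 1 else 0) m"

definition sconv :: "'n::finite seq \<Rightarrow> 'n seq \<Rightarrow> 'n seq" where
  "sconv u v = (\<lambda>m. infsum (\<lambda>n. u (m - n) * v n) UNIV)"

definition delta0 :: "'n::finite seq" where
  "delta0 = (\<lambda>m. if m = 0 then 1 else 0)"

primrec conv_pow :: "'n::finite seq \<Rightarrow> nat \<Rightarrow> 'n seq" where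
  "conv_pow u 0 = delta0"
| "conv_pow u (Suc k) = sconv u (conv_pow u k)"

definition conv_list :: "'n::finite seq list \<Rightarrow> 'n seq" where
  "conv_list ys = foldr sconv ys delta0"

definition Wmap :: "(nat \<Rightarrow> real) \<Rightarrow> 'n::finite seq \<Rightarrow> 'n seq" where
  "Wmap \<alpha> u = (\<lambda>m. \<Sum>k. if 2 \<le> k then complex_of_real (\<alpha> k) * conv_pow u k m else 0)"

definition Wder :: "(nat \<Rightarrow> real) \<Rightarrow> nat \<Rightarrow> 'n::finite seq \<Rightarrow> 'n seq list \<Rightarrow> 'n seq" where
  "Wder \<alpha> j u ys = (\<lambda>m. \<Sum>k. if max 2 j \<le> k
      then complex_of_real (fact k / fact (k - j) * \<alpha> k) * sconv (conv_pow u (k - j)) (conv_list ys) m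
      else 0)"

definition ballX :: "real \<Rightarrow> real \<Rightarrow> ereal \<Rightarrow> 'n::finite seq set" where
  "ballX \<sigma> x R = {u. inX \<sigma> x u \<and> ereal (normX \<sigma> x u) < R}"

definition bml :: "real \<Rightarrow> real \<Rightarrow> nat \<Rightarrow> ('n::finite seq list \<Rightarrow> 'n seq) \<Rightarrow> real \<Rightarrow> bool" where
  "bml \<sigma> x j A C \<longleftrightarrow>
     (\<forall>ys. length ys = j \<and> (\<forall>y\<in>set ys. inX \<sigma> x y) \<longrightarrow>
        inX \<sigma> x (A ys) \<and> normX \<sigma> x (A ys) \<le> C * (\<Prod>y\<leftarrow>ys. normX \<sigma> x y)) \<and>
     (\<forall>ys i z a. length ys = j \<and> (\<forall>y\<in>set ys. inX \<sigma> x y) \<and> i < j \<and> inX \<sigma> x z \<longrightarrow>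
        A (ys[i := (\<lambda>m. (ys ! i) m + z m)]) = (\<lambda>m. A ys m + A (ys[i := z]) m) \<and>
        A (ys[i := (\<lambda>m. a * (ys ! i) m)]) = (\<lambda>m. a * A ys m))"

text \<open>Ds j is the j-th Frechet derivative of F on the open set U of X_{sigma,x}
  (Ds 0 = F, and Ds (j+1) u [y_1..y_j,h] is the Frechet derivative in direction h
  of u \<mapsto> Ds j u, in the norm of bounded j-multilinear maps)\<close>
definition X_higher_derivs :: "real \<Rightarrow> real \<Rightarrow> 'n::finite seq set \<Rightarrow> ('n seq \<Rightarrow> 'n seq)
    \<Rightarrow> (nat \<Rightarrow> 'n seq \<Rightarrow> 'n seq list \<Rightarrow> 'n seq) \<Rightarrow> bool" where
  "X_higher_derivs \<sigma> x U F Ds \<longleftrightarrow>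
     (\<forall>u\<in>U. Ds 0 u [] = F u) \<and>
     (\<forall>j. \<forall>u\<in>U. \<exists>C. bml \<sigma> x j (Ds j u) C) \<and>
     (\<forall>j. \<forall>u\<in>U. \<forall>\<epsilon>>0. \<exists>\<delta>>0. \<forall>h. inX \<sigma> x h \<and> normX \<sigma> x h < \<delta> \<and> (\<lambda>m. u m + h m) \<in> U \<longrightarrow>
        (\<forall>ys. length ys = j \<and> (\<forall>y\<in>set ys. inX \<sigma> x y) \<longrightarrow>
          normX \<sigma> x (\<lambda>m. Ds j (\<lambda>k. u k + h k) ys m - Ds j u ys m - Ds (Suc j) u (ys @ [h]) m)
            \<le> \<epsilon> * normX \<sigma> x h * (\<Prod>y\<leftarrow>ys. normX \<sigma> x y)))"

text \<open>analyticity on U: near each point F is the sum of a normally convergent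
  series of bounded homogeneous polynomials\<close>
definition X_analytic_on :: "real \<Rightarrow> real \<Rightarrow> 'n::finite seq set \<Rightarrow> ('n seq \<Rightarrow> 'n seq) \<Rightarrow> bool" where
  "X_analytic_on \<sigma> x U F \<longleftrightarrow>
     (\<forall>u\<in>U. \<exists>\<rho>>0. \<exists>P C.
        (\<forall>h. inX \<sigma> x h \<and> normX \<sigma> x h < \<rho> \<longrightarrow> (\<lambda>m. u m + h m) \<in> U) \<and>
        (\<forall>j. bml \<sigma> x j (P j) (C j)) \<and> summable (\<lambda>j. C j * \<rho> ^ j) \<and>
        (\<forall>h. inX \<sigma> x h \<and> normX \<sigma> x h < \<rho> \<longrightarrow>
           inX \<sigma> x (F (\<lambda>k. u k + h k)) \<and>
           (\<lambda>n. normX \<sigma> x (\<lambda>m. F (\<lambda>k. u k + h k) m - (\<Sum>j<n. P j (replicate j h) m))) \<longlonglongrightarrow> 0))"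

end

theory Submission
  imports Defs
begin

lemma single_le_infsum:
  fixes f :: "'a \<Rightarrow> real"
  assumes "f summable_on UNIV" "\<And>x. 0 \<le> f x"
  shows "f a \<le> infsum f UNIV"
proof -
  have "infsum f {a} \<le> infsum f UNIV"
    by (rule infsum_mono_neutral) (use assms in auto)
  then show ?thesis by simp
qed

locale wsp =
  fixes w :: "int^'n::finite \<Rightarrow> real"
  assumes w1: "\<And>m. 1 \<le> w m"
  and wmul: "\<And>a b. w (a + b) \<le> w a * w b"
begin

definition inW :: "'n seq \<Rightarrow> bool" where
  "inW u \<longleftrightarrow> (\<lambda>m. w m * cmod (u m)) summable_on UNIV"
definition nW :: "'n seq \<Rightarrow> real" where
  "nW u = infsum (\<lambda>m. w m * cmod (u m)) UNIV"

lemma w_pos: "0 < w m" using w1[of m] by linarith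

lemma wt_nonneg: "0 \<le> w m * cmod (u m)"
  using w_pos[of m] by simp

lemma nW_nonneg: "0 \<le> nW u"
  unfolding nW_def by (rule infsum_nonneg) (simp add: wt_nonneg)

lemma single_le: "inW u \<Longrightarrow> w m * cmod (u m) \<le> nW u"
  unfolding nW_def inW_def by (rule single_le_infsum) (auto simp: wt_nonneg)

lemma pt_le: "inW u \<Longrightarrow> cmod (u m) \<le> nW u"
proof -
  assume "inW u"
  have "cmod (u m) \<le> w m * cmod (u m)" using w1[of m] by (simp add: mult_right_mono[of 1 "w m", simplified])
  then show ?thesis using single_le[OF \<open>inW u\<close>, of m] by linarith
qed

lemma inW_abs: "inW u \<Longrightarrow> (\<lambda>m. cmod (u m)) summable_on UNIV"
  unfolding inW_def
  by (rule summable_on_comparison_test) (auto simp: w1 mult_right_mono[of 1 _ "cmod _", simplified])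

lemma inW_summable: "inW u \<Longrightarrow> u summable_on UNIV"
  using inW_abs abs_summable_summable by blast

lemma nW_zero_iff: "inW u \<Longrightarrow> nW u = 0 \<longleftrightarrow> u = (\<lambda>_. 0)"
proof
  assume "inW u" "nW u = 0"
  show "u = (\<lambda>_. 0)"
  proof
    fix m
    have "w m * cmod (u m) \<le> 0" using single_le[OF \<open>inW u\<close>, of m] \<open>nW u = 0\<close> by simp
    then show "u m = 0" using w_pos[of m] by (simp add: mult_le_0_iff)
  qed
qed (simp add: nW_def)

lemma inW_0[simp]: "inW (\<lambda>_. 0)" by (simp add: inW_def)
lemma nW_0[simp]: "nW (\<lambda>_. 0) = 0" by (simp add: nW_def)

lemma inW_add: "inW u \<Longrightarrow> inW v \<Longrightarrow> inW (\<lambda>m. u m + v m)"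
  unfolding inW_def
proof -
  assume a: "(\<lambda>m. w m * cmod (u m)) summable_on UNIV" "(\<lambda>m. w m * cmod (v m)) summable_on UNIV"
  have "(\<lambda>m. w m * cmod (u m) + w m * cmod (v m)) summable_on UNIV"
    using summable_on_add[OF a] .
  then show "(\<lambda>m. w m * cmod (u m + v m)) summable_on UNIV"
  proof (rule summable_on_comparison_test)
    fix m
    show "w m * cmod (u m + v m) \<le> w m * cmod (u m) + w m * cmod (v m)"
      unfolding distrib_left[symmetric] by (rule mult_left_mono) (auto simp: norm_triangle_ineq w_pos less_imp_le)
  qed (rule wt_nonneg)
qed

lemma nW_add: "inW u \<Longrightarrow> inW v \<Longrightarrow> nW (\<lambda>m. u m + v m) \<le> nW u + nW v"
proof -
  assume a: "inW u" "inW v"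
  have "nW (\<lambda>m. u m + v m) \<le> infsum (\<lambda>m. w m * cmod (u m) + w m * cmod (v m)) UNIV"
    unfolding nW_def
  proof (rule infsum_mono)
    fix m
    show "w m * cmod (u m + v m) \<le> w m * cmod (u m) + w m * cmod (v m)"
      unfolding distrib_left[symmetric] by (rule mult_left_mono) (auto simp: norm_triangle_ineq w_pos less_imp_le)
  qed (use a inW_add[OF a] in \<open>auto simp: inW_def intro!: summable_on_add\<close>)
  also have "\<dots> = nW u + nW v" unfolding nW_def
    by (rule infsum_add) (use a in \<open>auto simp: inW_def\<close>)
  finally show ?thesis .
qed

lemma inW_scale: "inW u \<Longrightarrow> inW (\<lambda>m. c * u m)"
  unfolding inW_def
proof -
  assume "(\<lambda>m. w m * cmod (u m)) summable_on UNIV"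
  then have "(\<lambda>m. cmod c * (w m * cmod (u m))) summable_on UNIV" by (rule summable_on_cmult_right)
  then show "(\<lambda>m. w m * cmod (c * u m)) summable_on UNIV" by (simp add: norm_mult ac_simps)
qed

lemma nW_scale: "nW (\<lambda>m. c * u m) = cmod c * nW u"
proof -
  have "nW (\<lambda>m. c * u m) = infsum (\<lambda>m. cmod c * (w m * cmod (u m))) UNIV"
    unfolding nW_def by (simp add: norm_mult ac_simps)
  also have "\<dots> = cmod c * nW u" unfolding nW_def by (rule infsum_cmult_right')
  finally show ?thesis .
qed

lemma inW_neg: "inW u \<Longrightarrow> inW (\<lambda>m. - u m)"
  using inW_scale[of u "-1"] by simp

lemma nW_neg: "nW (\<lambda>m. - u m) = nW u"
  using nW_scale[of "-1" u] by simp

lemma inW_diff: "inW u \<Longrightarrow> inW v \<Longrightarrow> inW (\<lambda>m. u m - v m)"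
  using inW_add[OF _ inW_neg, of u v] by simp

lemma nW_diff: "inW u \<Longrightarrow> inW v \<Longrightarrow> nW (\<lambda>m. u m - v m) \<le> nW u + nW v"
  using nW_add[OF _ inW_neg, of u v] nW_neg[of v] by simp

lemma inW_sum: "finite I \<Longrightarrow> (\<And>i. i \<in> I \<Longrightarrow> inW (f i)) \<Longrightarrow> inW (\<lambda>m. \<Sum>i\<in>I. f i m)"
  by (induction I rule: finite_induct) (auto intro: inW_add)

lemma nW_sum: "finite I \<Longrightarrow> (\<And>i. i \<in> I \<Longrightarrow> inW (f i)) \<Longrightarrow> nW (\<lambda>m. \<Sum>i\<in>I. f i m) \<le> (\<Sum>i\<in>I. nW (f i))"
proof (induction I rule: finite_induct)
  case (insert x F)
  have "nW (\<lambda>m. \<Sum>i\<in>insert x F. f i m) = nW (\<lambda>m. f x m + (\<Sum>i\<in>F. f i m))"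
    using insert by simp
  also have "\<dots> \<le> nW (f x) + nW (\<lambda>m. \<Sum>i\<in>F. f i m)"
    by (rule nW_add) (use insert in \<open>auto intro: inW_sum\<close>)
  also have "\<dots> \<le> nW (f x) + (\<Sum>i\<in>F. nW (f i))" using insert by simp
  finally show ?case using insert by simp
qed simp

lemma nW_mono: "inW v \<Longrightarrow> (\<And>m. cmod (u m) \<le> cmod (v m)) \<Longrightarrow> inW u \<and> nW u \<le> nW v"
proof -
  assume a: "inW v" "\<And>m. cmod (u m) \<le> cmod (v m)"
  have s: "inW u" unfolding inW_def
    by (rule summable_on_comparison_test[OF a(1)[unfolded inW_def]])
       (auto simp: wt_nonneg a(2) w_pos intro!: mult_left_mono less_imp_le)
  moreover have "nW u \<le> nW v" unfolding nW_def
    by (rule infsum_mono) (use s a in \<open>auto simp: inW_def w_pos intro!: mult_left_mono less_imp_le\<close>)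
  ultimately show ?thesis by simp
qed

end

lemma has_sum_shift:
  fixes f :: "int^'n::finite \<Rightarrow> 'a::topological_comm_monoid_add"
  shows "((\<lambda>m. f (m - n)) has_sum S) UNIV \<longleftrightarrow> (f has_sum S) UNIV"
  by (rule has_sum_reindex_bij_witness[of _ "\<lambda>m. m + n" "\<lambda>m. m - n"]) auto

lemma summable_shift:
  fixes f :: "int^'n::finite \<Rightarrow> 'a::topological_comm_monoid_add"
  shows "(\<lambda>m. f (m - n)) summable_on UNIV \<longleftrightarrow> f summable_on UNIV"
  using has_sum_shift by (metis summable_on_def)

lemma infsum_shift:
  fixes f :: "int^'n::finite \<Rightarrow> 'a::{topological_comm_monoid_add,t2_space}"
  shows "infsum (\<lambda>m. f (m - n)) UNIV = infsum f UNIV"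
  by (rule infsum_reindex_bij_witness[of _ "\<lambda>m. m + n" "\<lambda>m. m - n"]) auto

lemma infsum_neg_var:
  fixes f :: "int^'n::finite \<Rightarrow> 'a::{topological_comm_monoid_add,t2_space}"
  shows "infsum (\<lambda>n. f (m - n)) UNIV = infsum f UNIV"
  by (rule infsum_reindex_bij_witness[of _ "\<lambda>k. m - k" "\<lambda>k. m - k"]) auto

lemma sconv_comm: "sconv u v = sconv v u"
proof
  fix m
  show "sconv u v m = sconv v u m"
    unfolding sconv_def
    by (rule infsum_reindex_bij_witness[of _ "\<lambda>k. m - k" "\<lambda>k. m - k"]) (auto simp: mult.commute)
qed

context wsp begin

lemma conv_abs_summable:
  assumes "inW u" "inW v"
  shows "(\<lambda>n. cmod (u (m - n) * v n)) summable_on UNIV"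
proof (rule summable_on_comparison_test)
  show "(\<lambda>n. nW u * cmod (v n)) summable_on UNIV"
    by (rule summable_on_cmult_right) (rule inW_abs[OF assms(2)])
  fix n show "cmod (u (m - n) * v n) \<le> nW u * cmod (v n)"
    by (simp add: norm_mult mult_right_mono pt_le[OF assms(1)])
qed simp

lemma conv_summable:
  assumes "inW u" "inW v"
  shows "(\<lambda>n. u (m - n) * v n) summable_on UNIV"
  by (rule abs_summable_summable) (rule conv_abs_summable[OF assms])

lemma sconv_bound:
  assumes u: "inW u" and v: "inW v"
  shows "inW (sconv u v) \<and> nW (sconv u v) \<le> nW u * nW v"
proof -
  define G where "G = (\<lambda>(n::int^'n, m::int^'n). w (m - n) * cmod (u (m - n)) * (w n * cmod (v n)))"
  have hu: "((\<lambda>k. w k * cmod (u k)) has_sum nW u) UNIV"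
    using u unfolding inW_def nW_def by (simp add: has_sum_infsum)
  have hv: "((\<lambda>k. w k * cmod (v k)) has_sum nW v) UNIV"
    using v unfolding inW_def nW_def by (simp add: has_sum_infsum)
  have inner: "((\<lambda>m. G (n, m)) has_sum (nW u * (w n * cmod (v n)))) UNIV" for n
  proof -
    have "((\<lambda>m. w (m - n) * cmod (u (m - n))) has_sum nW u) UNIV"
      using has_sum_shift[of "\<lambda>k. w k * cmod (u k)" n] hu by simp
    from has_sum_cmult_left[OF this, of "w n * cmod (v n)"] show ?thesis
      unfolding G_def by simp
  qed
  have outer: "((\<lambda>n. nW u * (w n * cmod (v n))) has_sum (nW u * nW v)) UNIV"
    by (rule has_sum_cmult_right[OF hv])
  have Gnn: "G p \<ge> 0" for p
    unfolding G_def by (auto simp: case_prod_beta wt_nonneg)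
  have Gs: "G summable_on (UNIV \<times> UNIV)"
    by (rule summable_on_SigmaI[where g="\<lambda>n. nW u * (w n * cmod (v n))", OF inner])
       (use outer Gnn in \<open>auto simp: summable_on_def\<close>)
  have Gh: "(G has_sum (nW u * nW v)) (UNIV \<times> UNIV)"
    by (rule has_sum_SigmaI[OF inner outer Gs])
  define G' where "G' = (\<lambda>(m, n). G (n, m))"
  have G'h: "(G' has_sum (nW u * nW v)) (UNIV \<times> UNIV)"
    using Gh has_sum_swap[where f=G and S="nW u * nW v" and A=UNIV and B=UNIV] unfolding G'_def by blast
  have G's: "G' summable_on UNIV \<times> UNIV" using G'h summable_on_def by blast
  have G'inner: "(\<lambda>n. G' (m, n)) summable_on UNIV" for m
    using summable_on_SigmaD1[of "\<lambda>m n. G' (m, n)" UNIV "\<lambda>_. UNIV" m] G's by simp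
  have G'outer: "((\<lambda>m. infsum (\<lambda>n. G' (m, n)) UNIV) has_sum (nW u * nW v)) UNIV"
    by (rule has_sum_SigmaD[OF G'h]) (use G'inner in \<open>auto simp: has_sum_infsum\<close>)
  have pt: "w m * cmod (sconv u v m) \<le> infsum (\<lambda>n. G' (m, n)) UNIV" for m
  proof -
    have "w m * cmod (sconv u v m) \<le> w m * infsum (\<lambda>n. cmod (u (m - n) * v n)) UNIV"
      unfolding sconv_def
      by (rule mult_left_mono[OF norm_infsum_bound]) (use conv_abs_summable[OF u v] w_pos in \<open>auto intro: less_imp_le\<close>)
    also have "\<dots> = infsum (\<lambda>n. w m * cmod (u (m - n) * v n)) UNIV"
      by (rule infsum_cmult_right'[symmetric])
    also have "\<dots> \<le> infsum (\<lambda>n. G' (m, n)) UNIV"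
    proof (rule infsum_mono)
      show "(\<lambda>n. w m * cmod (u (m - n) * v n)) summable_on UNIV"
        by (rule summable_on_cmult_right) (rule conv_abs_summable[OF u v])
      show "(\<lambda>n. G' (m, n)) summable_on UNIV" by (rule G'inner)
      fix n
      have "w m \<le> w (m - n) * w n" using wmul[of "m - n" n] by simp
      then have "w m * (cmod (u (m - n)) * cmod (v n)) \<le> (w (m - n) * w n) * (cmod (u (m - n)) * cmod (v n))"
        by (rule mult_right_mono) simp
      then show "w m * cmod (u (m - n) * v n) \<le> G' (m, n)"
        unfolding G'_def G_def by (simp add: norm_mult ac_simps)
    qed
    finally show ?thesis .
  qed
  have s1: "inW (sconv u v)" unfolding inW_def
    by (rule summable_on_comparison_test[of "\<lambda>m. infsum (\<lambda>n. G' (m, n)) UNIV"])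
       (use G'outer pt in \<open>auto simp: summable_on_def wt_nonneg\<close>)
  have "nW (sconv u v) \<le> infsum (\<lambda>m. infsum (\<lambda>n. G' (m, n)) UNIV) UNIV"
    unfolding nW_def by (rule infsum_mono) (use s1 G'outer pt in \<open>auto simp: inW_def summable_on_def\<close>)
  also have "\<dots> = nW u * nW v" using G'outer infsumI by blast
  finally show ?thesis using s1 by simp
qed

lemma inW_sconv: "inW u \<Longrightarrow> inW v \<Longrightarrow> inW (sconv u v)"
  using sconv_bound by blast
lemma nW_sconv: "inW u \<Longrightarrow> inW v \<Longrightarrow> nW (sconv u v) \<le> nW u * nW v"
  using sconv_bound by blast

end

lemma conv_prod_has_sum:
  fixes p q :: "int^'n::finite \<Rightarrow> real"
  assumes p: "(p has_sum P) UNIV" and q: "(q has_sum Q) UNIV"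
    and pn: "\<And>a. p a \<ge> 0" and qn: "\<And>a. q a \<ge> 0"
  shows "((\<lambda>(a, b). p (a - b) * q b) has_sum (P * Q)) UNIV"
proof -
  define G where "G = (\<lambda>(b::int^'n, a::int^'n). p (a - b) * q b)"
  have inner: "((\<lambda>a. G (b, a)) has_sum (P * q b)) UNIV" for b
  proof -
    have "((\<lambda>a. p (a - b)) has_sum P) UNIV"
      using has_sum_shift[of p b] p by simp
    from has_sum_cmult_left[OF this, of "q b"] show ?thesis
      unfolding G_def by simp
  qed
  have outer: "((\<lambda>b. P * q b) has_sum (P * Q)) UNIV"
    by (rule has_sum_cmult_right[OF q])
  have Gs: "G summable_on (UNIV \<times> UNIV)"
    by (rule summable_on_SigmaI[where g="\<lambda>b. P * q b", OF inner])
       (use outer pn qn in \<open>auto simp: summable_on_def G_def\<close>)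
  have Gh: "(G has_sum (P * Q)) (UNIV \<times> UNIV)"
    by (rule has_sum_SigmaI[OF inner outer Gs])
  show ?thesis
    using Gh has_sum_swap[where f=G and S="P * Q" and A=UNIV and B=UNIV] unfolding G_def by simp
qed

lemma delta0_conv: "sconv u delta0 = u"
proof
  fix m
  have "sconv u delta0 m = infsum (\<lambda>n. u (m - n) * delta0 n) {0}"
    unfolding sconv_def by (rule infsum_cong_neutral) (auto simp: delta0_def)
  then show "sconv u delta0 m = u m" by (simp add: delta0_def)
qed

lemma conv_delta0: "sconv delta0 u = u"
  using delta0_conv[of u] sconv_comm[of u delta0] by simp

lemma sconv_scale_left: "sconv (\<lambda>m. c * u m) v = (\<lambda>m. c * sconv u v m)"
  unfolding sconv_def by (simp add: mult.assoc infsum_cmult_right')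

lemma sconv_scale_right: "sconv u (\<lambda>m. c * v m) = (\<lambda>m. c * sconv u v m)"
  using sconv_scale_left[of c v u] sconv_comm by metis

context wsp begin

lemma inW_delta0: "inW delta0"
  unfolding inW_def by (rule summable_on_cong_neutral[where S="{0}", THEN iffD1]) (auto simp: delta0_def)

lemma nW_delta0: "nW delta0 = w 0"
proof -
  have "nW delta0 = infsum (\<lambda>m. w m * cmod (delta0 m)) {0}"
    unfolding nW_def by (rule infsum_cong_neutral) (auto simp: delta0_def)
  then show ?thesis by (simp add: delta0_def)
qed

lemma sconv_add_left:
  assumes "inW u" "inW v" "inW z"
  shows "sconv (\<lambda>m. u m + v m) z = (\<lambda>m. sconv u z m + sconv v z m)"
proof
  fix m show "sconv (\<lambda>m. u m + v m) z m = sconv u z m + sconv v z m"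
    unfolding sconv_def using conv_summable[OF assms(1,3)] conv_summable[OF assms(2,3)]
    by (simp add: distrib_right infsum_add)
qed

lemma sconv_add_right:
  assumes "inW u" "inW v" "inW z"
  shows "sconv z (\<lambda>m. u m + v m) = (\<lambda>m. sconv z u m + sconv z v m)"
  using sconv_add_left[OF assms] sconv_comm by metis

lemma sconv_assoc:
  assumes u: "inW u" and v: "inW v" and z: "inW z"
  shows "sconv (sconv u v) z = sconv u (sconv v z)"
proof
  fix m
  define H where "H = (\<lambda>(a, b). u (m - a) * (v (a - b) * z b))"
  have hv: "((\<lambda>k. cmod (v k)) has_sum infsum (\<lambda>k. cmod (v k)) UNIV) UNIV"
    using inW_abs[OF v] by (simp add: has_sum_infsum)
  have hz: "((\<lambda>k. cmod (z k)) has_sum infsum (\<lambda>k. cmod (z k)) UNIV) UNIV"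
    using inW_abs[OF z] by (simp add: has_sum_infsum)
  have P: "(\<lambda>(a, b). cmod (v (a - b)) * cmod (z b)) summable_on UNIV"
    using conv_prod_has_sum[OF hv hz] summable_on_def by auto
  have Hs: "H summable_on UNIV"
  proof (rule abs_summable_summable)
    show "(\<lambda>p. norm (H p)) summable_on UNIV"
    proof (rule summable_on_comparison_test)
      show "(\<lambda>p. nW u * (case p of (a, b) \<Rightarrow> cmod (v (a - b)) * cmod (z b))) summable_on UNIV"
        by (rule summable_on_cmult_right[OF P])
      fix p :: "(int^'n) \<times> (int^'n)"
      obtain a b where p: "p = (a, b)" by fastforce
      show "norm (H p) \<le> nW u * (case p of (a, b) \<Rightarrow> cmod (v (a - b)) * cmod (z b))"
        unfolding p H_def using pt_le[OF u, of "m - a"]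
        by (simp add: norm_mult mult_right_mono)
    qed simp
  qed
  have Hs2: "(\<lambda>(a, b). u (m - a) * (v (a - b) * z b)) summable_on UNIV \<times> UNIV"
    using Hs unfolding H_def by simp
  have "sconv u (sconv v z) m = infsum (\<lambda>a. infsum (\<lambda>b. u (m - a) * (v (a - b) * z b)) UNIV) UNIV"
    unfolding sconv_def by (simp add: infsum_cmult_right')
  also have "\<dots> = infsum (\<lambda>b. infsum (\<lambda>a. u (m - a) * (v (a - b) * z b)) UNIV) UNIV"
    by (rule infsum_swap_banach) (use Hs2 in simp)
  also have "\<dots> = infsum (\<lambda>b. infsum (\<lambda>k. u (m - b - k) * v k * z b) UNIV) UNIV"
  proof (rule infsum_cong)
    fix b
    show "infsum (\<lambda>a. u (m - a) * (v (a - b) * z b)) UNIV = infsum (\<lambda>k. u (m - b - k) * v k * z b) UNIV"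
      by (rule infsum_reindex_bij_witness[of _ "\<lambda>k. k + b" "\<lambda>a. a - b"]) (auto simp: algebra_simps)
  qed
  also have "\<dots> = sconv (sconv u v) z m"
    unfolding sconv_def by (simp add: infsum_cmult_left')
  finally show "sconv (sconv u v) z m = sconv u (sconv v z) m" by simp
qed

end

interpretation one: wsp "\<lambda>_::int^'n::finite. 1::real"
  by unfold_locales auto

lemma one_inW_iff: "one.inW u \<longleftrightarrow> (\<lambda>m. cmod (u m)) summable_on UNIV"
  by (simp add: one.inW_def)

lemma (in wsp) inW_one: "inW u \<Longrightarrow> one.inW u"
  using inW_abs one_inW_iff by blast

typedef (overloaded) 'n l1 = "{u :: 'n::finite seq. one.inW u}" morphisms rep abs1
  by (rule exI[of _ "\<lambda>_. 0"]) simp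

setup_lifting type_definition_l1

instantiation l1 :: (finite) comm_ring_1
begin
lift_definition zero_l1 :: "'n::finite l1" is "\<lambda>_. 0" by simp
lift_definition one_l1 :: "'n::finite l1" is delta0 by (rule one.inW_delta0)
lift_definition plus_l1 :: "'n::finite l1 \<Rightarrow> 'n l1 \<Rightarrow> 'n l1" is "\<lambda>u v m. u m + v m" by (rule one.inW_add)
lift_definition uminus_l1 :: "'n::finite l1 \<Rightarrow> 'n l1" is "\<lambda>u m. - u m" by (rule one.inW_neg)
lift_definition minus_l1 :: "'n::finite l1 \<Rightarrow> 'n l1 \<Rightarrow> 'n l1" is "\<lambda>u v m. u m - v m" by (rule one.inW_diff)
lift_definition times_l1 :: "'n::finite l1 \<Rightarrow> 'n l1 \<Rightarrow> 'n l1" is sconv by (rule one.inW_sconv)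
instance
proof
  fix a b c :: "'a l1"
  show "a * b * c = a * (b * c)" by transfer (rule one.sconv_assoc)
  show "a * b = b * a" by transfer (rule sconv_comm)
  show "1 * a = a" by transfer (rule conv_delta0)
  show "(a + b) * c = a * c + b * c" by transfer (rule one.sconv_add_left)
  show "a + b + c = a + (b + c)" by transfer (simp add: add.assoc)
  show "a + b = b + a" by transfer (simp add: add.commute)
  show "0 + a = a" by transfer simp
  show "- a + a = 0" by transfer simp
  show "a - b = a + - b" by transfer simp
  show "(0::'a l1) \<noteq> 1"
  proof transfer
    show "(\<lambda>_. 0) \<noteq> (delta0 :: 'a seq)" by (metis delta0_def one_neq_zero)
  qed
qed
end

lift_definition scal :: "complex \<Rightarrow> 'n::finite l1 \<Rightarrow> 'n l1" is "\<lambda>c u m. c * u m" by (rule one.inW_scale)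

lemma rep_pow: "conv_pow (rep x) k = rep (x ^ k)"
  by (induction k) (simp_all add: one_l1.rep_eq times_l1.rep_eq)

lemma conv_pow_l1: "one.inW u \<Longrightarrow> conv_pow u k = rep (abs1 u ^ k)"
  using rep_pow[of "abs1 u" k] by (simp add: abs1_inverse)

lemma scal_mult: "scal c a * b = scal c (a * b)"
  by transfer (rule sconv_scale_left)

lemma mult_scal: "a * scal c b = scal c (a * b)"
  by transfer (rule sconv_scale_right)

context wsp begin

lemma series_bound:
  assumes a: "\<And>k. inW (a k)" and s: "summable (\<lambda>k. nW (a k))"
  shows "(\<forall>m. summable (\<lambda>k. a k m)) \<and> inW (\<lambda>m. \<Sum>k. a k m) \<and> nW (\<lambda>m. \<Sum>k. a k m) \<le> (\<Sum>k. nW (a k))"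
proof -
  define F where "F = (\<lambda>(k::nat, m::int^'n). w m * cmod (a k m))"
  have Fnn: "F p \<ge> 0" for p by (auto simp: F_def case_prod_beta wt_nonneg)
  have inner: "((\<lambda>m. F (k, m)) has_sum nW (a k)) UNIV" for k
    using a[of k] unfolding F_def inW_def nW_def by (simp add: has_sum_infsum)
  have outer: "((\<lambda>k. nW (a k)) has_sum (\<Sum>k. nW (a k))) UNIV"
    by (rule sums_nonneg_imp_has_sum) (use s nW_nonneg in \<open>auto simp: summable_sums\<close>)
  have Fs: "F summable_on (UNIV \<times> UNIV)"
    by (rule summable_on_SigmaI[where g="\<lambda>k. nW (a k)", OF inner])
       (use outer Fnn in \<open>auto simp: summable_on_def\<close>)
  have Fh: "(F has_sum (\<Sum>k. nW (a k))) (UNIV \<times> UNIV)"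
    by (rule has_sum_SigmaI[OF inner outer Fs])
  define F' where "F' = (\<lambda>(m, k). F (k, m))"
  have F'h: "(F' has_sum (\<Sum>k. nW (a k))) (UNIV \<times> UNIV)"
    using Fh has_sum_swap[where f=F and S="\<Sum>k. nW (a k)" and A=UNIV and B=UNIV] unfolding F'_def by blast
  have F's: "F' summable_on UNIV \<times> UNIV" using F'h summable_on_def by blast
  have F'inner: "(\<lambda>k. F' (m, k)) summable_on UNIV" for m
    using summable_on_SigmaD1[of "\<lambda>m k. F' (m, k)" UNIV "\<lambda>_. UNIV" m] F's by simp
  have F'outer: "((\<lambda>m. infsum (\<lambda>k. F' (m, k)) UNIV) has_sum (\<Sum>k. nW (a k))) UNIV"
    by (rule has_sum_SigmaD[OF F'h]) (use F'inner in \<open>auto simp: has_sum_infsum\<close>)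
  have sm1: "summable (\<lambda>k. w m * cmod (a k m))" for m
    using F'inner[of m] summable_on_UNIV_nonneg_real_iff[of "\<lambda>k. w m * cmod (a k m)"]
    by (simp add: F'_def F_def wt_nonneg)
  have sm2: "summable (\<lambda>k. norm (a k m))" for m
  proof -
    have "summable (\<lambda>k. (1 / w m) * (w m * cmod (a k m)))" by (rule summable_mult[OF sm1])
    then show ?thesis using w_pos[of m] by simp
  qed
  have sm: "summable (\<lambda>k. a k m)" for m by (rule summable_norm_cancel[OF sm2])
  have eqi: "infsum (\<lambda>k. F' (m, k)) UNIV = (\<Sum>k. w m * cmod (a k m))" for m
  proof -
    have "((\<lambda>k. w m * cmod (a k m)) has_sum (\<Sum>k. w m * cmod (a k m))) UNIV"
      by (rule sums_nonneg_imp_has_sum) (use sm1 in \<open>auto simp: summable_sums wt_nonneg\<close>)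
    then show ?thesis by (simp add: F'_def F_def infsumI)
  qed
  have pt: "w m * cmod (\<Sum>k. a k m) \<le> infsum (\<lambda>k. F' (m, k)) UNIV" for m
  proof -
    have "w m * cmod (\<Sum>k. a k m) \<le> w m * (\<Sum>k. norm (a k m))"
      by (rule mult_left_mono[OF summable_norm[OF sm2]]) (use w_pos in \<open>auto intro: less_imp_le\<close>)
    also have "\<dots> = (\<Sum>k. w m * cmod (a k m))" by (rule suminf_mult[OF sm2, symmetric])
    finally show ?thesis by (simp add: eqi)
  qed
  have s1: "inW (\<lambda>m. \<Sum>k. a k m)" unfolding inW_def
  proof (rule summable_on_comparison_test[of "\<lambda>m. infsum (\<lambda>k. F' (m, k)) UNIV"])
    show "(\<lambda>m. infsum (\<lambda>k. F' (m, k)) UNIV) summable_on UNIV" using F'outer summable_on_def by blast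
  qed (use pt wt_nonneg in auto)
  have "nW (\<lambda>m. \<Sum>k. a k m) \<le> infsum (\<lambda>m. infsum (\<lambda>k. F' (m, k)) UNIV) UNIV"
    unfolding nW_def by (rule infsum_mono) (use s1 F'outer pt in \<open>auto simp: inW_def summable_on_def\<close>)
  also have "\<dots> = (\<Sum>k. nW (a k))" using F'outer infsumI by blast
  finally show ?thesis using s1 sm by blast
qed

lemma series_tail:
  assumes a: "\<And>k. inW (a k)" and s: "summable (\<lambda>k. nW (a k))"
  shows "nW (\<lambda>m. (\<Sum>k. a k m) - (\<Sum>k<n. a k m)) \<le> (\<Sum>k. nW (a (k + n)))"
proof -
  have sm: "summable (\<lambda>k. a k m)" for m using series_bound[OF a s] by blast
  have "(\<lambda>m. (\<Sum>k. a k m) - (\<Sum>k<n. a k m)) = (\<lambda>m. \<Sum>k. a (k + n) m)"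
    using suminf_minus_initial_segment[OF sm] by simp
  moreover have "nW (\<lambda>m. \<Sum>k. a (k + n) m) \<le> (\<Sum>k. nW (a (k + n)))"
    using series_bound[of "\<lambda>k. a (k + n)"] a summable_ignore_initial_segment[OF s, of n] by blast
  ultimately show ?thesis by simp
qed

lemma series_tail_lim:
  assumes a: "\<And>k. inW (a k)" and s: "summable (\<lambda>k. nW (a k))"
  shows "(\<lambda>n. nW (\<lambda>m. (\<Sum>k. a k m) - (\<Sum>k<n. a k m))) \<longlonglongrightarrow> 0"
proof (rule tendsto_sandwich[of "\<lambda>_. 0" _ _ "\<lambda>n. \<Sum>k. nW (a (k + n))"])
  show "\<forall>\<^sub>F n in sequentially. 0 \<le> nW (\<lambda>m. (\<Sum>k. a k m) - (\<Sum>k<n. a k m))"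
    by (simp add: nW_nonneg)
  show "\<forall>\<^sub>F n in sequentially. nW (\<lambda>m. (\<Sum>k. a k m) - (\<Sum>k<n. a k m)) \<le> (\<Sum>k. nW (a (k + n)))"
    using series_tail[OF a s] by simp
  show "(\<lambda>n. \<Sum>k. nW (a (k + n))) \<longlonglongrightarrow> 0" by (rule suminf_exist_split2[OF s])
qed simp

end

lemma powser_poly_summable_aux:
  fixes \<alpha> :: "nat \<Rightarrow> real" and K :: real
  assumes K: "ereal K \<le> conv_radius \<alpha>"
  shows "\<bar>x\<bar> < K \<Longrightarrow> summable (\<lambda>k. real k ^ p * \<bar>\<alpha> k\<bar> * x ^ k)"
proof (induction p arbitrary: x)
  case 0
  have "ereal (norm x) < ereal K" using 0 by simp
  then have "ereal (norm x) < conv_radius \<alpha>" using K by (rule order_less_le_trans)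
  from abs_summable_in_conv_radius[OF this] have "summable (\<lambda>k. \<bar>\<alpha> k * x ^ k\<bar>)" by simp
  then have "summable (\<lambda>k. \<bar>\<alpha> k\<bar> * \<bar>x\<bar> ^ k)" by (simp add: abs_mult power_abs)
  then have "summable (\<lambda>k. \<bar>\<alpha> k\<bar> * x ^ k)"
    by (rule summable_comparison_test'[where N=0]) (simp add: abs_mult power_abs)
  then show ?case by simp
next
  case (Suc p)
  define c where "c = (\<lambda>k. real k ^ p * \<bar>\<alpha> k\<bar>)"
  have sm: "\<And>y. norm y < K \<Longrightarrow> summable (\<lambda>k. c k * y ^ k)"
    using Suc.IH by (simp add: c_def)
  have "summable (\<lambda>n. diffs c n * x ^ n)"
    by (rule termdiff_converges[OF _ sm]) (use Suc.prems in simp)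
  then have "summable (\<lambda>n. x * (diffs c n * x ^ n))" by (rule summable_mult)
  then have "summable (\<lambda>n. real (Suc n) ^ Suc p * \<bar>\<alpha> (Suc n)\<bar> * x ^ Suc n)"
    by (simp add: diffs_def c_def ac_simps)
  then have "summable (\<lambda>n. real (n + 1) ^ Suc p * \<bar>\<alpha> (n + 1)\<bar> * x ^ (n + 1))" by simp
  then show ?case using summable_iff_shift[of "\<lambda>n. real n ^ Suc p * \<bar>\<alpha> n\<bar> * x ^ n" 1] by simp
qed

lemma powser_poly_summable:
  fixes \<alpha> :: "nat \<Rightarrow> real"
  assumes t: "ereal \<bar>t\<bar> < conv_radius \<alpha>"
  shows "summable (\<lambda>k. real k ^ p * \<bar>\<alpha> k\<bar> * t ^ k)"
proof (cases "conv_radius \<alpha> = \<infinity>")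
  case True
  then show ?thesis by (intro powser_poly_summable_aux[of "\<bar>t\<bar> + 1"]) auto
next
  case False
  then obtain R where R: "conv_radius \<alpha> = ereal R" using t by (cases "conv_radius \<alpha>") auto
  then show ?thesis using t by (intro powser_poly_summable_aux[of R]) auto
qed

lemma rep_in: "one.inW (rep A)" using rep by simp

lemma rep_add: "rep (A + B) m = rep A m + rep B m" by (simp add: plus_l1.rep_eq)
lemma rep_diff: "rep (A - B) m = rep A m - rep B m" by (simp add: minus_l1.rep_eq)
lemma rep_uminus: "rep (- A) m = - rep A m" by (simp add: uminus_l1.rep_eq)
lemma rep_zero: "rep 0 m = 0" by (simp add: zero_l1.rep_eq)
lemma rep_one: "rep 1 = delta0" by (simp add: one_l1.rep_eq)
lemma rep_mult: "rep (A * B) = sconv (rep A) (rep B)" by (simp add: times_l1.rep_eq)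
lemma rep_scal: "rep (scal c A) m = c * rep A m" by (simp add: scal.rep_eq)
lemma rep_sum: "rep (sum f S) m = (\<Sum>i\<in>S. rep (f i) m)"
  by (induction S rule: infinite_finite_induct) (auto simp: rep_zero rep_add)
lemma abs1_inv: "one.inW u \<Longrightarrow> rep (abs1 u) = u" by (simp add: abs1_inverse)

lemma abs1_add: "one.inW u \<Longrightarrow> one.inW v \<Longrightarrow> abs1 (\<lambda>m. u m + v m) = abs1 u + abs1 v"
proof -
  assume a: "one.inW u" "one.inW v"
  have "rep (abs1 u + abs1 v) = (\<lambda>m. u m + v m)" by (simp add: plus_l1.rep_eq abs1_inv a)
  then show ?thesis by (metis rep_inverse)
qed

lemma abs1_scal: "one.inW u \<Longrightarrow> abs1 (\<lambda>m. c * u m) = scal c (abs1 u)"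
proof -
  assume a: "one.inW u"
  have "rep (scal c (abs1 u)) = (\<lambda>m. c * u m)" by (simp add: scal.rep_eq abs1_inv a)
  then show ?thesis by (metis rep_inverse)
qed

lemma scal_0_left: "scal 0 A = 0" by transfer simp
lemma scal_0_right: "scal c 0 = 0" by transfer simp

lemma of_nat_scal: "of_nat n * A = scal (of_nat n) A"
proof (induction n)
  case 0 show ?case by (simp add: scal_0_left)
next
  case (Suc n)
  have "of_nat (Suc n) * A = A + of_nat n * A" by (simp add: algebra_simps)
  also have "\<dots> = scal (of_nat (Suc n)) A" unfolding Suc
    by transfer (simp add: algebra_simps)
  finally show ?case .
qed

lemma scal_add: "scal c (A + B) = scal c A + scal c B" by transfer (simp add: algebra_simps)
lemma scal_scal: "scal c (scal d A) = scal (c * d) A" by transfer (simp add: algebra_simps)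
lemma scal_sum: "scal c (sum f S) = (\<Sum>i\<in>S. scal c (f i))"
  by (induction S rule: infinite_finite_induct) (auto simp: scal_add scal_0_right)

context wsp begin

definition XX :: "'n l1 \<Rightarrow> bool" where "XX A \<longleftrightarrow> inW (rep A)"
definition NN :: "'n l1 \<Rightarrow> real" where "NN A = nW (rep A)"

lemma XX_abs1: "inW u \<Longrightarrow> XX (abs1 u)"
  by (simp add: XX_def abs1_inv inW_one)
lemma NN_abs1: "inW u \<Longrightarrow> NN (abs1 u) = nW u"
  by (simp add: NN_def abs1_inv inW_one)

lemma NN_nonneg: "0 \<le> NN A" by (simp add: NN_def nW_nonneg)

lemma XX_0: "XX 0" by (simp add: XX_def zero_l1.rep_eq)
lemma NN_0: "NN 0 = 0" by (simp add: NN_def zero_l1.rep_eq)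
lemma XX_1: "XX 1" by (simp add: XX_def rep_one inW_delta0)
lemma NN_1: "NN 1 = w 0" by (simp add: NN_def rep_one nW_delta0)
lemma XX_add: "XX A \<Longrightarrow> XX B \<Longrightarrow> XX (A + B)"
  by (simp add: XX_def plus_l1.rep_eq inW_add)
lemma NN_add: "XX A \<Longrightarrow> XX B \<Longrightarrow> NN (A + B) \<le> NN A + NN B"
  by (simp add: XX_def NN_def plus_l1.rep_eq nW_add)
lemma XX_uminus: "XX A \<Longrightarrow> XX (- A)"
  by (simp add: XX_def uminus_l1.rep_eq inW_neg)
lemma NN_uminus: "NN (- A) = NN A"
  by (simp add: NN_def uminus_l1.rep_eq nW_neg)
lemma XX_diff: "XX A \<Longrightarrow> XX B \<Longrightarrow> XX (A - B)"
  by (simp add: XX_def minus_l1.rep_eq inW_diff)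
lemma NN_diff: "XX A \<Longrightarrow> XX B \<Longrightarrow> NN (A - B) \<le> NN A + NN B"
  by (simp add: XX_def NN_def minus_l1.rep_eq nW_diff)
lemma XX_mult: "XX A \<Longrightarrow> XX B \<Longrightarrow> XX (A * B)"
  by (simp add: XX_def times_l1.rep_eq inW_sconv)
lemma NN_mult: "XX A \<Longrightarrow> XX B \<Longrightarrow> NN (A * B) \<le> NN A * NN B"
  by (simp add: XX_def NN_def times_l1.rep_eq nW_sconv)
lemma XX_scal: "XX A \<Longrightarrow> XX (scal c A)"
  by (simp add: XX_def scal.rep_eq inW_scale)
lemma NN_scal: "NN (scal c A) = cmod c * NN A"
  by (simp add: NN_def scal.rep_eq nW_scale)
lemma XX_pow: "XX A \<Longrightarrow> XX (A ^ k)"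
  by (induction k) (auto simp: XX_1 XX_mult)
lemma XX_of_nat_mult: "XX A \<Longrightarrow> XX (of_nat n * A)"
  by (simp add: of_nat_scal XX_scal)
lemma NN_of_nat_mult: "NN (of_nat n * A) = real n * NN A"
  by (simp add: of_nat_scal NN_scal)
lemma XX_sum: "finite S \<Longrightarrow> (\<And>i. i \<in> S \<Longrightarrow> XX (f i)) \<Longrightarrow> XX (sum f S)"
  by (induction S rule: finite_induct) (auto simp: XX_0 XX_add)
lemma NN_sum: "finite S \<Longrightarrow> (\<And>i. i \<in> S \<Longrightarrow> XX (f i)) \<Longrightarrow> NN (sum f S) \<le> (\<Sum>i\<in>S. NN (f i))"
proof (induction S rule: finite_induct)
  case (insert x F)
  then have "NN (sum f (insert x F)) \<le> NN (f x) + NN (sum f F)"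
    by (simp add: NN_add XX_sum)
  then show ?case using insert by simp
qed (simp add: NN_0)

lemma NN_pow_mult: "XX A \<Longrightarrow> XX Z \<Longrightarrow> NN (A ^ k * Z) \<le> NN A ^ k * NN Z"
proof (induction k)
  case 0 then show ?case by simp
next
  case (Suc k)
  have "NN (A ^ Suc k * Z) = NN (A * (A ^ k * Z))" by (simp add: mult.assoc)
  also have "\<dots> \<le> NN A * NN (A ^ k * Z)" using Suc.prems by (simp add: NN_mult XX_mult XX_pow)
  also have "\<dots> \<le> NN A * (NN A ^ k * NN Z)"
    using Suc by (simp add: mult_left_mono NN_nonneg)
  finally show ?case by (simp add: mult.assoc)
qed

lemma NN_pow: "XX A \<Longrightarrow> 1 \<le> k \<Longrightarrow> NN (A ^ k) \<le> NN A ^ k"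
proof -
  assume a: "XX A" "1 \<le> k"
  then obtain k' where k: "k = Suc k'" by (cases k) auto
  have "NN (A ^ k) = NN (A ^ k' * A)" by (simp add: k mult.commute)
  also have "\<dots> \<le> NN A ^ k' * NN A" by (rule NN_pow_mult[OF a(1) a(1)])
  finally show ?thesis by (simp add: k mult.commute)
qed

lemma NN_pow_pow: "XX A \<Longrightarrow> XX B \<Longrightarrow> 1 \<le> p + q \<Longrightarrow> NN (A ^ p * B ^ q) \<le> NN A ^ p * NN B ^ q"
proof (cases "q = 0")
  case True
  assume "XX A" "XX B" "1 \<le> p + q"
  then show ?thesis using True NN_pow[of A p] by simp
next
  case False
  assume a: "XX A" "XX B" "1 \<le> p + q"
  have "NN (A ^ p * B ^ q) \<le> NN A ^ p * NN (B ^ q)" by (rule NN_pow_mult) (use a in \<open>auto simp: XX_pow\<close>)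
  also have "\<dots> \<le> NN A ^ p * NN B ^ q"
    by (rule mult_left_mono) (use a False NN_pow[of B q] in \<open>auto simp: NN_nonneg\<close>)
  finally show ?thesis .
qed

lemma rem_identity:
  fixes U H :: "'a::comm_ring_1"
  shows "(U + H) ^ (m + 3) - U ^ (m + 3) - of_nat (m + 3) * U ^ (m + 2) * H
    = (U + H) * ((U + H) ^ (m + 2) - U ^ (m + 2) - of_nat (m + 2) * U ^ (m + 1) * H)
      + of_nat (m + 2) * U ^ (m + 1) * H ^ 2"
proof -
  have e1: "(U + H) ^ (m + 3) = (U + H) * (U + H) ^ (m + 2)" by (simp add: numeral_3_eq_3)
  have e2: "U ^ (m + 3) = U * (U * U ^ (m + 1))" by (simp add: numeral_3_eq_3)
  have e3: "U ^ (m + 2) = U * U ^ (m + 1)" by simp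
  have e4: "(of_nat (m + 3) :: 'a) = of_nat (m + 2) + 1" by (simp add: numeral_3_eq_3)
  show ?thesis unfolding e1 e2 e3 e4
    by (simp add: algebra_simps power2_eq_square)
qed

lemma rem_bound:
  assumes U: "XX U" and H: "XX H" and Y: "XX Y"
  shows "NN (((U + H) ^ n - U ^ n - of_nat n * U ^ (n - 1) * H) * Y)
     \<le> real n ^ 2 * NN H ^ 2 * (NN U + NN H) ^ (n - 2) * NN Y"
proof -
  define a where "a = NN U"
  define b where "b = NN H"
  have a0: "0 \<le> a" and b0: "0 \<le> b" by (simp_all add: a_def b_def NN_nonneg)
  have Y0: "0 \<le> NN Y" by (simp add: NN_nonneg)
  have UH: "XX (U + H)" using U H by (rule XX_add)
  have NUH: "NN (U + H) \<le> a + b" unfolding a_def b_def by (rule NN_add[OF U H])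
  have main: "NN (((U + H) ^ (m + 2) - U ^ (m + 2) - of_nat (m + 2) * U ^ (m + 1) * H) * Y)
     \<le> real (m + 2) ^ 2 * b ^ 2 * (a + b) ^ m * NN Y" for m
  proof (induction m)
    case 0
    have eq: "((U + H) ^ (0 + 2) - U ^ (0 + 2) - of_nat (0 + 2) * U ^ (0 + 1) * H) * Y = H ^ 2 * Y"
      by (simp add: algebra_simps power2_eq_square)
    have le1: "NN (H ^ 2 * Y) \<le> b ^ 2 * NN Y" unfolding b_def by (rule NN_pow_mult[OF H Y])
    have le2: "b ^ 2 * NN Y \<le> real (0 + 2) ^ 2 * b ^ 2 * (a + b) ^ 0 * NN Y"
    proof -
      have "0 \<le> b ^ 2 * NN Y" using Y0 by simp
      then have "b ^ 2 * NN Y \<le> 4 * (b ^ 2 * NN Y)" by linarith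
      then show ?thesis by (simp add: mult.assoc)
    qed
    show ?case unfolding eq using le1 le2 by (rule order_trans)
  next
    case (Suc m)
    define R where "R = ((U + H) ^ (m + 2) - U ^ (m + 2) - of_nat (m + 2) * U ^ (m + 1) * H)"
    have XR: "XX (R * Y)" unfolding R_def
      using U H Y by (intro XX_mult XX_diff XX_pow XX_add XX_of_nat_mult) auto
    have eq: "((U + H) ^ (Suc m + 2) - U ^ (Suc m + 2) - of_nat (Suc m + 2) * U ^ (Suc m + 1) * H) * Y
        = (U + H) * (R * Y) + of_nat (m + 2) * (U ^ (m + 1) * (H ^ 2 * Y))"
    proof -
      have s1: "Suc m + 2 = m + 3" "Suc m + 1 = m + 2" by simp_all
      have eq0: "(U + H) ^ (Suc m + 2) - U ^ (Suc m + 2) - of_nat (Suc m + 2) * U ^ (Suc m + 1) * H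
          = (U + H) * R + of_nat (m + 2) * U ^ (m + 1) * H ^ 2"
        unfolding s1 R_def by (rule rem_identity)
      show ?thesis unfolding eq0 by (simp add: algebra_simps)
    qed
    have X2: "XX (of_nat (m + 2) * (U ^ (m + 1) * (H ^ 2 * Y)))"
      using U H Y by (intro XX_mult XX_pow XX_of_nat_mult) auto
    have "NN ((U + H) * (R * Y)) \<le> NN (U + H) * NN (R * Y)" by (rule NN_mult[OF UH XR])
    also have "\<dots> \<le> (a + b) * (real (m + 2) ^ 2 * b ^ 2 * (a + b) ^ m * NN Y)"
      using Suc.IH NUH a0 b0 by (intro mult_mono) (auto simp: R_def NN_nonneg)
    finally have t1: "NN ((U + H) * (R * Y)) \<le> real (m + 2) ^ 2 * b ^ 2 * (a + b) ^ Suc m * NN Y"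
      by (simp add: ac_simps)
    have "NN (of_nat (m + 2) * (U ^ (m + 1) * (H ^ 2 * Y))) = real (m + 2) * NN (U ^ (m + 1) * (H ^ 2 * Y))"
      by (rule NN_of_nat_mult)
    also have "\<dots> \<le> real (m + 2) * (a ^ (m + 1) * (b ^ 2 * NN Y))"
    proof (rule mult_left_mono)
      have "NN (U ^ (m + 1) * (H ^ 2 * Y)) \<le> a ^ (m + 1) * NN (H ^ 2 * Y)"
        unfolding a_def by (rule NN_pow_mult) (use U H Y in \<open>auto intro: XX_mult XX_pow\<close>)
      also have "\<dots> \<le> a ^ (m + 1) * (b ^ 2 * NN Y)"
        by (rule mult_left_mono) (use a0 NN_pow_mult[OF H Y, of 2] in \<open>auto simp: b_def\<close>)
      finally show "NN (U ^ (m + 1) * (H ^ 2 * Y)) \<le> a ^ (m + 1) * (b ^ 2 * NN Y)" .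
    qed simp
    also have "\<dots> \<le> real (m + 2) * ((a + b) ^ Suc m * (b ^ 2 * NN Y))"
    proof -
      have pm: "a ^ (m + 1) \<le> (a + b) ^ Suc m" using power_mono[of a "a+b" "Suc m"] a0 b0 by simp
      show ?thesis by (intro mult_left_mono mult_right_mono pm) (use a0 b0 Y0 in auto)
    qed
    finally have t2: "NN (of_nat (m + 2) * (U ^ (m + 1) * (H ^ 2 * Y))) \<le> real (m + 2) * b ^ 2 * (a + b) ^ Suc m * NN Y"
      by (simp add: ac_simps)
    have "NN (((U + H) ^ (Suc m + 2) - U ^ (Suc m + 2) - of_nat (Suc m + 2) * U ^ (Suc m + 1) * H) * Y)
        \<le> NN ((U + H) * (R * Y)) + NN (of_nat (m + 2) * (U ^ (m + 1) * (H ^ 2 * Y)))"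
      unfolding eq by (rule NN_add) (use UH XR X2 in \<open>auto intro: XX_mult\<close>)
    also have "\<dots> \<le> (real (m + 2) ^ 2 + real (m + 2)) * (b ^ 2 * (a + b) ^ Suc m * NN Y)"
      using t1 t2 by (simp add: algebra_simps)
    also have "\<dots> \<le> real (Suc m + 2) ^ 2 * (b ^ 2 * (a + b) ^ Suc m * NN Y)"
      by (rule mult_right_mono) (use a0 b0 Y0 in \<open>auto simp: power2_eq_square algebra_simps\<close>)
    finally show ?case by (simp add: ac_simps)
  qed
  show ?thesis
  proof (cases "n \<ge> 2")
    case True
    then obtain m where n: "n = m + 2" by (metis add.commute le_add_diff_inverse)
    have e: "m + 2 - 1 = m + 1" "m + 2 - 2 = m" by simp_all
    show ?thesis using main[of m] unfolding n e a_def b_def .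
  next
    case False
    then have "n = 0 \<or> n = 1" by auto
    then have "((U + H) ^ n - U ^ n - of_nat n * U ^ (n - 1) * H) = 0" by auto
    then have "NN (((U + H) ^ n - U ^ n - of_nat n * U ^ (n - 1) * H) * Y) = 0" by (simp add: NN_0)
    moreover have "0 \<le> real n ^ 2 * NN H ^ 2 * (NN U + NN H) ^ (n - 2) * NN Y"
      using Y0 by (simp add: NN_nonneg)
    ultimately show ?thesis by linarith
  qed
qed

end

definition gam :: "(nat \<Rightarrow> real) \<Rightarrow> nat \<Rightarrow> nat \<Rightarrow> complex" where
  "gam \<alpha> j k = (if max 2 j \<le> k then complex_of_real (fact k / fact (k - j) * \<alpha> k) else 0)"

definition PL :: "'n::finite seq list \<Rightarrow> 'n l1" where
  "PL ys = prod_list (map abs1 ys)"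

lemma conv_list_rep: "(\<forall>y\<in>set ys. one.inW y) \<Longrightarrow> conv_list ys = rep (PL ys)"
proof (induction ys)
  case Nil then show ?case by (simp add: conv_list_def PL_def rep_one)
next
  case (Cons y ys)
  then have "conv_list (y # ys) = sconv y (rep (PL ys))" by (simp add: conv_list_def)
  also have "\<dots> = rep (abs1 y * PL ys)" using Cons.prems by (simp add: rep_mult abs1_inv)
  finally show ?case by (simp add: PL_def)
qed

lemma Wder_eq:
  assumes "one.inW u" "\<forall>y\<in>set ys. one.inW y"
  shows "Wder \<alpha> j u ys = (\<lambda>m. \<Sum>k. rep (scal (gam \<alpha> j k) (abs1 u ^ (k - j) * PL ys)) m)"
  unfolding Wder_def conv_pow_l1[OF assms(1)] conv_list_rep[OF assms(2)]
  by (intro ext suminf_cong) (simp add: rep_scal rep_mult gam_def)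

lemma Wmap_eq:
  assumes "one.inW u"
  shows "Wmap \<alpha> u = (\<lambda>m. \<Sum>k. rep (scal (if 2 \<le> k then complex_of_real (\<alpha> k) else 0) (abs1 u ^ k)) m)"
  unfolding Wmap_def conv_pow_l1[OF assms(1)]
  by (intro ext suminf_cong) (simp add: rep_scal)

lemma Wder0: "Wder \<alpha> 0 u [] = Wmap \<alpha> u"
  unfolding Wder_def Wmap_def by (intro ext suminf_cong) (simp add: conv_list_def delta0_conv)

lemma fact_div_le: "j \<le> k \<Longrightarrow> fact k / fact (k - j) \<le> real k ^ j"
proof (induction j)
  case 0 then show ?case by simp
next
  case (Suc j)
  have kj: "k - j = Suc (k - Suc j)" using Suc.prems by simp
  have f: "(fact (k - j) :: real) = real (k - j) * fact (k - Suc j)" unfolding kj by simp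
  have pos: "real (k - j) > 0" using Suc.prems by simp
  have "fact k / fact (k - Suc j) = (fact k / fact (k - j)) * real (k - j)"
    using pos unfolding f by (simp add: field_simps)
  also have "\<dots> \<le> real k ^ j * real k"
    by (rule mult_mono) (use Suc in auto)
  finally show ?case by (simp add: mult.commute)
qed

lemma gam_norm: "cmod (gam \<alpha> j k) = (if max 2 j \<le> k then fact k / fact (k - j) * \<bar>\<alpha> k\<bar> else 0)"
proof -
  have "\<bar>fact k / fact (k - j) * \<alpha> k\<bar> = fact k / fact (k - j) * \<bar>\<alpha> k\<bar>"
    by (simp add: abs_mult)
  then show ?thesis unfolding gam_def by (cases "max 2 j \<le> k") (simp_all only: norm_of_real norm_zero if_True if_False)
qed

lemma coef_summable_pos:
  assumes t: "0 < t" "ereal t < conv_radius \<alpha>"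
  shows "summable (\<lambda>k. cmod (gam \<alpha> j k) * t ^ (k - j))"
proof (rule summable_comparison_test'[where N=0])
  have "summable (\<lambda>k. real k ^ j * \<bar>\<alpha> k\<bar> * t ^ k)"
    by (rule powser_poly_summable) (use t in simp)
  then show "summable (\<lambda>k. real k ^ j * \<bar>\<alpha> k\<bar> * t ^ k / t ^ j)" by (rule summable_divide)
  fix k :: nat
  show "norm (cmod (gam \<alpha> j k) * t ^ (k - j)) \<le> real k ^ j * \<bar>\<alpha> k\<bar> * t ^ k / t ^ j"
  proof (cases "max 2 j \<le> k")
    case True
    then have jk: "j \<le> k" by simp
    have tp: "t ^ (k - j) = t ^ k / t ^ j" using t jk by (simp add: power_diff)
    have "norm (cmod (gam \<alpha> j k) * t ^ (k - j)) = fact k / fact (k - j) * \<bar>\<alpha> k\<bar> * (t ^ k / t ^ j)"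
      using True t by (simp add: gam_norm tp)
    also have "\<dots> \<le> real k ^ j * \<bar>\<alpha> k\<bar> * (t ^ k / t ^ j)"
      by (intro mult_right_mono fact_div_le jk) (use t in auto)
    finally show ?thesis by simp
  next
    case False
    then have "cmod (gam \<alpha> j k) = 0" by (auto simp: gam_norm)
    then show ?thesis using t by simp
  qed
qed

lemma exists_pos_below:
  assumes "0 < conv_radius \<alpha>"
  shows "\<exists>t'>0. ereal t' < conv_radius \<alpha>"
proof (cases "conv_radius \<alpha>")
  case (real R)
  then show ?thesis using assms by (intro exI[of _ "R / 2"]) auto
qed (use assms in \<open>auto intro: exI[of _ 1]\<close>)

lemma coef_summable:
  assumes t: "0 \<le> t" "ereal t < conv_radius \<alpha>"
  shows "summable (\<lambda>k. cmod (gam \<alpha> j k) * t ^ (k - j))"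
proof (cases "t > 0")
  case True then show ?thesis using coef_summable_pos t by blast
next
  case False
  then have t0: "t = 0" using t by simp
  have "0 < conv_radius \<alpha>" using t by (simp add: t0 zero_ereal_def)
  then obtain t' where t': "t' > 0" "ereal t' < conv_radius \<alpha>" using exists_pos_below by blast
  show ?thesis
  proof (rule summable_comparison_test'[where N=0])
    show "summable (\<lambda>k. cmod (gam \<alpha> j k) * t' ^ (k - j))" by (rule coef_summable_pos[OF t'])
    fix k
    show "norm (cmod (gam \<alpha> j k) * t ^ (k - j)) \<le> cmod (gam \<alpha> j k) * t' ^ (k - j)"
      using t' by (auto simp: t0 power_0_left intro!: mult_left_mono)
  qed
qed

lemma alpha_summable:
  assumes t: "0 \<le> t" "ereal t < conv_radius \<alpha>"
  shows "summable (\<lambda>k. \<bar>\<alpha> k\<bar> * t ^ k)"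
proof -
  have "summable (\<lambda>k. norm (\<alpha> k * t ^ k))" by (rule abs_summable_in_conv_radius) (use t in simp)
  then show ?thesis using t by (simp add: abs_mult)
qed

context wsp begin

lemma PL_bound: "\<forall>y\<in>set ys. inW y \<Longrightarrow> XX (PL ys) \<and> NN (PL ys) \<le> w 0 * (\<Prod>y\<leftarrow>ys. nW y)"
proof (induction ys)
  case Nil then show ?case by (simp add: PL_def XX_1 NN_1)
next
  case (Cons y ys)
  have y: "XX (abs1 y)" "NN (abs1 y) = nW y" using Cons.prems by (auto simp: XX_abs1 NN_abs1)
  have ih: "XX (PL ys)" "NN (PL ys) \<le> w 0 * (\<Prod>y\<leftarrow>ys. nW y)" using Cons by auto
  have "NN (PL (y # ys)) = NN (abs1 y * PL ys)" by (simp add: PL_def)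
  also have "\<dots> \<le> NN (abs1 y) * NN (PL ys)" by (rule NN_mult[OF y(1) ih(1)])
  also have "\<dots> \<le> nW y * (w 0 * (\<Prod>y\<leftarrow>ys. nW y))"
    using ih y by (intro mult_mono) (auto simp: NN_nonneg nW_nonneg)
  finally show ?case using XX_mult[OF y(1) ih(1)] by (simp add: PL_def ac_simps)
qed

lemma inW_rep_XX: "XX A \<Longrightarrow> inW (rep A)" by (simp add: XX_def)

lemma Wder_bound:
  assumes u: "inW u" and r: "ereal (nW u) < conv_radius \<alpha>" and ys: "\<forall>y\<in>set ys. inW y"
  shows "(\<forall>m. summable (\<lambda>k. rep (scal (gam \<alpha> j k) (abs1 u ^ (k - j) * PL ys)) m))
    \<and> inW (Wder \<alpha> j u ys)
    \<and> nW (Wder \<alpha> j u ys) \<le> (\<Sum>k. cmod (gam \<alpha> j k) * nW u ^ (k - j)) * NN (PL ys)"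
proof -
  define U where "U = abs1 u"
  define T where "T = (\<lambda>k. scal (gam \<alpha> j k) (U ^ (k - j) * PL ys))"
  have XU: "XX U" "NN U = nW u" using u by (auto simp: U_def XX_abs1 NN_abs1)
  have XP: "XX (PL ys)" using PL_bound[OF ys] by simp
  have XT: "XX (T k)" for k unfolding T_def by (intro XX_scal XX_mult XX_pow XU XP)
  have NT: "NN (T k) \<le> cmod (gam \<alpha> j k) * nW u ^ (k - j) * NN (PL ys)" for k
  proof -
    have "NN (T k) = cmod (gam \<alpha> j k) * NN (U ^ (k - j) * PL ys)" by (simp add: T_def NN_scal)
    also have "\<dots> \<le> cmod (gam \<alpha> j k) * (nW u ^ (k - j) * NN (PL ys))"
      by (rule mult_left_mono) (use NN_pow_mult[OF XU(1) XP, of "k - j"] XU in auto)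
    finally show ?thesis by (simp add: ac_simps)
  qed
  have cs: "summable (\<lambda>k. cmod (gam \<alpha> j k) * nW u ^ (k - j))"
    by (rule coef_summable) (use r nW_nonneg in auto)
  have cs2: "summable (\<lambda>k. cmod (gam \<alpha> j k) * nW u ^ (k - j) * NN (PL ys))"
    by (rule summable_mult2[OF cs])
  have sN: "summable (\<lambda>k. nW (rep (T k)))"
    by (rule summable_comparison_test'[OF cs2, where N=0]) (use NT in \<open>auto simp: NN_def nW_nonneg\<close>)
  have sb: "(\<forall>m. summable (\<lambda>k. rep (T k) m)) \<and> inW (\<lambda>m. \<Sum>k. rep (T k) m) \<and> nW (\<lambda>m. \<Sum>k. rep (T k) m) \<le> (\<Sum>k. nW (rep (T k)))"
    by (rule series_bound) (use XT sN in \<open>auto simp: XX_def\<close>)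
  have eq: "Wder \<alpha> j u ys = (\<lambda>m. \<Sum>k. rep (T k) m)"
    unfolding T_def U_def by (rule Wder_eq) (use u ys inW_one in auto)
  have "(\<Sum>k. nW (rep (T k))) \<le> (\<Sum>k. cmod (gam \<alpha> j k) * nW u ^ (k - j) * NN (PL ys))"
    by (rule suminf_le) (use NT sN cs2 in \<open>auto simp: NN_def\<close>)
  also have "\<dots> = (\<Sum>k. cmod (gam \<alpha> j k) * nW u ^ (k - j)) * NN (PL ys)"
    by (rule suminf_mult2[OF cs, symmetric])
  finally show ?thesis using sb unfolding eq T_def U_def by auto
qed

lemma Wmap_bound:
  assumes u: "inW u" and r: "ereal (nW u) < conv_radius \<alpha>"
  shows "inW (Wmap \<alpha> u) \<and> nW (Wmap \<alpha> u) \<le> (\<Sum>k. if 2 \<le> k then \<bar>\<alpha> k\<bar> * nW u ^ k else 0)"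
proof -
  define U where "U = abs1 u"
  define T where "T = (\<lambda>k. scal (if 2 \<le> k then complex_of_real (\<alpha> k) else 0) (U ^ k))"
  have XU: "XX U" "NN U = nW u" using u by (auto simp: U_def XX_abs1 NN_abs1)
  have XT: "XX (T k)" for k unfolding T_def by (intro XX_scal XX_pow XU)
  have NT: "NN (T k) \<le> (if 2 \<le> k then \<bar>\<alpha> k\<bar> * nW u ^ k else 0)" for k
  proof (cases "2 \<le> k")
    case True
    have "NN (T k) = \<bar>\<alpha> k\<bar> * NN (U ^ k)" using True by (simp add: T_def NN_scal)
    also have "\<dots> \<le> \<bar>\<alpha> k\<bar> * nW u ^ k"
      by (rule mult_left_mono) (use NN_pow[OF XU(1), of k] True XU in auto)
    finally show ?thesis using True by simp
  qed (simp add: T_def NN_scal)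
  have cs: "summable (\<lambda>k. if 2 \<le> k then \<bar>\<alpha> k\<bar> * nW u ^ k else 0)"
    by (rule summable_comparison_test'[OF alpha_summable[of "nW u" \<alpha>], where N=0])
       (use r nW_nonneg in auto)
  have sN: "summable (\<lambda>k. nW (rep (T k)))"
    by (rule summable_comparison_test'[OF cs, where N=0]) (use NT in \<open>auto simp: NN_def nW_nonneg\<close>)
  have sb: "inW (\<lambda>m. \<Sum>k. rep (T k) m) \<and> nW (\<lambda>m. \<Sum>k. rep (T k) m) \<le> (\<Sum>k. nW (rep (T k)))"
    using series_bound[of "\<lambda>k. rep (T k)"] XT sN by (auto simp: XX_def)
  have eq: "Wmap \<alpha> u = (\<lambda>m. \<Sum>k. rep (T k) m)"
    unfolding T_def U_def by (rule Wmap_eq) (use u inW_one in auto)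
  have "(\<Sum>k. nW (rep (T k))) \<le> (\<Sum>k. if 2 \<le> k then \<bar>\<alpha> k\<bar> * nW u ^ k else 0)"
    by (rule suminf_le) (use NT sN cs in \<open>auto simp: NN_def\<close>)
  then show ?thesis using sb unfolding eq by auto
qed

end

lemma prod_list_update_add:
  fixes xs :: "'a::comm_semiring_1 list"
  shows "i < length xs \<Longrightarrow> prod_list (xs[i := a + b]) = prod_list (xs[i := a]) + prod_list (xs[i := b])"
proof (induction xs arbitrary: i)
  case (Cons x xs)
  then show ?case by (cases i) (auto simp: algebra_simps)
qed simp

lemma prod_list_update_scal:
  shows "i < length xs \<Longrightarrow> prod_list (xs[i := scal c a]) = scal c (prod_list (xs[i := a]))"
proof (induction xs arbitrary: i)
  case (Cons x xs)
  then show ?case by (cases i) (auto simp: scal_mult mult_scal)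
qed simp

lemma scal_as_mult: "scal c A = scal c 1 * A"
  by (simp add: scal_mult)

lemma PL_append: "PL (ys @ [h]) = PL ys * abs1 h"
  by (simp add: PL_def)

lemma gam_succ: "gam \<alpha> (Suc j) k = gam \<alpha> j k * of_nat (k - j)"
proof (cases "max 2 (Suc j) \<le> k")
  case True
  then have kj: "k - j = Suc (k - Suc j)" by (auto simp: max_def split: if_splits)
  have f: "(fact (k - j) :: real) = real (k - j) * fact (k - Suc j)" unfolding kj by simp
  have pos: "real (k - j) > 0" using True by (auto simp: max_def split: if_splits)
  have eq: "fact k / fact (k - Suc j) * \<alpha> k = fact k / fact (k - j) * \<alpha> k * real (k - j)"
    using pos unfolding f by (simp add: field_simps)
  have c: "max 2 j \<le> k" using True by (auto simp: max_def split: if_splits)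
  show ?thesis unfolding gam_def if_P[OF True] if_P[OF c] eq by simp
next
  case False
  then have "\<not> max 2 j \<le> k \<or> k = j" by auto
  then show ?thesis using False unfolding gam_def by auto
qed

context wsp begin

definition bmlW :: "nat \<Rightarrow> ('n seq list \<Rightarrow> 'n seq) \<Rightarrow> real \<Rightarrow> bool" where
  "bmlW j A C \<longleftrightarrow>
     (\<forall>ys. length ys = j \<and> (\<forall>y\<in>set ys. inW y) \<longrightarrow>
        inW (A ys) \<and> nW (A ys) \<le> C * (\<Prod>y\<leftarrow>ys. nW y)) \<and>
     (\<forall>ys i z a. length ys = j \<and> (\<forall>y\<in>set ys. inW y) \<and> i < j \<and> inW z \<longrightarrow>
        A (ys[i := (\<lambda>m. (ys ! i) m + z m)]) = (\<lambda>m. A ys m + A (ys[i := z]) m) \<and>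
        A (ys[i := (\<lambda>m. a * (ys ! i) m)]) = (\<lambda>m. a * A ys m))"

lemma set_update_inW:
  "\<forall>y\<in>set ys. inW y \<Longrightarrow> inW z \<Longrightarrow> \<forall>y\<in>set (ys[i := z]). inW y"
  using set_update_subset_insert[of ys i z] by blast

lemma Wder_lin:
  assumes u: "inW u" and r: "ereal (nW u) < conv_radius \<alpha>"
    and ys: "\<forall>y\<in>set ys. inW y" and i: "i < length ys" and z: "inW z"
  shows "Wder \<alpha> j u (ys[i := (\<lambda>m. (ys ! i) m + z m)]) = (\<lambda>m. Wder \<alpha> j u ys m + Wder \<alpha> j u (ys[i := z]) m)"
    and "Wder \<alpha> j u (ys[i := (\<lambda>m. a * (ys ! i) m)]) = (\<lambda>m. a * Wder \<alpha> j u ys m)"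
proof -
  define U where "U = abs1 u"
  have yi: "inW (ys ! i)" using ys i by auto
  have ys1: "\<forall>y\<in>set ys. one.inW y" using ys inW_one by blast
  have z1: "one.inW z" "one.inW (ys ! i)" using z yi inW_one by auto
  have ysz: "\<forall>y\<in>set (ys[i := z]). inW y" by (rule set_update_inW[OF ys z])
  have ysa: "\<forall>y\<in>set (ys[i := (\<lambda>m. (ys ! i) m + z m)]). inW y"
    by (rule set_update_inW[OF ys inW_add[OF yi z]])
  have ysc: "\<forall>y\<in>set (ys[i := (\<lambda>m. a * (ys ! i) m)]). inW y"
    by (rule set_update_inW[OF ys inW_scale[OF yi]])
  have one: "\<And>zs. \<forall>y\<in>set zs. inW y \<Longrightarrow> \<forall>y\<in>set zs. one.inW y" using inW_one by blast
  have PLa: "PL (ys[i := (\<lambda>m. (ys ! i) m + z m)]) = PL ys + PL (ys[i := z])"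
  proof -
    have "PL (ys[i := (\<lambda>m. (ys ! i) m + z m)]) = prod_list ((map abs1 ys)[i := abs1 (ys ! i) + abs1 z])"
      by (simp add: PL_def map_update abs1_add[OF z1(2) z1(1)])
    also have "\<dots> = prod_list ((map abs1 ys)[i := abs1 (ys ! i)]) + prod_list ((map abs1 ys)[i := abs1 z])"
      by (rule prod_list_update_add) (use i in simp)
    also have "\<dots> = PL ys + PL (ys[i := z])"
      using i by (simp add: PL_def map_update[symmetric])
    finally show ?thesis .
  qed
  have PLc: "PL (ys[i := (\<lambda>m. a * (ys ! i) m)]) = scal a (PL ys)"
  proof -
    have "PL (ys[i := (\<lambda>m. a * (ys ! i) m)]) = prod_list ((map abs1 ys)[i := scal a (abs1 (ys ! i))])"
      by (simp add: PL_def map_update abs1_scal[OF z1(2)])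
    also have "\<dots> = scal a (prod_list ((map abs1 ys)[i := abs1 (ys ! i)]))"
      by (rule prod_list_update_scal) (use i in simp)
    also have "\<dots> = scal a (PL ys)"
      using i by (simp add: PL_def map_update[symmetric])
    finally show ?thesis .
  qed
  have s1: "\<And>m. summable (\<lambda>k. rep (scal (gam \<alpha> j k) (abs1 u ^ (k - j) * PL ys)) m)"
    using Wder_bound[OF u r ys] by blast
  have s2: "\<And>m. summable (\<lambda>k. rep (scal (gam \<alpha> j k) (abs1 u ^ (k - j) * PL (ys[i := z]))) m)"
    using Wder_bound[OF u r ysz] by blast
  have u1: "one.inW u" using u inW_one by blast
  show "Wder \<alpha> j u (ys[i := (\<lambda>m. (ys ! i) m + z m)]) = (\<lambda>m. Wder \<alpha> j u ys m + Wder \<alpha> j u (ys[i := z]) m)"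
    unfolding Wder_eq[OF u1 one[OF ysa]] Wder_eq[OF u1 one[OF ys]] Wder_eq[OF u1 one[OF ysz]] PLa
  proof
    fix m
    show "(\<Sum>k. rep (scal (gam \<alpha> j k) (abs1 u ^ (k - j) * (PL ys + PL (ys[i := z])))) m) =
      (\<Sum>k. rep (scal (gam \<alpha> j k) (abs1 u ^ (k - j) * PL ys)) m) +
      (\<Sum>k. rep (scal (gam \<alpha> j k) (abs1 u ^ (k - j) * PL (ys[i := z]))) m)"
      by (subst suminf_add[OF s1 s2]) (simp add: distrib_left scal_add rep_add)
  qed
  show "Wder \<alpha> j u (ys[i := (\<lambda>m. a * (ys ! i) m)]) = (\<lambda>m. a * Wder \<alpha> j u ys m)"
    unfolding Wder_eq[OF u1 one[OF ysc]] Wder_eq[OF u1 one[OF ys]] PLc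
  proof
    fix m
    show "(\<Sum>k. rep (scal (gam \<alpha> j k) (abs1 u ^ (k - j) * scal a (PL ys))) m) =
      a * (\<Sum>k. rep (scal (gam \<alpha> j k) (abs1 u ^ (k - j) * PL ys)) m)"
      unfolding suminf_mult[OF s1, symmetric]
      by (rule suminf_cong) (simp only: mult_scal rep_scal mult.left_commute)
  qed
qed

lemma Wder_bml:
  assumes u: "inW u" and r: "ereal (nW u) < conv_radius \<alpha>"
  shows "bmlW j (Wder \<alpha> j u) ((\<Sum>k. cmod (gam \<alpha> j k) * nW u ^ (k - j)) * w 0)"
  unfolding bmlW_def
proof (intro conjI allI impI)
  fix ys :: "'n seq list"
  assume a: "length ys = j \<and> (\<forall>y\<in>set ys. inW y)"
  have b: "inW (Wder \<alpha> j u ys) \<and> nW (Wder \<alpha> j u ys) \<le> (\<Sum>k. cmod (gam \<alpha> j k) * nW u ^ (k - j)) * NN (PL ys)"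
    using Wder_bound[OF u r, of ys j] a by blast
  have c: "NN (PL ys) \<le> w 0 * (\<Prod>y\<leftarrow>ys. nW y)" using PL_bound a by blast
  have cs: "0 \<le> (\<Sum>k. cmod (gam \<alpha> j k) * nW u ^ (k - j))"
    by (rule suminf_nonneg[OF coef_summable]) (use r nW_nonneg in auto)
  show "inW (Wder \<alpha> j u ys)" using b by blast
  have "nW (Wder \<alpha> j u ys) \<le> (\<Sum>k. cmod (gam \<alpha> j k) * nW u ^ (k - j)) * (w 0 * (\<Prod>y\<leftarrow>ys. nW y))"
    using b c cs by (meson mult_left_mono order_trans)
  then show "nW (Wder \<alpha> j u ys) \<le> (\<Sum>k. cmod (gam \<alpha> j k) * nW u ^ (k - j)) * w 0 * (\<Prod>y\<leftarrow>ys. nW y)"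
    by (simp add: mult.assoc)
next
  fix ys :: "'n seq list" and i z a
  assume a: "length ys = j \<and> (\<forall>y\<in>set ys. inW y) \<and> i < j \<and> inW z"
  show "Wder \<alpha> j u (ys[i := (\<lambda>m. (ys ! i) m + z m)]) = (\<lambda>m. Wder \<alpha> j u ys m + Wder \<alpha> j u (ys[i := z]) m)"
    using Wder_lin(1)[OF u r, of ys i z] a by auto
  show "Wder \<alpha> j u (ys[i := (\<lambda>m. a * (ys ! i) m)]) = (\<lambda>m. a * Wder \<alpha> j u ys m)"
    using Wder_lin(2)[OF u r, of ys i z] a by auto
qed

end

lemma exists_between:
  assumes "ereal a < r"
  shows "\<exists>t. a < t \<and> ereal t < r"
proof (cases r)
  case (real R)
  then show ?thesis using assms by (intro exI[of _ "(a + R) / 2"]) auto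
next
  case PInf
  then show ?thesis by (intro exI[of _ "a + 1"]) auto
qed (use assms in auto)

lemma scal_of_nat_mult: "scal (c * of_nat n) A = scal c 1 * (of_nat n * A)"
  by (metis scal_scal of_nat_scal scal_as_mult)

lemma E_summable:
  assumes t: "0 < t" "ereal t < conv_radius \<alpha>"
  shows "summable (\<lambda>k. if j + 2 \<le> k then cmod (gam \<alpha> j k) * real (k - j) ^ 2 * t ^ (k - j - 2) else 0)"
proof (rule summable_comparison_test'[where N=0])
  have "summable (\<lambda>k. real k ^ (j + 2) * \<bar>\<alpha> k\<bar> * t ^ k)"
    by (rule powser_poly_summable) (use t in simp)
  then show "summable (\<lambda>k. real k ^ (j + 2) * \<bar>\<alpha> k\<bar> * t ^ k / t ^ (j + 2))" by (rule summable_divide)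
  fix k :: nat
  show "norm (if j + 2 \<le> k then cmod (gam \<alpha> j k) * real (k - j) ^ 2 * t ^ (k - j - 2) else 0)
      \<le> real k ^ (j + 2) * \<bar>\<alpha> k\<bar> * t ^ k / t ^ (j + 2)"
  proof (cases "j + 2 \<le> k")
    case True
    have tp: "t ^ (k - j - 2) = t ^ k / t ^ (j + 2)" using t True by (simp add: power_diff)
    have g: "cmod (gam \<alpha> j k) \<le> real k ^ j * \<bar>\<alpha> k\<bar>"
    proof (cases "max 2 j \<le> k")
      case True
      then have "cmod (gam \<alpha> j k) = fact k / fact (k - j) * \<bar>\<alpha> k\<bar>" by (simp add: gam_norm)
      also have "\<dots> \<le> real k ^ j * \<bar>\<alpha> k\<bar>"
        by (rule mult_right_mono) (use fact_div_le[of j k] True in auto)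
      finally show ?thesis .
    next
      case False
      then have "cmod (gam \<alpha> j k) = 0" by (auto simp: gam_norm)
      then show ?thesis by simp
    qed
    have kk: "real (k - j) ^ 2 \<le> real k ^ 2" by (intro power_mono) auto
    have "cmod (gam \<alpha> j k) * real (k - j) ^ 2 * t ^ (k - j - 2) \<le> (real k ^ j * \<bar>\<alpha> k\<bar>) * real k ^ 2 * (t ^ k / t ^ (j + 2))"
      unfolding tp by (intro mult_mono g kk) (use t in auto)
    also have "\<dots> = real k ^ (j + 2) * \<bar>\<alpha> k\<bar> * t ^ k / t ^ (j + 2)" by (simp add: power_add power2_eq_square)
    finally show ?thesis using True t by simp
  qed (use t in simp)
qed

context wsp begin

lemma prod_nW_nonneg: "0 \<le> (\<Prod>y\<leftarrow>ys. nW y)"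
  by (induction ys) (auto simp: nW_nonneg)

lemma Wder_rem:
  assumes u: "inW u" and r: "ereal (nW u) < conv_radius \<alpha>" and e: "\<epsilon> > 0"
  shows "\<exists>\<delta>>0. \<forall>h. inW h \<and> nW h < \<delta> \<and> ereal (nW (\<lambda>k. u k + h k)) < conv_radius \<alpha> \<longrightarrow>
     (\<forall>ys. length ys = j \<and> (\<forall>y\<in>set ys. inW y) \<longrightarrow>
        nW (\<lambda>m. Wder \<alpha> j (\<lambda>k. u k + h k) ys m - Wder \<alpha> j u ys m - Wder \<alpha> (Suc j) u (ys @ [h]) m)
          \<le> \<epsilon> * nW h * (\<Prod>y\<leftarrow>ys. nW y))"
proof -
  define a where "a = nW u"
  have a0: "0 \<le> a" by (simp add: a_def nW_nonneg)
  obtain t where t: "a < t" "ereal t < conv_radius \<alpha>" using exists_between r unfolding a_def by blast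
  have t0: "0 < t" using a0 t by simp
  define E where "E = (\<lambda>k. if j + 2 \<le> k then cmod (gam \<alpha> j k) * real (k - j) ^ 2 * t ^ (k - j - 2) else 0)"
  have Es: "summable E" unfolding E_def by (rule E_summable[OF t0 t(2)])
  have E0: "0 \<le> E k" for k unfolding E_def using t0 by simp
  define K where "K = suminf E"
  have K0: "0 \<le> K" unfolding K_def by (rule suminf_nonneg[OF Es E0])
  have w00: "0 < w 0" by (rule w_pos)
  define \<delta> where "\<delta> = min (t - a) (\<epsilon> / (K * w 0 + 1))"
  have KW: "0 \<le> K * w 0" using K0 w00 by simp
  have d0: "\<delta> > 0" unfolding \<delta>_def using t e KW by auto
  show ?thesis
  proof (intro exI[of _ \<delta>] conjI d0 allI impI)
    fix h :: "'n seq" and ys :: "'n seq list"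
    assume hh: "inW h \<and> nW h < \<delta> \<and> ereal (nW (\<lambda>k. u k + h k)) < conv_radius \<alpha>"
    assume ys: "length ys = j \<and> (\<forall>y\<in>set ys. inW y)"
    define b where "b = nW h"
    have b0: "0 \<le> b" by (simp add: b_def nW_nonneg)
    have h: "inW h" using hh by blast
    have bd: "b < \<delta>" using hh b_def by blast
    have abt: "a + b \<le> t" using bd unfolding \<delta>_def by simp
    have bK: "K * w 0 * b \<le> \<epsilon>"
    proof -
      have "b < \<epsilon> / (K * w 0 + 1)" using bd unfolding \<delta>_def by simp
      then have "b * (K * w 0 + 1) < \<epsilon>" using KW by (simp add: field_simps)
      then show ?thesis using b0 by (simp add: algebra_simps)
    qed
    have ysX: "\<forall>y\<in>set ys. inW y" using ys by blast
    have ysh: "\<forall>y\<in>set (ys @ [h]). inW y" using ysX h by auto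
    have uh: "inW (\<lambda>k. u k + h k)" by (rule inW_add[OF u h])
    have uhr: "ereal (nW (\<lambda>k. u k + h k)) < conv_radius \<alpha>" using hh by blast
    have one: "\<And>zs. \<forall>y\<in>set zs. inW y \<Longrightarrow> \<forall>y\<in>set zs. one.inW y" using inW_one by blast
    define U where "U = abs1 u"
    define H where "H = abs1 h"
    define P where "P = PL ys"
    have XU: "XX U" "NN U = a" using u by (auto simp: U_def a_def XX_abs1 NN_abs1)
    have XH: "XX H" "NN H = b" using h by (auto simp: H_def b_def XX_abs1 NN_abs1)
    have XP: "XX P" "NN P \<le> w 0 * (\<Prod>y\<leftarrow>ys. nW y)" using PL_bound[OF ysX] by (auto simp: P_def)
    have UH: "abs1 (\<lambda>k. u k + h k) = U + H"
      unfolding U_def H_def by (rule abs1_add) (use u h inW_one in auto)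
    define D where "D = (\<lambda>k. scal (gam \<alpha> j k) ((U + H) ^ (k - j) * P) - scal (gam \<alpha> j k) (U ^ (k - j) * P)
        - scal (gam \<alpha> (Suc j) k) (U ^ (k - Suc j) * PL (ys @ [h])))"
    have s1: "summable (\<lambda>k. rep (scal (gam \<alpha> j k) ((U + H) ^ (k - j) * P)) m)" for m
      using Wder_bound[OF uh uhr ysX, of j] unfolding UH P_def by blast
    have s2: "summable (\<lambda>k. rep (scal (gam \<alpha> j k) (U ^ (k - j) * P)) m)" for m
      using Wder_bound[OF u r ysX, of j] unfolding U_def P_def by blast
    have s3: "summable (\<lambda>k. rep (scal (gam \<alpha> (Suc j) k) (U ^ (k - Suc j) * PL (ys @ [h]))) m)" for m
      using Wder_bound[OF u r ysh, of "Suc j"] unfolding U_def by blast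
    have diff: "(\<lambda>m. Wder \<alpha> j (\<lambda>k. u k + h k) ys m - Wder \<alpha> j u ys m - Wder \<alpha> (Suc j) u (ys @ [h]) m)
        = (\<lambda>m. \<Sum>k. rep (D k) m)"
    proof
      fix m
      have "Wder \<alpha> j (\<lambda>k. u k + h k) ys m - Wder \<alpha> j u ys m - Wder \<alpha> (Suc j) u (ys @ [h]) m
        = (\<Sum>k. rep (scal (gam \<alpha> j k) ((U + H) ^ (k - j) * P)) m)
          - (\<Sum>k. rep (scal (gam \<alpha> j k) (U ^ (k - j) * P)) m)
          - (\<Sum>k. rep (scal (gam \<alpha> (Suc j) k) (U ^ (k - Suc j) * PL (ys @ [h]))) m)"
        unfolding Wder_eq[OF inW_one[OF uh] one[OF ysX]] Wder_eq[OF inW_one[OF u] one[OF ysX]]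
          Wder_eq[OF inW_one[OF u] one[OF ysh]] UH U_def P_def by simp
      also have "\<dots> = (\<Sum>k. rep (D k) m)"
        unfolding suminf_diff[OF s1 s2] suminf_diff[OF summable_diff[OF s1 s2] s3]
        by (simp add: D_def rep_diff)
      finally show "Wder \<alpha> j (\<lambda>k. u k + h k) ys m - Wder \<alpha> j u ys m - Wder \<alpha> (Suc j) u (ys @ [h]) m
         = (\<Sum>k. rep (D k) m)" .
    qed
    have Dk: "D k = scal (gam \<alpha> j k) 1 * (((U + H) ^ (k - j) - U ^ (k - j) - of_nat (k - j) * U ^ (k - j - 1) * H) * P)" for k
    proof -
      have e1: "k - Suc j = k - j - 1" by simp
      show ?thesis unfolding D_def gam_succ scal_of_nat_mult PL_append e1
        by (subst (1 2) scal_as_mult) (simp add: H_def P_def algebra_simps)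
    qed
    have XD: "XX (D k)" for k
      unfolding Dk using XU XH XP
      by (intro XX_mult XX_scal XX_1 XX_diff XX_pow XX_add XX_of_nat_mult) auto
    have ND: "NN (D k) \<le> E k * b ^ 2 * NN P" for k
    proof (cases "j + 2 \<le> k")
      case False
      then have "k - j = 0 \<or> k - j = 1" by auto
      then have "((U + H) ^ (k - j) - U ^ (k - j) - of_nat (k - j) * U ^ (k - j - 1) * H) = 0" by auto
      then have "NN (D k) = 0" unfolding Dk by (simp add: NN_0)
      then show ?thesis using False by (simp add: E_def)
    next
      case True
      have "NN (D k) = cmod (gam \<alpha> j k) * NN (((U + H) ^ (k - j) - U ^ (k - j) - of_nat (k - j) * U ^ (k - j - 1) * H) * P)"
        unfolding Dk by (simp add: scal_as_mult[symmetric] NN_scal)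
      also have "\<dots> \<le> cmod (gam \<alpha> j k) * (real (k - j) ^ 2 * b ^ 2 * (a + b) ^ (k - j - 2) * NN P)"
        by (rule mult_left_mono) (use rem_bound[OF XU(1) XH(1) XP(1), of "k - j"] XU XH in auto)
      also have "\<dots> \<le> cmod (gam \<alpha> j k) * (real (k - j) ^ 2 * b ^ 2 * t ^ (k - j - 2) * NN P)"
        by (intro mult_left_mono mult_right_mono power_mono abt) (use a0 b0 NN_nonneg in auto)
      finally show ?thesis using True by (simp add: E_def ac_simps)
    qed
    have sE: "summable (\<lambda>k. E k * b ^ 2 * NN P)" by (intro summable_mult2 Es)
    have sN: "summable (\<lambda>k. nW (rep (D k)))"
      by (rule summable_comparison_test'[OF sE, where N=0]) (use ND in \<open>auto simp: NN_def nW_nonneg\<close>)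
    have sb: "nW (\<lambda>m. \<Sum>k. rep (D k) m) \<le> (\<Sum>k. nW (rep (D k)))"
      using series_bound[of "\<lambda>k. rep (D k)"] XD sN by (auto simp: XX_def)
    also have "\<dots> \<le> (\<Sum>k. E k * b ^ 2 * NN P)"
      by (rule suminf_le) (use ND sN sE in \<open>auto simp: NN_def\<close>)
    also have "\<dots> = K * b ^ 2 * NN P"
      unfolding K_def by (simp add: suminf_mult2[OF Es] suminf_mult2[OF summable_mult2[OF Es]])
    also have "\<dots> \<le> K * b ^ 2 * (w 0 * (\<Prod>y\<leftarrow>ys. nW y))"
      by (intro mult_left_mono XP(2)) (use K0 in auto)
    also have "\<dots> = (K * w 0 * b) * b * (\<Prod>y\<leftarrow>ys. nW y)" by (simp add: power2_eq_square ac_simps)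
    also have "\<dots> \<le> \<epsilon> * b * (\<Prod>y\<leftarrow>ys. nW y)"
      by (intro mult_right_mono bK b0) (rule prod_nW_nonneg)
    finally show "nW (\<lambda>m. Wder \<alpha> j (\<lambda>k. u k + h k) ys m - Wder \<alpha> j u ys m - Wder \<alpha> (Suc j) u (ys @ [h]) m)
          \<le> \<epsilon> * nW h * (\<Prod>y\<leftarrow>ys. nW y)" unfolding diff b_def .
  qed
qed

end

lemma binom_UH:
  fixes U H :: "'a::comm_ring_1"
  shows "(U + H) ^ k = (\<Sum>j\<le>k. of_nat (k choose j) * (U ^ (k - j) * H ^ j))"
  using binomial_ring[of H U k] by (simp add: add.commute ac_simps)

lemma binom_term_le:
  fixes a b :: real
  assumes "0 \<le> a" "0 \<le> b" "j \<le> k"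
  shows "real (k choose j) * a ^ (k - j) * b ^ j \<le> (a + b) ^ k"
proof -
  have "(a + b) ^ k = (\<Sum>i\<le>k. real (k choose i) * (a ^ (k - i) * b ^ i))" by (rule binom_UH)
  moreover have "real (k choose j) * (a ^ (k - j) * b ^ j) \<le> (\<Sum>i\<le>k. real (k choose i) * (a ^ (k - i) * b ^ i))"
    by (rule member_le_sum[of j "{..k}" "\<lambda>i. real (k choose i) * (a ^ (k - i) * b ^ i)"]) (use assms in auto)
  ultimately show ?thesis by (simp add: mult.assoc)
qed

lemma gam_fact: "complex_of_real (1 / fact j) * gam \<alpha> j k =
  (if 2 \<le> k \<and> j \<le> k then complex_of_real (\<alpha> k) * of_nat (k choose j) else 0)"
proof (cases "2 \<le> k \<and> j \<le> k")
  case True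
  have eq: "1 / fact j * (fact k / fact (k - j) * \<alpha> k) = \<alpha> k * real (k choose j)"
    using True by (simp add: binomial_fact field_simps)
  have c: "max 2 j \<le> k" using True by simp
  have "complex_of_real (1 / fact j) * gam \<alpha> j k = complex_of_real (1 / fact j * (fact k / fact (k - j) * \<alpha> k))"
    unfolding gam_def if_P[OF c] by (rule of_real_mult[symmetric])
  also have "\<dots> = complex_of_real (\<alpha> k * real (k choose j))" by (simp only: eq)
  also have "\<dots> = complex_of_real (\<alpha> k) * of_nat (k choose j)" by simp
  finally show ?thesis using True by simp
qed (auto simp: gam_def)

context wsp begin

lemma bmlW_scale: "bmlW j A C \<Longrightarrow> bmlW j (\<lambda>ys m. c * A ys m) (cmod c * C)"
proof -
  assume B: "bmlW j A C"
  show ?thesis unfolding bmlW_def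
  proof (intro conjI allI impI)
    fix ys :: "'n seq list" assume a: "length ys = j \<and> (\<forall>y\<in>set ys. inW y)"
    have h: "inW (A ys) \<and> nW (A ys) \<le> C * (\<Prod>y\<leftarrow>ys. nW y)" using B a unfolding bmlW_def by blast
    then show "inW (\<lambda>m. c * A ys m)" by (auto intro: inW_scale)
    show "nW (\<lambda>m. c * A ys m) \<le> cmod c * C * (\<Prod>y\<leftarrow>ys. nW y)"
      using h by (auto simp: nW_scale mult.assoc intro: mult_left_mono)
  next
    fix ys :: "'n seq list" and i z a
    assume b: "length ys = j \<and> (\<forall>y\<in>set ys. inW y) \<and> i < j \<and> inW z"
    have h: "A (ys[i := \<lambda>m. (ys ! i) m + z m]) = (\<lambda>m. A ys m + A (ys[i := z]) m) \<and>
       A (ys[i := \<lambda>m. a * (ys ! i) m]) = (\<lambda>m. a * A ys m)" using B b unfolding bmlW_def by blast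
    then show "(\<lambda>m. c * A (ys[i := \<lambda>m. (ys ! i) m + z m]) m) = (\<lambda>m. c * A ys m + c * A (ys[i := z]) m)"
      by (auto simp: algebra_simps)
    show "(\<lambda>m. c * A (ys[i := \<lambda>m. a * (ys ! i) m]) m) = (\<lambda>m. a * (c * A ys m))"
      using h by (auto simp: algebra_simps)
  qed
qed

definition ballW :: "ereal \<Rightarrow> 'n seq set" where "ballW R = {u. inW u \<and> ereal (nW u) < R}"

lemma W_analytic:
  assumes u: "inW u" and r: "ereal (nW u) < conv_radius \<alpha>"
  shows "\<exists>\<rho>>0. \<exists>P C.
        (\<forall>h. inW h \<and> nW h < \<rho> \<longrightarrow> (\<lambda>m. u m + h m) \<in> ballW (conv_radius \<alpha>)) \<and>
        (\<forall>j. bmlW j (P j) (C j)) \<and> summable (\<lambda>j. C j * \<rho> ^ j) \<and>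
        (\<forall>h. inW h \<and> nW h < \<rho> \<longrightarrow>
           inW (Wmap \<alpha> (\<lambda>k. u k + h k)) \<and>
           (\<lambda>n. nW (\<lambda>m. Wmap \<alpha> (\<lambda>k. u k + h k) m - (\<Sum>j<n. P j (replicate j h) m))) \<longlonglongrightarrow> 0)"
proof -
  define a where "a = nW u"
  have a0: "0 \<le> a" by (simp add: a_def nW_nonneg)
  obtain t where t: "a < t" "ereal t < conv_radius \<alpha>" using exists_between r unfolding a_def by blast
  have t0: "0 < t" using a0 t by simp
  define \<rho>' where "\<rho>' = t - a"
  define \<rho> where "\<rho> = \<rho>' / 2"
  have r0: "0 < \<rho>'" "0 < \<rho>" using t by (auto simp: \<rho>'_def \<rho>_def)
  define M where "M = (\<Sum>k. \<bar>\<alpha> k\<bar> * t ^ k)"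
  have Ms: "summable (\<lambda>k. \<bar>\<alpha> k\<bar> * t ^ k)" by (rule alpha_summable) (use t0 t in auto)
  define Cw where "Cw = (\<lambda>j. (\<Sum>k. cmod (gam \<alpha> j k) * a ^ (k - j)) * w 0)"
  define P where "P = (\<lambda>j ys m. complex_of_real (1 / fact j) * Wder \<alpha> j u ys m)"
  define C where "C = (\<lambda>j. cmod (complex_of_real (1 / fact j)) * Cw j)"
  have bml: "bmlW j (P j) (C j)" for j
    unfolding P_def C_def Cw_def by (rule bmlW_scale) (use Wder_bml[OF u r, of j] in \<open>simp add: a_def\<close>)
  have cs: "summable (\<lambda>k. cmod (gam \<alpha> j k) * a ^ (k - j))" for j
    by (rule coef_summable) (use a0 r in \<open>auto simp: a_def\<close>)
  have Cbound: "C j * \<rho> ^ j \<le> w 0 * M * (1/2) ^ j" for j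
  proof -
    have tb: "cmod (gam \<alpha> j k) * a ^ (k - j) / fact j * \<rho> ^ j \<le> \<bar>\<alpha> k\<bar> * t ^ k * (1/2) ^ j" for k
    proof (cases "2 \<le> k \<and> j \<le> k")
      case True
      have g: "cmod (gam \<alpha> j k) / fact j = \<bar>\<alpha> k\<bar> * real (k choose j)"
        using True by (simp add: gam_norm binomial_fact field_simps)
      have "cmod (gam \<alpha> j k) * a ^ (k - j) / fact j * \<rho> ^ j = \<bar>\<alpha> k\<bar> * (real (k choose j) * a ^ (k - j) * \<rho>' ^ j) * (1/2) ^ j"
        using g by (simp add: \<rho>_def power_divide field_simps)
      also have "\<dots> \<le> \<bar>\<alpha> k\<bar> * (a + \<rho>') ^ k * (1/2) ^ j"
        by (intro mult_left_mono mult_right_mono binom_term_le) (use a0 r0 True in auto)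
      finally show ?thesis by (simp add: \<rho>'_def)
    next
      case False
      then have "cmod (gam \<alpha> j k) = 0" by (auto simp: gam_norm)
      then show ?thesis using t0 by simp
    qed
    have "C j * \<rho> ^ j = w 0 * (\<Sum>k. cmod (gam \<alpha> j k) * a ^ (k - j) / fact j * \<rho> ^ j)"
    proof -
      have e1: "(\<Sum>k. cmod (gam \<alpha> j k) * a ^ (k - j) / fact j * \<rho> ^ j) = (\<Sum>k. cmod (gam \<alpha> j k) * a ^ (k - j)) / fact j * \<rho> ^ j"
        using suminf_mult2[OF summable_divide[OF cs[of j]], of "fact j" "\<rho> ^ j"] suminf_divide[OF cs[of j], of "fact j"] by simp
      have e2: "cmod (complex_of_real (1 / fact j)) = 1 / fact j" by (simp only: norm_of_real) simp
      show ?thesis unfolding C_def Cw_def e1 e2 by (simp add: field_simps)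
    qed
    also have "\<dots> \<le> w 0 * (\<Sum>k. \<bar>\<alpha> k\<bar> * t ^ k * (1/2) ^ j)"
      by (intro mult_left_mono suminf_le tb summable_mult2 summable_divide cs Ms) (use w_pos in \<open>auto intro: less_imp_le\<close>)
    also have "\<dots> = w 0 * M * (1/2) ^ j" unfolding M_def by (simp add: suminf_mult2[OF Ms])
    finally show ?thesis .
  qed
  have C0: "0 \<le> C j" for j
    unfolding C_def Cw_def
    by (intro mult_nonneg_nonneg suminf_nonneg cs) (use w_pos a0 in \<open>auto intro: less_imp_le\<close>)
  have Cs: "summable (\<lambda>j. C j * \<rho> ^ j)"
  proof (rule summable_comparison_test'[where N=0])
    show "summable (\<lambda>j. w 0 * M * (1/2) ^ j)" by (intro summable_mult summable_geometric) simp
    fix j show "norm (C j * \<rho> ^ j) \<le> w 0 * M * (1/2) ^ j" using Cbound[of j] C0[of j] r0 by simp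
  qed
  show ?thesis
  proof (intro exI[of _ \<rho>] exI[of _ P] exI[of _ C] conjI allI impI r0(2) bml Cs)
    fix h assume hh: "inW h \<and> nW h < \<rho>"
    have h: "inW h" using hh by blast
    define b where "b = nW h"
    have b0: "0 \<le> b" by (simp add: b_def nW_nonneg)
    have bq: "b < \<rho>" using hh b_def by simp
    have uh: "inW (\<lambda>k. u k + h k)" by (rule inW_add[OF u h])
    have nuh: "nW (\<lambda>k. u k + h k) < t"
      using nW_add[OF u h] bq nW_nonneg[of h] unfolding a_def b_def \<rho>_def \<rho>'_def by simp
    have uhr: "ereal (nW (\<lambda>k. u k + h k)) < conv_radius \<alpha>" 
    proof -
      have "ereal (nW (\<lambda>k. u k + h k)) < ereal t" using nuh by simp
      then show ?thesis using t(2) by (rule order.strict_trans)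
    qed
    show "(\<lambda>m. u m + h m) \<in> ballW (conv_radius \<alpha>)" using uh uhr by (simp add: ballW_def)
    show "inW (Wmap \<alpha> (\<lambda>k. u k + h k))" using Wmap_bound[OF uh uhr] by blast
    define U where "U = abs1 u"
    define H where "H = abs1 h"
    have XU: "XX U" "NN U = a" using u by (auto simp: U_def a_def XX_abs1 NN_abs1)
    have XH: "XX H" "NN H = b" using h by (auto simp: H_def b_def XX_abs1 NN_abs1)
    have UH: "abs1 (\<lambda>k. u k + h k) = U + H"
      unfolding U_def H_def by (rule abs1_add) (use u h inW_one in auto)
    define TT where "TT = (\<lambda>j k. scal (complex_of_real (1 / fact j) * gam \<alpha> j k) (U ^ (k - j) * H ^ j))"
    define WW where "WW = (\<lambda>k. scal (if 2 \<le> k then complex_of_real (\<alpha> k) else 0) ((U + H) ^ k))"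
    have rep_h: "\<forall>y\<in>set (replicate j h). inW y" for j using h by simp
    have PLr: "PL (replicate j h) = H ^ j" for j by (simp add: PL_def H_def)
    have sT0: "summable (\<lambda>k. rep (scal (gam \<alpha> j k) (U ^ (k - j) * H ^ j)) m)" for j m
      using Wder_bound[OF u r rep_h, of j] unfolding PLr U_def by blast
    have TTr: "rep (TT j k) m = complex_of_real (1 / fact j) * rep (scal (gam \<alpha> j k) (U ^ (k - j) * H ^ j)) m" for j k m
      unfolding TT_def scal_scal[symmetric] by (rule rep_scal)
    have sT: "summable (\<lambda>k. rep (TT j k) m)" for j m
      unfolding TTr by (rule summable_mult[OF sT0])
    have Peq: "P j (replicate j h) m = (\<Sum>k. rep (TT j k) m)" for j m
    proof -
      have "P j (replicate j h) m = complex_of_real (1 / fact j) * (\<Sum>k. rep (scal (gam \<alpha> j k) (U ^ (k - j) * H ^ j)) m)"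
      proof -
        have o: "\<forall>y\<in>set (replicate j h). one.inW y" using inW_one[OF h] by simp
        show ?thesis unfolding P_def Wder_eq[OF inW_one[OF u] o] by (simp add: PLr U_def)
      qed
      also have "\<dots> = (\<Sum>k. rep (TT j k) m)"
        unfolding TTr by (rule suminf_mult[OF sT0, symmetric])
      finally show ?thesis .
    qed
    have sW: "summable (\<lambda>k. rep (WW k) m)" for m
    proof -
      have "summable (\<lambda>k. rep (scal (gam \<alpha> 0 k) (abs1 (\<lambda>k. u k + h k) ^ (k - 0) * PL [])) m)"
        using Wder_bound[OF uh uhr, of "[]" 0] by auto
      moreover have "scal (gam \<alpha> 0 k) (abs1 (\<lambda>k. u k + h k) ^ (k - 0) * PL []) = WW k" for k
        unfolding WW_def UH by (simp add: PL_def gam_def)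
      ultimately show ?thesis by simp
    qed
    have Weq: "Wmap \<alpha> (\<lambda>k. u k + h k) m = (\<Sum>k. rep (WW k) m)" for m
      unfolding Wmap_eq[OF inW_one[OF uh]] UH WW_def by simp
    define Q where "Q = (\<lambda>n k. WW k - (\<Sum>j<n. TT j k))"
    have diff: "(\<lambda>m. Wmap \<alpha> (\<lambda>k. u k + h k) m - (\<Sum>j<n. P j (replicate j h) m)) = (\<lambda>m. \<Sum>k. rep (Q n k) m)" for n
    proof
      fix m
      have "(\<Sum>j<n. P j (replicate j h) m) = (\<Sum>k. \<Sum>j<n. rep (TT j k) m)"
        unfolding Peq by (rule suminf_sum[symmetric]) (rule sT)
      then show "Wmap \<alpha> (\<lambda>k. u k + h k) m - (\<Sum>j<n. P j (replicate j h) m) = (\<Sum>k. rep (Q n k) m)"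
        unfolding Weq Q_def
        by (simp add: suminf_diff[OF sW summable_sum[OF sT]] rep_diff rep_sum)
    qed
    define q where "q = b / \<rho>'"
    have q0: "0 \<le> q" "q < 1" using b0 bq r0 by (auto simp: q_def \<rho>_def)
    have XQ: "XX (Q n k)" for n k
      unfolding Q_def WW_def TT_def using XU XH
      by (intro XX_diff XX_sum XX_scal XX_pow XX_add XX_mult) auto
    have NQ: "NN (Q n k) \<le> \<bar>\<alpha> k\<bar> * t ^ k * q ^ n" for n k
    proof (cases "2 \<le> k")
      case False
      then have "Q n k = 0" unfolding Q_def WW_def TT_def by (simp add: gam_def scal_0_left)
      then show ?thesis using q0 t0 by (simp add: NN_0)
    next
      case True
      define S where "S = {..k} - {..<n}"
      have Qe: "Q n k = scal (complex_of_real (\<alpha> k)) (\<Sum>j\<in>S. of_nat (k choose j) * (U ^ (k - j) * H ^ j))"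
      proof -
        have T1: "TT j k = (if j \<le> k then scal (complex_of_real (\<alpha> k)) (of_nat (k choose j) * (U ^ (k - j) * H ^ j)) else 0)" for j
          unfolding TT_def gam_fact using True
          by (auto simp: scal_0_left of_nat_scal scal_scal mult.commute)
        have "(\<Sum>j<n. TT j k) = (\<Sum>j\<in>{..<n} \<inter> {..k}. scal (complex_of_real (\<alpha> k)) (of_nat (k choose j) * (U ^ (k - j) * H ^ j)))"
          unfolding T1 by (simp add: sum.inter_restrict)
        also have "\<dots> = scal (complex_of_real (\<alpha> k)) (\<Sum>j\<in>{..<n} \<inter> {..k}. of_nat (k choose j) * (U ^ (k - j) * H ^ j))"
          by (simp add: scal_sum)
        finally have s1: "(\<Sum>j<n. TT j k) = \<dots>" .
        have s2: "WW k = scal (complex_of_real (\<alpha> k)) (\<Sum>j\<le>k. of_nat (k choose j) * (U ^ (k - j) * H ^ j))"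
          unfolding WW_def using True by (simp add: binom_UH)
        have split: "(\<Sum>j\<le>k. of_nat (k choose j) * (U ^ (k - j) * H ^ j))
          = (\<Sum>j\<in>S. of_nat (k choose j) * (U ^ (k - j) * H ^ j)) + (\<Sum>j\<in>{..<n} \<inter> {..k}. of_nat (k choose j) * (U ^ (k - j) * H ^ j))"
        proof -
          have "{..k} = S \<union> ({..<n} \<inter> {..k})" "S \<inter> ({..<n} \<inter> {..k}) = {}" unfolding S_def by auto
          then show ?thesis by (metis (no_types, lifting) S_def finite_Diff finite_Int finite_atMost sum.union_disjoint)
        qed
        have sd: "scal c (A + B) - scal c B = scal c A" for c and A B :: "'n l1"
          by (simp add: scal_add)
        show ?thesis unfolding Q_def s1 s2 split sd ..
      qed
      have fS: "finite S" by (simp add: S_def)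
      have "NN (Q n k) = \<bar>\<alpha> k\<bar> * NN (\<Sum>j\<in>S. of_nat (k choose j) * (U ^ (k - j) * H ^ j))"
        unfolding Qe by (simp add: NN_scal)
      also have "\<dots> \<le> \<bar>\<alpha> k\<bar> * (\<Sum>j\<in>S. real (k choose j) * (a ^ (k - j) * b ^ j))"
      proof (rule mult_left_mono)
        have "NN (\<Sum>j\<in>S. of_nat (k choose j) * (U ^ (k - j) * H ^ j)) \<le> (\<Sum>j\<in>S. NN (of_nat (k choose j) * (U ^ (k - j) * H ^ j)))"
          by (rule NN_sum[OF fS]) (use XU XH in \<open>auto intro: XX_of_nat_mult XX_mult XX_pow\<close>)
        also have "\<dots> \<le> (\<Sum>j\<in>S. real (k choose j) * (a ^ (k - j) * b ^ j))"
        proof (rule sum_mono)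
          fix j assume "j \<in> S"
          then have jk: "j \<le> k" by (simp add: S_def)
          have "NN (U ^ (k - j) * H ^ j) \<le> a ^ (k - j) * b ^ j"
            using NN_pow_pow[OF XU(1) XH(1), of "k - j" j] XU XH True jk by simp
          then show "NN (of_nat (k choose j) * (U ^ (k - j) * H ^ j)) \<le> real (k choose j) * (a ^ (k - j) * b ^ j)"
            by (simp add: NN_of_nat_mult mult_left_mono)
        qed
        finally show "NN (\<Sum>j\<in>S. of_nat (k choose j) * (U ^ (k - j) * H ^ j)) \<le> (\<Sum>j\<in>S. real (k choose j) * (a ^ (k - j) * b ^ j))" .
      qed simp
      also have "\<dots> \<le> \<bar>\<alpha> k\<bar> * (\<Sum>j\<le>k. q ^ n * (real (k choose j) * (a ^ (k - j) * \<rho>' ^ j)))"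
      proof (rule mult_left_mono)
        have "(\<Sum>j\<in>S. real (k choose j) * (a ^ (k - j) * b ^ j)) \<le> (\<Sum>j\<in>S. q ^ n * (real (k choose j) * (a ^ (k - j) * \<rho>' ^ j)))"
        proof (rule sum_mono)
          fix j assume "j \<in> S"
          then have nj: "n \<le> j" by (simp add: S_def)
          have bj: "b ^ j = q ^ j * \<rho>' ^ j" using r0 by (simp add: q_def power_divide)
          have "q ^ j \<le> q ^ n" by (rule power_decreasing[OF nj]) (use q0 in auto)
          then have "b ^ j \<le> q ^ n * \<rho>' ^ j" unfolding bj by (rule mult_right_mono) (use r0 in simp)
          then have "(real (k choose j) * a ^ (k - j)) * b ^ j \<le> (real (k choose j) * a ^ (k - j)) * (q ^ n * \<rho>' ^ j)"
            by (rule mult_left_mono) (use a0 in simp)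
          then show "real (k choose j) * (a ^ (k - j) * b ^ j) \<le> q ^ n * (real (k choose j) * (a ^ (k - j) * \<rho>' ^ j))"
            by (simp add: ac_simps)
        qed
        also have "\<dots> \<le> (\<Sum>j\<le>k. q ^ n * (real (k choose j) * (a ^ (k - j) * \<rho>' ^ j)))"
          by (rule sum_mono2) (use q0 a0 r0 in \<open>auto simp: S_def\<close>)
        finally show "(\<Sum>j\<in>S. real (k choose j) * (a ^ (k - j) * b ^ j)) \<le> (\<Sum>j\<le>k. q ^ n * (real (k choose j) * (a ^ (k - j) * \<rho>' ^ j)))" .
      qed simp
      also have "\<dots> = \<bar>\<alpha> k\<bar> * (q ^ n * (\<Sum>j\<le>k. real (k choose j) * (a ^ (k - j) * \<rho>' ^ j)))"
        by (simp only: sum_distrib_left)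
      also have "\<dots> = \<bar>\<alpha> k\<bar> * (q ^ n * (a + \<rho>') ^ k)"
        by (simp only: binom_UH[of a \<rho>' k, symmetric])
      also have "\<dots> = \<bar>\<alpha> k\<bar> * t ^ k * q ^ n" by (simp add: \<rho>'_def)
      finally show ?thesis .
    qed
    have sQ: "summable (\<lambda>k. nW (rep (Q n k)))" for n
      by (rule summable_comparison_test'[OF summable_mult2[OF Ms, of "q ^ n"], where N=0])
         (use NQ in \<open>auto simp: NN_def nW_nonneg\<close>)
    have bound: "nW (\<lambda>m. \<Sum>k. rep (Q n k) m) \<le> M * q ^ n" for n
    proof -
      have "nW (\<lambda>m. \<Sum>k. rep (Q n k) m) \<le> (\<Sum>k. nW (rep (Q n k)))"
        using series_bound[of "\<lambda>k. rep (Q n k)"] XQ sQ by (auto simp: XX_def)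
      also have "\<dots> \<le> (\<Sum>k. \<bar>\<alpha> k\<bar> * t ^ k * q ^ n)"
        by (rule suminf_le) (use NQ sQ summable_mult2[OF Ms] in \<open>auto simp: NN_def\<close>)
      also have "\<dots> = M * q ^ n" unfolding M_def by (rule suminf_mult2[OF Ms, symmetric])
      finally show ?thesis .
    qed
    show "(\<lambda>n. nW (\<lambda>m. Wmap \<alpha> (\<lambda>k. u k + h k) m - (\<Sum>j<n. P j (replicate j h) m))) \<longlonglongrightarrow> 0"
      unfolding diff
    proof (rule tendsto_sandwich[of "\<lambda>_. 0" _ _ "\<lambda>n. M * q ^ n"])
      show "\<forall>\<^sub>F n in sequentially. 0 \<le> nW (\<lambda>m. \<Sum>k. rep (Q n k) m)" by (simp add: nW_nonneg)
      show "\<forall>\<^sub>F n in sequentially. nW (\<lambda>m. \<Sum>k. rep (Q n k) m) \<le> M * q ^ n" using bound by simp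
      show "(\<lambda>n. M * q ^ n) \<longlonglongrightarrow> 0" using q0 by (intro tendsto_mult_right_zero LIMSEQ_power_zero) simp
    qed simp
  qed
qed

end

lemma maxnorm_ge: "\<bar>real_of_int (m $ i)\<bar> \<le> maxnorm m"
  unfolding maxnorm_def of_int_abs[symmetric] of_int_le_iff by (rule Max_ge) auto

lemma maxnorm_nonneg: "0 \<le> maxnorm m"
  using maxnorm_ge[of m undefined] by linarith

lemma maxnorm_0[simp]: "maxnorm (0 :: int^'n::finite) = 0"
  unfolding maxnorm_def by simp

lemma maxnorm_le: "(\<And>i. \<bar>m $ i\<bar> \<le> B) \<Longrightarrow> maxnorm m \<le> real_of_int B"
  unfolding maxnorm_def by (subst of_int_le_iff) (auto simp: Max_le_iff)

lemma maxnorm_triangle: "maxnorm (a + b) \<le> maxnorm a + maxnorm b"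
proof -
  have "maxnorm (a + b) \<le> real_of_int (Max (range (\<lambda>i. \<bar>a $ i\<bar>)) + Max (range (\<lambda>i. \<bar>b $ i\<bar>)))"
  proof (rule maxnorm_le)
    fix i
    have "\<bar>(a + b) $ i\<bar> \<le> \<bar>a $ i\<bar> + \<bar>b $ i\<bar>" by simp
    also have "\<dots> \<le> Max (range (\<lambda>i. \<bar>a $ i\<bar>)) + Max (range (\<lambda>i. \<bar>b $ i\<bar>))"
      by (intro add_mono Max_ge) auto
    finally show "\<bar>(a + b) $ i\<bar> \<le> Max (range (\<lambda>i. \<bar>a $ i\<bar>)) + Max (range (\<lambda>i. \<bar>b $ i\<bar>))" .
  qed
  then show ?thesis unfolding maxnorm_def by simp
qed

lemma h_summable_nat:
  assumes "s > 1"
  shows "(\<lambda>n::nat. (1 + real n) powr (- s)) summable_on UNIV"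
proof -
  have "summable (\<lambda>n::nat. real n powr (- s))" using assms by (simp add: summable_real_powr_iff)
  then have "summable (\<lambda>n::nat. real (n + 1) powr (- s))" by (subst summable_iff_shift) 
  then have "summable (\<lambda>n::nat. (1 + real n) powr (- s))" by (simp add: add.commute)
  then show ?thesis by (rule summable_nonneg_imp_summable_on) simp
qed

lemma h_summable_int:
  assumes "s > 1"
  shows "(\<lambda>z::int. (1 + \<bar>real_of_int z\<bar>) powr (- s)) summable_on UNIV"
proof -
  define f where "f = (\<lambda>z::int. (1 + \<bar>real_of_int z\<bar>) powr (- s))"
  have s1: "f summable_on (int ` UNIV)"
  proof (subst summable_on_reindex)
    show "inj_on int UNIV" by simp
    show "(f \<circ> int) summable_on UNIV" using h_summable_nat[OF assms] by (simp add: f_def o_def)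
  qed
  have s2: "f summable_on ((\<lambda>n. - int n - 1) ` UNIV)"
  proof (subst summable_on_reindex)
    show "inj_on (\<lambda>n. - int n - 1) UNIV" by (auto simp: inj_on_def)
    show "(f \<circ> (\<lambda>n. - int n - 1)) summable_on UNIV"
    proof (rule summable_on_comparison_test[OF h_summable_nat[OF assms]])
      fix n :: nat
      have "(1 + \<bar>real_of_int (- int n - 1)\<bar>) powr (- s) \<le> (1 + real n) powr (- s)"
        by (rule powr_mono2') (use assms in auto)
      then show "(f \<circ> (\<lambda>n. - int n - 1)) n \<le> (1 + real n) powr (- s)" by (simp add: f_def)
      show "0 \<le> (f \<circ> (\<lambda>n. - int n - 1)) n" by (simp add: f_def)
    qed
  qed
  have U: "(UNIV :: int set) = int ` UNIV \<union> (\<lambda>n. - int n - 1) ` UNIV"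
  proof -
    have "z \<in> int ` UNIV \<union> (\<lambda>n. - int n - 1) ` UNIV" for z :: int
    proof (cases "z \<ge> 0")
      case True then show ?thesis by (metis UnI1 nonneg_int_cases rangeI)
    next
      case False
      then have "z = - int (nat (- z - 1)) - 1" by simp
      then show ?thesis by blast
    qed
    then show ?thesis by blast
  qed
  have "f summable_on (int ` UNIV \<union> (\<lambda>n. - int n - 1) ` UNIV)"
    by (rule summable_on_Un_disjoint[OF s1 s2]) auto
  then show ?thesis using U by (simp add: f_def)
qed

lemma finite_sum_prod_vec:
  fixes h :: "int \<Rightarrow> real" and F :: "'n::finite \<Rightarrow> int set"
  assumes fin: "\<And>i. finite (F i)"
  shows "(\<Sum>m\<in>{m::int^'n. \<forall>i. m $ i \<in> F i}. \<Prod>i\<in>UNIV. h (m $ i)) = (\<Prod>i\<in>UNIV. \<Sum>z\<in>F i. h z)"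
proof -
  have fP: "finite (PiE UNIV F)" by (rule finite_PiE) (use fin in auto)
  have "(\<Sum>m\<in>{m::int^'n. \<forall>i. m $ i \<in> F i}. \<Prod>i\<in>UNIV. h (m $ i)) = (\<Sum>p\<in>PiE UNIV F. \<Prod>i\<in>UNIV. h (p i))"
    by (rule sum.reindex_bij_witness[of _ vec_lambda vec_nth]) (auto simp: PiE_def extensional_def)
  also have "\<dots> = infsum (\<lambda>p. \<Prod>i\<in>UNIV. h (p i)) (PiE UNIV F)" using fP by simp
  also have "\<dots> = (\<Prod>i\<in>UNIV. infsum h (F i))"
    by (rule infsum_prod_PiE_abs) (use fin in auto)
  also have "\<dots> = (\<Prod>i\<in>UNIV. \<Sum>z\<in>F i. h z)" using fin by simp
  finally show ?thesis .
qed

lemma lattice_summable: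
  "(\<lambda>m::int^'n::finite. 1 / (1 + maxnorm m) ^ (CARD('n) + 1)) summable_on UNIV"
proof (rule nonneg_bdd_above_summable_on)
  define \<nu> where "\<nu> = CARD('n)"
  have nu: "\<nu> \<ge> 1" unfolding \<nu>_def by (simp add: Suc_leI)
  define s where "s = 1 + 1 / real \<nu>"
  have s1: "s > 1" using nu by (simp add: s_def)
  define h where "h = (\<lambda>z::int. (1 + \<bar>real_of_int z\<bar>) powr (- s))"
  have hs: "h summable_on UNIV" unfolding h_def by (rule h_summable_int[OF s1])
  define S where "S = infsum h UNIV"
  have h0: "0 \<le> h z" for z by (simp add: h_def)
  have hS: "sum h A \<le> S" if "finite A" for A
    unfolding S_def using infsum_mono_neutral[of h A h UNIV] that hs h0 by auto
  have ptw: "1 / (1 + maxnorm m) ^ (CARD('n) + 1) \<le> (\<Prod>i\<in>UNIV. h (m $ i))" for m :: "int^'n"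
  proof -
    define N where "N = maxnorm m"
    have N0: "0 \<le> N" by (simp add: N_def maxnorm_nonneg)
    have "(\<Prod>i\<in>UNIV. (1 + \<bar>real_of_int (m $ i)\<bar>) powr s) \<le> (\<Prod>i\<in>(UNIV::'n set). (1 + N) powr s)"
      by (intro prod_mono conjI powr_mono2) (use s1 maxnorm_ge[of m] in \<open>auto simp: N_def\<close>)
    also have "\<dots> = ((1 + N) powr s) ^ \<nu>" by (simp add: \<nu>_def)
    also have "\<dots> = (1 + N) powr (s * real \<nu>)" using N0 by (simp add: powr_powr powr_realpow[symmetric] mult.commute)
    also have "\<dots> = (1 + N) ^ (CARD('n) + 1)"
    proof -
      have "s * real \<nu> = real (CARD('n) + 1)" using nu by (simp add: s_def \<nu>_def field_simps)
      then show ?thesis by (simp only:) (rule powr_realpow, use N0 in simp)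
    qed
    finally have le: "(\<Prod>i\<in>UNIV. (1 + \<bar>real_of_int (m $ i)\<bar>) powr s) \<le> (1 + N) ^ (CARD('n) + 1)" .
    have pos: "0 < (\<Prod>i\<in>UNIV. (1 + \<bar>real_of_int (m $ i)\<bar>) powr s)" by (intro prod_pos) simp
    have "(\<Prod>i\<in>UNIV. h (m $ i)) = 1 / (\<Prod>i\<in>UNIV. (1 + \<bar>real_of_int (m $ i)\<bar>) powr s)"
      by (simp add: h_def powr_minus_divide prod_dividef)
    moreover have "1 / (1 + N) ^ (CARD('n) + 1) \<le> 1 / (\<Prod>i\<in>UNIV. (1 + \<bar>real_of_int (m $ i)\<bar>) powr s)"
      by (rule divide_left_mono[OF le]) (use pos N0 in auto)
    ultimately show ?thesis by (simp add: N_def)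
  qed
  show "bdd_above (sum (\<lambda>m::int^'n. 1 / (1 + maxnorm m) ^ (CARD('n) + 1)) ` {F. F \<subseteq> UNIV \<and> finite F})"
  proof (rule bdd_aboveI2)
    fix F :: "(int^'n) set" assume "F \<in> {F. F \<subseteq> UNIV \<and> finite F}"
    then have fF: "finite F" by simp
    define Fi where "Fi = (\<lambda>i. (\<lambda>m. m $ i) ` F)"
    have fFi: "finite (Fi i)" for i using fF by (simp add: Fi_def)
    define G where "G = {m::int^'n. \<forall>i. m $ i \<in> Fi i}"
    have FG: "F \<subseteq> G" by (auto simp: G_def Fi_def)
    have fG: "finite G"
    proof -
      have "G \<subseteq> vec_lambda ` PiE UNIV Fi"
      proof
        fix m assume "m \<in> G"
        then have "(\<lambda>i. m $ i) \<in> PiE UNIV Fi" by (auto simp: G_def PiE_def extensional_def)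
        then show "m \<in> vec_lambda ` PiE UNIV Fi" by (metis image_eqI vec_lambda_eta)
      qed
      moreover have "finite (PiE UNIV Fi)" by (rule finite_PiE) (use fFi in auto)
      ultimately show ?thesis by (meson finite_imageI finite_subset)
    qed
    have "(\<Sum>m\<in>F. 1 / (1 + maxnorm m) ^ (CARD('n) + 1)) \<le> (\<Sum>m\<in>F. \<Prod>i\<in>UNIV. h (m $ i))"
      by (intro sum_mono ptw)
    also have "\<dots> \<le> (\<Sum>m\<in>G. \<Prod>i\<in>UNIV. h (m $ i))"
      by (rule sum_mono2[OF fG FG]) (simp add: h0 prod_nonneg)
    also have "\<dots> = (\<Prod>i\<in>UNIV. \<Sum>z\<in>Fi i. h z)" unfolding G_def by (rule finite_sum_prod_vec[OF fFi])
    also have "\<dots> \<le> (\<Prod>i\<in>(UNIV::'n set). S)"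
      by (intro prod_mono conjI sum_nonneg hS fFi h0)
    finally show "(\<Sum>m\<in>F. 1 / (1 + maxnorm m) ^ (CARD('n) + 1)) \<le> S ^ CARD('n)" by simp
  qed
next
  fix x :: "int^'n"
  have "0 \<le> 1 + maxnorm x" using maxnorm_nonneg[of x] by simp
  then show "0 \<le> 1 / (1 + maxnorm x) ^ (CARD('n) + 1)" by simp
qed

lemma g_shift_summable:
  "(\<lambda>m::int^'n::finite. 1 / (1 + maxnorm (n - m)) ^ (CARD('n) + 1)) summable_on UNIV"
proof -
  have "(\<lambda>m::int^'n. 1 / (1 + maxnorm m) ^ (CARD('n) + 1)) summable_on UNIV" by (rule lattice_summable)
  then show ?thesis
    by (subst summable_on_reindex_bij_witness[of UNIV "\<lambda>k. n - k" "\<lambda>k. n - k" UNIV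
          "\<lambda>m. 1 / (1 + maxnorm m) ^ (CARD('n) + 1)"]) auto
qed

lemma g_shift_infsum:
  "infsum (\<lambda>m::int^'n::finite. 1 / (1 + maxnorm (n - m)) ^ (CARD('n) + 1)) UNIV
   = infsum (\<lambda>m::int^'n. 1 / (1 + maxnorm m) ^ (CARD('n) + 1)) UNIV"
  by (rule infsum_neg_var)

lemma D1_term_bound:
  fixes n m :: "int^'n::finite"
  assumes \<sigma>: "0 \<le> \<sigma>"
  defines "p \<equiv> CARD('n) + 1"
  shows "0 \<le> ((1 + maxnorm n) ^ p * exp (\<sigma> * maxnorm n)) /
        (((1 + maxnorm m) ^ p * exp (\<sigma> * maxnorm m)) *
         ((1 + maxnorm (n - m)) ^ p * exp (\<sigma> * maxnorm (n - m))))
   \<and> ((1 + maxnorm n) ^ p * exp (\<sigma> * maxnorm n)) /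
        (((1 + maxnorm m) ^ p * exp (\<sigma> * maxnorm m)) *
         ((1 + maxnorm (n - m)) ^ p * exp (\<sigma> * maxnorm (n - m))))
     \<le> 2 ^ p * (1 / (1 + maxnorm m) ^ p + 1 / (1 + maxnorm (n - m)) ^ p)"
proof -
  define A where "A = 1 + maxnorm m"
  define B where "B = 1 + maxnorm (n - m)"
  define C where "C = 1 + maxnorm n"
  have A1: "1 \<le> A" and B1: "1 \<le> B" and C1: "1 \<le> C" using maxnorm_nonneg
    by (auto simp: A_def B_def C_def)
  have tri: "maxnorm n \<le> maxnorm m + maxnorm (n - m)"
    using maxnorm_triangle[of m "n - m"] by simp
  have CAB: "C \<le> A + B" using tri by (simp add: A_def B_def C_def)
  define E where "E = exp (\<sigma> * maxnorm n) / (exp (\<sigma> * maxnorm m) * exp (\<sigma> * maxnorm (n - m)))"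
  have E1: "E \<le> 1" and E0: "0 \<le> E"
  proof -
    have "exp (\<sigma> * maxnorm n) \<le> exp (\<sigma> * maxnorm m) * exp (\<sigma> * maxnorm (n - m))"
      unfolding exp_add[symmetric] using tri \<sigma> by (simp add: distrib_left[symmetric] mult_left_mono)
    then show "E \<le> 1" unfolding E_def by simp
    show "0 \<le> E" unfolding E_def by simp
  qed
  have eq: "((1 + maxnorm n) ^ p * exp (\<sigma> * maxnorm n)) /
        (((1 + maxnorm m) ^ p * exp (\<sigma> * maxnorm m)) *
         ((1 + maxnorm (n - m)) ^ p * exp (\<sigma> * maxnorm (n - m))))
     = C ^ p / (A ^ p * B ^ p) * E"
    unfolding A_def B_def C_def E_def by (simp add: field_simps)
  have key: "C ^ p / (A ^ p * B ^ p) \<le> 2 ^ p * (1 / A ^ p + 1 / B ^ p)"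
  proof (cases "A \<le> B")
    case True
    have "C ^ p \<le> (2 * B) ^ p" by (rule power_mono) (use CAB True C1 in auto)
    then have "C ^ p / (A ^ p * B ^ p) \<le> (2 * B) ^ p / (A ^ p * B ^ p)"
      by (rule divide_right_mono) (use A1 B1 in simp)
    also have "\<dots> = 2 ^ p / A ^ p" using B1 by (simp add: power_mult_distrib)
    also have "\<dots> \<le> 2 ^ p * (1 / A ^ p + 1 / B ^ p)" using A1 B1 by (simp add: field_simps)
    finally show ?thesis .
  next
    case False
    have "C ^ p \<le> (2 * A) ^ p" by (rule power_mono) (use CAB False C1 in auto)
    then have "C ^ p / (A ^ p * B ^ p) \<le> (2 * A) ^ p / (A ^ p * B ^ p)"
      by (rule divide_right_mono) (use A1 B1 in simp)
    also have "\<dots> = 2 ^ p / B ^ p" using A1 by (simp add: power_mult_distrib)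
    also have "\<dots> \<le> 2 ^ p * (1 / A ^ p + 1 / B ^ p)" using A1 B1 by (simp add: field_simps)
    finally show ?thesis .
  qed
  have c0: "0 \<le> C ^ p / (A ^ p * B ^ p)" using A1 B1 C1 by simp
  have "C ^ p / (A ^ p * B ^ p) * E \<le> C ^ p / (A ^ p * B ^ p) * 1" by (rule mult_left_mono[OF E1 c0])
  then have le: "C ^ p / (A ^ p * B ^ p) * E \<le> 2 ^ p * (1 / A ^ p + 1 / B ^ p)" using key by simp
  have ge: "0 \<le> C ^ p / (A ^ p * B ^ p) * E" using c0 E0 by (rule mult_nonneg_nonneg)
  have "0 \<le> ((1 + maxnorm n) ^ p * exp (\<sigma> * maxnorm n)) /
        (((1 + maxnorm m) ^ p * exp (\<sigma> * maxnorm m)) *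
         ((1 + maxnorm (n - m)) ^ p * exp (\<sigma> * maxnorm (n - m))))
   \<and> ((1 + maxnorm n) ^ p * exp (\<sigma> * maxnorm n)) /
        (((1 + maxnorm m) ^ p * exp (\<sigma> * maxnorm m)) *
         ((1 + maxnorm (n - m)) ^ p * exp (\<sigma> * maxnorm (n - m))))
     \<le> 2 ^ p * (1 / A ^ p + 1 / B ^ p)" unfolding eq using le ge by blast
  then show ?thesis by (simp only: A_def B_def)
qed

lemma D1_ge1: "D1 TYPE('n::finite) \<ge> 1"
proof -
  define p where "p = CARD('n) + 1"
  define f where "f = (\<lambda>(n::int^'n) \<sigma> (m::int^'n). ((1 + maxnorm n) ^ (CARD('n) + 1) * exp (\<sigma> * maxnorm n)) /
        (((1 + maxnorm m) ^ (CARD('n) + 1) * exp (\<sigma> * maxnorm m)) *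
         ((1 + maxnorm (n - m)) ^ (CARD('n) + 1) * exp (\<sigma> * maxnorm (n - m)))))"
  define S where "S = infsum (\<lambda>m::int^'n. 1 / (1 + maxnorm m) ^ (CARD('n) + 1)) UNIV"
  define K where "K = 2 ^ p * (S + S)"
  have gs: "(\<lambda>m::int^'n. 2 ^ p * (1 / (1 + maxnorm m) ^ p + 1 / (1 + maxnorm (n - m)) ^ p)) summable_on UNIV" for n
    unfolding p_def by (intro summable_on_cmult_right summable_on_add lattice_summable g_shift_summable)
  have gi: "infsum (\<lambda>m::int^'n. 2 ^ p * (1 / (1 + maxnorm m) ^ p + 1 / (1 + maxnorm (n - m)) ^ p)) UNIV = K" for n
    unfolding K_def S_def p_def
    by (simp only: infsum_cmult_right' infsum_add[OF lattice_summable g_shift_summable] g_shift_infsum)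
  have fb: "0 \<le> f n \<sigma> m \<and> f n \<sigma> m \<le> 2 ^ p * (1 / (1 + maxnorm m) ^ p + 1 / (1 + maxnorm (n - m)) ^ p)"
    if "0 \<le> \<sigma>" for n m \<sigma> unfolding f_def p_def by (rule D1_term_bound[OF that])
  have fs: "f n \<sigma> summable_on UNIV" if "0 \<le> \<sigma>" for n \<sigma>
    by (rule summable_on_comparison_test[OF gs]) (use fb[OF that] in auto)
  have fK: "infsum (f n \<sigma>) UNIV \<le> K" if "0 \<le> \<sigma>" for n \<sigma>
    unfolding gi[of n, symmetric] by (rule infsum_mono[OF fs[OF that] gs]) (use fb[OF that] in auto)
  define \<Phi> where "\<Phi> = (\<lambda>n. SUP \<sigma>\<in>{1/4::real..}. infsum (f n \<sigma>) UNIV)"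
  have bi: "bdd_above ((\<lambda>\<sigma>. infsum (f n \<sigma>) UNIV) ` {1/4..})" for n
    by (rule bdd_aboveI2[of _ _ K]) (use fK in auto)
  have PhiK: "\<Phi> n \<le> K" for n
    unfolding \<Phi>_def by (rule cSUP_least) (use fK in auto)
  have bo: "bdd_above (range \<Phi>)" by (rule bdd_aboveI2[of _ _ K]) (use PhiK in auto)
  have "1 \<le> f 0 (1/4) 0" unfolding f_def by simp
  also have "\<dots> \<le> infsum (f 0 (1/4)) UNIV"
    by (rule single_le_infsum[OF fs]) (use fb in auto)
  also have "\<dots> \<le> \<Phi> 0" unfolding \<Phi>_def by (rule cSUP_upper[OF _ bi]) simp
  also have "\<dots> \<le> (SUP n. \<Phi> n)" by (rule cSUP_upper[OF _ bo]) simp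
  also have "(SUP n. \<Phi> n) = D1 TYPE('n)" unfolding \<Phi>_def f_def D1_def ..
  finally show ?thesis .
qed

lemma DN_ge1: "DN TYPE('n::finite) \<ge> 1"
  unfolding DN_def using D1_ge1[where 'n='n] by simp

lemma powr_subadd:
  fixes a b c :: real
  assumes a: "0 \<le> a" and b: "0 \<le> b" and c: "0 < c" "c \<le> 1"
  shows "(a + b) powr c \<le> a powr c + b powr c"
proof (cases "a + b = 0")
  case True then show ?thesis using a b by simp
next
  case False
  then have ab: "0 < a + b" using a b by simp
  have part: "x * (a + b) powr (c - 1) \<le> x powr c" if x: "0 \<le> x" "x \<le> a + b" for x
  proof (cases "x = 0")
    case True then show ?thesis by simp
  next
    case False
    then have x0: "0 < x" using x by simp
    have "(a + b) powr (c - 1) \<le> x powr (c - 1)" by (rule powr_mono2') (use c x0 x in auto)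
    then have "x * (a + b) powr (c - 1) \<le> x * x powr (c - 1)" using x0 by simp
    also have "\<dots> = x powr c"
    proof -
      have e2: "x powr (c - 1) = x powr c / x" using x0 by (simp add: powr_diff)
      show ?thesis unfolding e2 using x0 by simp
    qed
    finally show ?thesis .
  qed
  have e: "(a + b) powr (c - 1) = (a + b) powr c / (a + b)" using ab by (simp add: powr_diff)
  have "(a + b) powr c = (a + b) * (a + b) powr (c - 1)" unfolding e using ab by simp
  also have "\<dots> = a * (a + b) powr (c - 1) + b * (a + b) powr (c - 1)" by (rule distrib_right)
  also have "\<dots> \<le> a powr c + b powr c" using part[of a] part[of b] a b by (intro add_mono) auto
  finally show ?thesis .
qed

lemma maxnorm_powr_subadd:
  assumes "0 < c" "c \<le> 1"
  shows "maxnorm (a + b) powr c \<le> maxnorm a powr c + maxnorm b powr c"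
proof -
  have "maxnorm (a + b) powr c \<le> (maxnorm a + maxnorm b) powr c"
    by (rule powr_mono2) (use assms maxnorm_triangle maxnorm_nonneg in auto)
  also have "\<dots> \<le> maxnorm a powr c + maxnorm b powr c"
    by (rule powr_subadd) (use assms maxnorm_nonneg in auto)
  finally show ?thesis .
qed

lemma cc_props: "0 < cc" "cc \<le> 1" "cc \<noteq> 1" by (auto simp: cc_def)

lemma wsp_weight:
  assumes \<sigma>: "0 \<le> \<sigma>" and x: "x = cc \<or> x = 1"
  shows "wsp (weight \<sigma> x :: int^'n::finite \<Rightarrow> real)"
proof
  define D where "D = DN TYPE('n)"
  have D1: "1 \<le> D" unfolding D_def by (rule DN_ge1)
  fix m a b :: "int^'n"
  show "1 \<le> weight \<sigma> x m"
  proof (cases "x = 1")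
    case True
    have "1 \<le> (1 + maxnorm m) ^ (CARD('n) + 1)" by (rule one_le_power) (use maxnorm_nonneg in simp)
    moreover have "1 \<le> exp (\<sigma> * maxnorm m)" using \<sigma> maxnorm_nonneg[of m] by simp
    ultimately have "1 * 1 * 1 \<le> D * (1 + maxnorm m) ^ (CARD('n) + 1) * exp (\<sigma> * maxnorm m)"
      using D1 by (intro mult_mono) auto
    then show ?thesis using True by (simp add: weight_def D_def)
  next
    case False
    have "1 \<le> exp (\<sigma> * maxnorm m powr x)" using \<sigma> by simp
    then have "1 * 1 \<le> D * exp (\<sigma> * maxnorm m powr x)" using D1 by (intro mult_mono) auto
    then show ?thesis using False by (simp add: weight_def D_def)
  qed
  show "weight \<sigma> x (a + b) \<le> weight \<sigma> x a * weight \<sigma> x b"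
  proof (cases "x = 1")
    case True
    define p where "p = CARD('n) + 1"
    have le: "1 + maxnorm (a + b) \<le> (1 + maxnorm a) * (1 + maxnorm b)"
    proof -
      have "0 \<le> maxnorm a * maxnorm b" using maxnorm_nonneg[of a] maxnorm_nonneg[of b] by simp
      moreover have "(1 + maxnorm a) * (1 + maxnorm b) = 1 + maxnorm a + maxnorm b + maxnorm a * maxnorm b"
        by (simp add: algebra_simps)
      ultimately show ?thesis using maxnorm_triangle[of a b] by linarith
    qed
    have "(1 + maxnorm (a + b)) ^ p \<le> ((1 + maxnorm a) * (1 + maxnorm b)) ^ p"
      by (rule power_mono[OF le]) (use maxnorm_nonneg[of "a+b"] in simp)
    then have P: "(1 + maxnorm (a + b)) ^ p \<le> (1 + maxnorm a) ^ p * (1 + maxnorm b) ^ p"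
      by (simp add: power_mult_distrib)
    have Ex: "exp (\<sigma> * maxnorm (a + b)) \<le> exp (\<sigma> * maxnorm a) * exp (\<sigma> * maxnorm b)"
      unfolding exp_add[symmetric] using maxnorm_triangle[of a b] \<sigma> by (simp add: distrib_left[symmetric] mult_left_mono)
    have "D * (1 + maxnorm (a + b)) ^ p * exp (\<sigma> * maxnorm (a + b))
        \<le> (D * D) * ((1 + maxnorm a) ^ p * (1 + maxnorm b) ^ p) * (exp (\<sigma> * maxnorm a) * exp (\<sigma> * maxnorm b))"
    proof -
      have nn: "0 \<le> D * D * ((1 + maxnorm a) ^ p * (1 + maxnorm b) ^ p)"
        using D1 maxnorm_nonneg[of a] maxnorm_nonneg[of b] by (intro mult_nonneg_nonneg) auto
      have DD: "D \<le> D * D" using D1 by (simp add: mult_le_cancel_left1)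
      show ?thesis by (intro mult_mono P Ex DD nn) (use D1 maxnorm_nonneg[of "a+b"] in auto)
    qed
    then show ?thesis using True by (simp add: weight_def D_def p_def ac_simps)
  next
    case False
    then have xc: "x = cc" using x by simp
    have Ex: "exp (\<sigma> * maxnorm (a + b) powr x) \<le> exp (\<sigma> * maxnorm a powr x) * exp (\<sigma> * maxnorm b powr x)"
      unfolding exp_add[symmetric] using maxnorm_powr_subadd[of x a b] cc_props \<sigma> xc
      by (simp add: distrib_left[symmetric] mult_left_mono)
    have "D * exp (\<sigma> * maxnorm (a + b) powr x) \<le> (D * D) * (exp (\<sigma> * maxnorm a powr x) * exp (\<sigma> * maxnorm b powr x))"
      by (intro mult_mono Ex) (use D1 in auto)
    then show ?thesis using False by (simp add: weight_def D_def ac_simps)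
  qed
qed

lemma weight0: "weight \<sigma> x (0 :: int^'n::finite) = DN TYPE('n)"
  by (simp add: weight_def)

definition omw :: "real \<Rightarrow> int^'n::finite \<Rightarrow> real" where
  "omw L m = DN TYPE('n) * exp (maxnorm m powr cc / 4 + 3 / 4 * L powr (cc - 1) * maxnorm m)"

lemma wsp_omw:
  assumes L: "0 < L"
  shows "wsp (omw L :: int^'n::finite \<Rightarrow> real)"
proof
  define D where "D = DN TYPE('n)"
  have D1: "1 \<le> D" unfolding D_def by (rule DN_ge1)
  have Lp: "0 < L powr (cc - 1)" using L by simp
  fix m a b :: "int^'n"
  have "0 \<le> maxnorm m powr cc / 4 + 3 / 4 * L powr (cc - 1) * maxnorm m"
    using Lp maxnorm_nonneg[of m] by simp
  then have "1 \<le> exp (maxnorm m powr cc / 4 + 3 / 4 * L powr (cc - 1) * maxnorm m)" by simp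
  then have "1 * 1 \<le> D * exp (maxnorm m powr cc / 4 + 3 / 4 * L powr (cc - 1) * maxnorm m)"
    using D1 by (intro mult_mono) auto
  then show "1 \<le> omw L m" by (simp add: omw_def D_def)
  have e1: "maxnorm (a + b) powr cc \<le> maxnorm a powr cc + maxnorm b powr cc"
    by (rule maxnorm_powr_subadd) (use cc_props in auto)
  have e2: "L powr (cc - 1) * maxnorm (a + b) \<le> L powr (cc - 1) * maxnorm a + L powr (cc - 1) * maxnorm b"
    using maxnorm_triangle[of a b] Lp by (simp add: distrib_left[symmetric])
  have Ex: "exp (maxnorm (a + b) powr cc / 4 + 3 / 4 * L powr (cc - 1) * maxnorm (a + b))
      \<le> exp (maxnorm a powr cc / 4 + 3 / 4 * L powr (cc - 1) * maxnorm a) * exp (maxnorm b powr cc / 4 + 3 / 4 * L powr (cc - 1) * maxnorm b)"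
    unfolding exp_add[symmetric] using e1 e2 by simp
  have DD: "D \<le> D * D" using D1 by (simp add: mult_le_cancel_left1)
  have "D * exp (maxnorm (a + b) powr cc / 4 + 3 / 4 * L powr (cc - 1) * maxnorm (a + b))
    \<le> (D * D) * (exp (maxnorm a powr cc / 4 + 3 / 4 * L powr (cc - 1) * maxnorm a) * exp (maxnorm b powr cc / 4 + 3 / 4 * L powr (cc - 1) * maxnorm b))"
    by (intro mult_mono DD Ex) (use D1 in auto)
  then show "omw L (a + b) \<le> omw L a * omw L b" by (simp add: omw_def D_def ac_simps)
qed

lemma omw_le_weight:
  fixes m :: "int^'n::finite"
  assumes L: "0 < L" and m: "maxnorm m \<le> L"
  shows "omw L m \<le> weight 1 cc m"
proof -
  define N where "N = maxnorm m"
  have N0: "0 \<le> N" by (simp add: N_def maxnorm_nonneg)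
  have key: "L powr (cc - 1) * N \<le> N powr cc"
  proof (cases "N = 0")
    case True then show ?thesis by simp
  next
    case False
    then have Np: "0 < N" using N0 by simp
    have "L powr (cc - 1) \<le> N powr (cc - 1)" by (rule powr_mono2') (use cc_props Np m in \<open>auto simp: N_def\<close>)
    then have "L powr (cc - 1) * N \<le> N powr (cc - 1) * N" using Np by simp
    also have "\<dots> = N powr cc" using Np by (simp add: powr_diff)
    finally show ?thesis .
  qed
  have "maxnorm m powr cc / 4 + 3 / 4 * L powr (cc - 1) * maxnorm m \<le> 1 * maxnorm m powr cc"
    using key unfolding N_def by simp
  then show ?thesis using cc_props DN_ge1[where 'n='n] by (simp add: omw_def weight_def)
qed

lemma weight_le_omw:
  fixes m :: "int^'n::finite"
  assumes L: "0 < L" and m: "3 * L \<le> maxnorm m"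
  shows "weight (1/4) cc m \<le> exp (- (9/4) * L powr cc) * omw L m"
proof -
  have "L powr (cc - 1) * (3 * L) \<le> L powr (cc - 1) * maxnorm m"
    using m L by (intro mult_left_mono) auto
  moreover have "L powr (cc - 1) * (3 * L) = 3 * L powr cc" using L by (simp add: powr_diff)
  ultimately have k0: "3 * L powr cc \<le> L powr (cc - 1) * maxnorm m" by linarith
  have "3/4 * (3 * L powr cc) \<le> 3/4 * (L powr (cc - 1) * maxnorm m)" using k0 by (rule mult_left_mono) simp
  then have k: "9 / 4 * L powr cc \<le> 3 / 4 * L powr (cc - 1) * maxnorm m" by (simp add: mult.assoc)
  have "1/4 * maxnorm m powr cc \<le> - (9/4) * L powr cc + (maxnorm m powr cc / 4 + 3 / 4 * L powr (cc - 1) * maxnorm m)"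
    using k by simp
  then have "exp (1/4 * maxnorm m powr cc) \<le> exp (- (9/4) * L powr cc) * exp (maxnorm m powr cc / 4 + 3 / 4 * L powr (cc - 1) * maxnorm m)"
    unfolding exp_add[symmetric] by simp
  then show ?thesis using cc_props DN_ge1[where 'n='n]
    by (simp add: omw_def weight_def ac_simps)
qed

lemma rho0_props:
  fixes \<alpha> :: "nat \<Rightarrow> real"
  assumes r: "conv_radius \<alpha> > 0"
  defines "\<rho>0 \<equiv> real_of_ereal (min 1 (conv_radius \<alpha>)) / 2"
  shows "0 < \<rho>0" "\<rho>0 \<le> 1/2" "ereal \<rho>0 < conv_radius \<alpha>"
proof -
  have "0 < \<rho>0 \<and> \<rho>0 \<le> 1/2 \<and> ereal \<rho>0 < conv_radius \<alpha>"
  proof (cases "conv_radius \<alpha> \<ge> 1")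
    case True
    then have "min 1 (conv_radius \<alpha>) = 1" by simp
    then have "\<rho>0 = 1/2" by (simp add: \<rho>0_def)
    moreover have "ereal (1/2) < conv_radius \<alpha>"
    proof -
      have "ereal (1/2) < 1" by (simp add: one_ereal_def)
      then show ?thesis using True by (rule order.strict_trans2)
    qed
    ultimately show ?thesis by (simp only:) simp
  next
    case False
    then obtain R where R: "conv_radius \<alpha> = ereal R" "0 < R" "R < 1" using r
      by (cases "conv_radius \<alpha>") auto
    then have "\<rho>0 = R / 2" by (simp add: \<rho>0_def min_def)
    then show ?thesis using R by simp
  qed
  then show "0 < \<rho>0" "\<rho>0 \<le> 1/2" "ereal \<rho>0 < conv_radius \<alpha>" by auto
qed

lemma A0_bound:
  fixes \<alpha> :: "nat \<Rightarrow> real"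
  assumes p: "0 < \<rho>0" "ereal \<rho>0 < conv_radius \<alpha>" and a: "0 \<le> a" "a \<le> \<rho>0"
  shows "summable (\<lambda>k. if 2 \<le> k then \<bar>\<alpha> k\<bar> * \<rho>0 ^ (k - 2) else 0)"
    and "(\<Sum>k. if 2 \<le> k then \<bar>\<alpha> k\<bar> * a ^ k else 0) \<le> a ^ 2 * (\<Sum>k. if 2 \<le> k then \<bar>\<alpha> k\<bar> * \<rho>0 ^ (k - 2) else 0)"
proof -
  have sr: "summable (\<lambda>k. \<bar>\<alpha> k\<bar> * \<rho>0 ^ k)" by (rule alpha_summable) (use p in auto)
  show s0: "summable (\<lambda>k. if 2 \<le> k then \<bar>\<alpha> k\<bar> * \<rho>0 ^ (k - 2) else 0)"
  proof (rule summable_comparison_test'[OF summable_divide[OF sr, of "\<rho>0 ^ 2"], where N=0])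
    fix k :: nat
    show "norm (if 2 \<le> k then \<bar>\<alpha> k\<bar> * \<rho>0 ^ (k - 2) else 0) \<le> \<bar>\<alpha> k\<bar> * \<rho>0 ^ k / \<rho>0 ^ 2"
      using p by (auto simp: power_diff)
  qed
  have sa: "summable (\<lambda>k. if 2 \<le> k then \<bar>\<alpha> k\<bar> * a ^ k else 0)"
  proof (rule summable_comparison_test'[OF sr, where N=0])
    fix k :: nat
    show "norm (if 2 \<le> k then \<bar>\<alpha> k\<bar> * a ^ k else 0) \<le> \<bar>\<alpha> k\<bar> * \<rho>0 ^ k"
      using a by (auto intro!: mult_left_mono power_mono)
  qed
  have "(\<Sum>k. if 2 \<le> k then \<bar>\<alpha> k\<bar> * a ^ k else 0) \<le> (\<Sum>k. a ^ 2 * (if 2 \<le> k then \<bar>\<alpha> k\<bar> * \<rho>0 ^ (k - 2) else 0))"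
  proof (rule suminf_le[OF _ sa summable_mult[OF s0]])
    fix k :: nat
    show "(if 2 \<le> k then \<bar>\<alpha> k\<bar> * a ^ k else 0) \<le> a ^ 2 * (if 2 \<le> k then \<bar>\<alpha> k\<bar> * \<rho>0 ^ (k - 2) else 0)"
    proof (cases "2 \<le> k")
      case True
      have "a ^ k = a ^ 2 * a ^ (k - 2)" by (metis True le_add_diff_inverse power_add)
      also have "\<dots> \<le> a ^ 2 * \<rho>0 ^ (k - 2)" using a by (intro mult_left_mono power_mono) auto
      finally have "\<bar>\<alpha> k\<bar> * a ^ k \<le> \<bar>\<alpha> k\<bar> * (a ^ 2 * \<rho>0 ^ (k - 2))" by (rule mult_left_mono) simp
      then show ?thesis using True by (simp add: ac_simps)
    qed simp
  qed
  also have "\<dots> = a ^ 2 * (\<Sum>k. if 2 \<le> k then \<bar>\<alpha> k\<bar> * \<rho>0 ^ (k - 2) else 0)" by (rule suminf_mult[OF s0])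
  finally show "(\<Sum>k. if 2 \<le> k then \<bar>\<alpha> k\<bar> * a ^ k else 0) \<le> a ^ 2 * (\<Sum>k. if 2 \<le> k then \<bar>\<alpha> k\<bar> * \<rho>0 ^ (k - 2) else 0)" .
qed

lemma pow_km: "2 \<le> k \<Longrightarrow> (x::real) ^ (k - 1) = x * x ^ (k - 2)"
proof -
  assume "2 \<le> k"
  then obtain k' where k: "k = k' + 2" by (metis add.commute le_Suc_ex)
  show ?thesis unfolding k by simp
qed

lemma A1_bound:
  fixes \<alpha> :: "nat \<Rightarrow> real"
  assumes p: "0 < \<rho>0" "ereal \<rho>0 < conv_radius \<alpha>" and a: "0 \<le> a" "a \<le> \<rho>0"
  shows "summable (\<lambda>k. cmod (gam \<alpha> 1 k) * \<rho>0 ^ (k - 2))"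
    and "(\<Sum>k. cmod (gam \<alpha> 1 k) * a ^ (k - 1)) \<le> a * (\<Sum>k. cmod (gam \<alpha> 1 k) * \<rho>0 ^ (k - 2))"
proof -
  have g0: "k < 2 \<Longrightarrow> gam \<alpha> 1 k = 0" for k by (simp add: gam_def)
  have sr: "summable (\<lambda>k. cmod (gam \<alpha> 1 k) * \<rho>0 ^ (k - 1))" by (rule coef_summable[OF _ p(2)]) (use p(1) in simp)
  show s0: "summable (\<lambda>k. cmod (gam \<alpha> 1 k) * \<rho>0 ^ (k - 2))"
  proof (rule summable_comparison_test'[OF summable_divide[OF sr, of "\<rho>0"], where N=0])
    fix k :: nat
    show "norm (cmod (gam \<alpha> 1 k) * \<rho>0 ^ (k - 2)) \<le> cmod (gam \<alpha> 1 k) * \<rho>0 ^ (k - 1) / \<rho>0"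
    proof (cases "2 \<le> k")
      case True
      then have "\<rho>0 ^ (k - 1) = \<rho>0 * \<rho>0 ^ (k - 2)" by (rule pow_km)
      then show ?thesis using p by simp
    qed (use g0 in simp)
  qed
  have ar: "ereal a < conv_radius \<alpha>" using a(2) p(2) by (meson ereal_less_eq(3) order.strict_trans1)
  have sa: "summable (\<lambda>k. cmod (gam \<alpha> 1 k) * a ^ (k - 1))" by (rule coef_summable[OF a(1) ar])
  have "(\<Sum>k. cmod (gam \<alpha> 1 k) * a ^ (k - 1)) \<le> (\<Sum>k. a * (cmod (gam \<alpha> 1 k) * \<rho>0 ^ (k - 2)))"
  proof (rule suminf_le[OF _ sa summable_mult[OF s0]])
    fix k :: nat
    show "cmod (gam \<alpha> 1 k) * a ^ (k - 1) \<le> a * (cmod (gam \<alpha> 1 k) * \<rho>0 ^ (k - 2))"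
    proof (cases "2 \<le> k")
      case True
      then have "a ^ (k - 1) = a * a ^ (k - 2)" by (rule pow_km)
      also have "\<dots> \<le> a * \<rho>0 ^ (k - 2)" using a by (intro mult_left_mono power_mono) auto
      finally have "cmod (gam \<alpha> 1 k) * a ^ (k - 1) \<le> cmod (gam \<alpha> 1 k) * (a * \<rho>0 ^ (k - 2))" by (rule mult_left_mono) simp
      then show ?thesis by (simp add: ac_simps)
    qed (use g0 in simp)
  qed
  also have "\<dots> = a * (\<Sum>k. cmod (gam \<alpha> 1 k) * \<rho>0 ^ (k - 2))" by (rule suminf_mult[OF s0])
  finally show "(\<Sum>k. cmod (gam \<alpha> 1 k) * a ^ (k - 1)) \<le> a * (\<Sum>k. cmod (gam \<alpha> 1 k) * \<rho>0 ^ (k - 2))" .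
qed

lemma T_bound:
  fixes \<alpha> :: "nat \<Rightarrow> real"
  assumes p: "0 < \<rho>0" "ereal \<rho>0 < conv_radius \<alpha>" and a: "0 \<le> a" "a \<le> \<rho>0"
  shows "(\<Sum>k. cmod (gam \<alpha> j k) * a ^ (k - j)) \<le> (\<Sum>k. cmod (gam \<alpha> j k) * \<rho>0 ^ (k - j))"
    and "0 \<le> (\<Sum>k. cmod (gam \<alpha> j k) * \<rho>0 ^ (k - j))"
proof -
  have s0: "summable (\<lambda>k. cmod (gam \<alpha> j k) * \<rho>0 ^ (k - j))" by (rule coef_summable[OF _ p(2)]) (use p(1) in simp)
  have ar: "ereal a < conv_radius \<alpha>" using a(2) p(2) by (meson ereal_less_eq(3) order.strict_trans1)
  have sa: "summable (\<lambda>k. cmod (gam \<alpha> j k) * a ^ (k - j))" by (rule coef_summable[OF a(1) ar])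
  show "(\<Sum>k. cmod (gam \<alpha> j k) * a ^ (k - j)) \<le> (\<Sum>k. cmod (gam \<alpha> j k) * \<rho>0 ^ (k - j))"
    by (rule suminf_le[OF _ sa s0]) (use a in \<open>auto intro!: mult_left_mono power_mono\<close>)
  show "0 \<le> (\<Sum>k. cmod (gam \<alpha> j k) * \<rho>0 ^ (k - j))" by (rule suminf_nonneg[OF s0]) (use p in auto)
qed

lemma sconv_shift: "sconv u (\<lambda>k. v (k - n)) m = sconv u v (m - n)"
  unfolding sconv_def
  by (rule infsum_reindex_bij_witness[of _ "\<lambda>k. k + n" "\<lambda>k. k - n"]) (auto simp: algebra_simps)

lemma conv_list_shift: "conv_list (ys @ [\<lambda>k. z (k - n)]) = (\<lambda>m. conv_list (ys @ [z]) (m - n))"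
proof (induction ys)
  case Nil then show ?case by (simp add: conv_list_def delta0_conv)
next
  case (Cons y ys)
  have "conv_list ((y # ys) @ [\<lambda>k. z (k - n)]) = sconv y (conv_list (ys @ [\<lambda>k. z (k - n)]))"
    by (simp add: conv_list_def)
  also have "\<dots> = sconv y (\<lambda>m. conv_list (ys @ [z]) (m - n))" by (simp add: Cons)
  also have "\<dots> = (\<lambda>m. sconv y (conv_list (ys @ [z])) (m - n))" by (rule ext, rule sconv_shift)
  finally show ?case by (simp add: conv_list_def)
qed

lemma matrix_Wder:
  fixes u :: "'n::finite seq"
  shows "matrix_of (\<lambda>y. Wder \<alpha> j u (ys @ [y])) = (\<lambda>m n. Wder \<alpha> j u (ys @ [delta0]) (m - n))"
proof (intro ext)
  fix m n :: "int^'n::finite"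
  have e: "(\<lambda>k. if k = n then 1 else 0) = (\<lambda>k. (delta0 :: 'n seq) (k - n))"
    by (auto simp: delta0_def)
  show "matrix_of (\<lambda>y. Wder \<alpha> j u (ys @ [y])) m n = Wder \<alpha> j u (ys @ [delta0]) (m - n)"
    unfolding matrix_of_def e Wder_def conv_list_shift sconv_shift ..
qed

lemma matnorm_shift:
  assumes "inX \<sigma> x V"
  shows "matnorm \<sigma> x (\<lambda>m n. V (m - n)) = ereal (normX \<sigma> x V)"
proof -
  have "colsum \<sigma> x (\<lambda>m n. V (m - n)) n = ereal (normX \<sigma> x V)" for n
  proof -
    have s: "(\<lambda>m. weight \<sigma> x (m - n) * cmod (V (m - n))) summable_on UNIV"
      using assms summable_shift[of "\<lambda>k. weight \<sigma> x k * cmod (V k)" n] by (simp add: inX_def)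
    have i: "infsum (\<lambda>m. weight \<sigma> x (m - n) * cmod (V (m - n))) UNIV = normX \<sigma> x V"
      unfolding normX_def by (rule infsum_shift[of "\<lambda>k. weight \<sigma> x k * cmod (V k)"])
    show ?thesis unfolding colsum_def using s i by simp
  qed
  then show ?thesis unfolding matnorm_def by simp
qed

lemma PL_delta0:
  fixes ys :: "'n::finite seq list"
  shows "PL (ys @ [delta0]) = PL ys"
proof -
  have "abs1 (delta0 :: 'n seq) = 1" by (metis rep_inverse rep_one)
  then show ?thesis by (simp add: PL_def)
qed

context wsp begin

lemma inW_delta0': "inW delta0" by (rule inW_delta0)

lemma Wder_delta0_bound:
  assumes u: "inW u" and r: "ereal (nW u) < conv_radius \<alpha>" and ys: "\<forall>y\<in>set ys. inW y"
  shows "inW (Wder \<alpha> j u (ys @ [delta0])) \<and> nW (Wder \<alpha> j u (ys @ [delta0])) \<le> (\<Sum>k. cmod (gam \<alpha> j k) * nW u ^ (k - j)) * NN (PL ys)"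
proof -
  have ys': "\<forall>y\<in>set (ys @ [delta0]). inW y" using ys inW_delta0 by auto
  show ?thesis using Wder_bound[OF u r ys', of j] unfolding PL_delta0 by blast
qed

end

theorem lemma14:
  fixes \<alpha> :: "nat \<Rightarrow> real"
  assumes "conv_radius \<alpha> > 0"
  shows "\<exists>DW>0.
    (\<forall>x\<in>{cc, 1}. \<forall>\<sigma>\<ge>1/4.
       (\<forall>u\<in>(ballX \<sigma> x (conv_radius \<alpha>) :: 'n::finite seq set). inX \<sigma> x (Wmap \<alpha> u)) \<and>
       X_analytic_on \<sigma> x (ballX \<sigma> x (conv_radius \<alpha>) :: 'n seq set) (Wmap \<alpha>) \<and>
       X_higher_derivs \<sigma> x (ballX \<sigma> x (conv_radius \<alpha>) :: 'n seq set) (Wmap \<alpha>) (Wder \<alpha>) \<and>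
       (\<forall>u::'n seq. inX \<sigma> x u \<and> normX \<sigma> x u \<le> real_of_ereal (min 1 (conv_radius \<alpha>)) / 2 \<longrightarrow>
          normX \<sigma> x (Wmap \<alpha> u) \<le> DW * (normX \<sigma> x u)\<^sup>2 \<and>
          matnorm \<sigma> x (matrix_of (\<lambda>y. Wder \<alpha> 1 u [y])) \<le> ereal (DW * normX \<sigma> x u) \<and>
          (\<forall>j ys. 2 \<le> j \<and> j \<le> 22 * CARD('n) ^ 3 + 1 \<and> length ys = j - 1 \<and>
               (\<forall>y\<in>set ys. inX \<sigma> x y) \<longrightarrow>
             matnorm \<sigma> x (matrix_of (\<lambda>y. Wder \<alpha> j u (ys @ [y])))
               \<le> ereal (DW * (\<Prod>y\<leftarrow>ys. normX \<sigma> x y))))) \<and>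
    (\<forall>L>0. \<forall>u::'n seq. inX 1 cc u \<and> normX 1 cc u \<le> real_of_ereal (min 1 (conv_radius \<alpha>)) / 2 \<and>
        (\<forall>m. maxnorm m \<ge> L \<longrightarrow> u m = 0) \<longrightarrow>
       inX (1/4) cc (\<lambda>m. if maxnorm m \<ge> 3 * L then Wmap \<alpha> u m else 0) \<and>
       normX (1/4) cc (\<lambda>m. if maxnorm m \<ge> 3 * L then Wmap \<alpha> u m else 0)
         \<le> DW * exp (- (9/4) * L powr cc) * (normX 1 cc u)\<^sup>2)"
proof -
  define \<rho>0 where "\<rho>0 = real_of_ereal (min 1 (conv_radius \<alpha>)) / 2"
  have p0: "0 < \<rho>0" "ereal \<rho>0 < conv_radius \<alpha>" using rho0_props[OF assms] by (simp_all add: \<rho>0_def)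
  have p0le: "0 \<le> \<rho>0" using p0 by simp
  define J0 where "J0 = 22 * CARD('n) ^ 3 + 1"
  define A0 where "A0 = (\<Sum>k. if 2 \<le> k then \<bar>\<alpha> k\<bar> * \<rho>0 ^ (k - 2) else 0)"
  define A1 where "A1 = (\<Sum>k. cmod (gam \<alpha> 1 k) * \<rho>0 ^ (k - 2))"
  define T where "T = (\<lambda>j. \<Sum>k. cmod (gam \<alpha> j k) * \<rho>0 ^ (k - j))"
  define D where "D = DN TYPE('n)"
  define DW where "DW = 1 + A0 + D * A1 + D * (\<Sum>j\<le>J0. T j)"
  have D1: "1 \<le> D" unfolding D_def by (rule DN_ge1)
  have A0n: "0 \<le> A0" unfolding A0_def
    by (rule suminf_nonneg[OF A0_bound(1)[OF p0 p0le order.refl]]) (use p0 in auto)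
  have A1n: "0 \<le> A1" unfolding A1_def
    by (rule suminf_nonneg[OF A1_bound(1)[OF p0 p0le order.refl]]) (use p0 in auto)
  have Tn: "0 \<le> T j" for j unfolding T_def using T_bound(2)[OF p0 p0le order.refl] p0 by auto
  have sumT: "0 \<le> (\<Sum>j\<le>J0. T j)" by (intro sum_nonneg Tn)
  have DA1: "0 \<le> D * A1" using D1 A1n by simp
  have DsT: "0 \<le> D * (\<Sum>j\<le>J0. T j)" using D1 sumT by simp
  have DW_A0: "A0 \<le> DW" unfolding DW_def using DA1 DsT by linarith
  have DW_A1: "D * A1 \<le> DW" unfolding DW_def using A0n DsT by linarith
  have DW_T: "D * T j \<le> DW" if "j \<le> J0" for j
  proof -
    have "T j \<le> (\<Sum>j\<le>J0. T j)" by (rule member_le_sum) (use that Tn in auto)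
    then have h: "D * T j \<le> D * (\<Sum>j\<le>J0. T j)" using D1 by (intro mult_left_mono) auto
    moreover have "0 \<le> D * A1" using D1 A1n by simp
    ultimately show ?thesis unfolding DW_def using A0n by linarith
  qed
  have DW0: "0 < DW" unfolding DW_def using A0n DA1 DsT by linarith
  have partB: "\<forall>x\<in>{cc, 1}. \<forall>\<sigma>\<ge>1/4.
       (\<forall>u\<in>(ballX \<sigma> x (conv_radius \<alpha>) :: 'n::finite seq set). inX \<sigma> x (Wmap \<alpha> u)) \<and>
       X_analytic_on \<sigma> x (ballX \<sigma> x (conv_radius \<alpha>) :: 'n seq set) (Wmap \<alpha>) \<and>
       X_higher_derivs \<sigma> x (ballX \<sigma> x (conv_radius \<alpha>) :: 'n seq set) (Wmap \<alpha>) (Wder \<alpha>) \<and>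
       (\<forall>u::'n seq. inX \<sigma> x u \<and> normX \<sigma> x u \<le> \<rho>0 \<longrightarrow>
          normX \<sigma> x (Wmap \<alpha> u) \<le> DW * (normX \<sigma> x u)\<^sup>2 \<and>
          matnorm \<sigma> x (matrix_of (\<lambda>y. Wder \<alpha> 1 u [y])) \<le> ereal (DW * normX \<sigma> x u) \<and>
          (\<forall>j ys. 2 \<le> j \<and> j \<le> 22 * CARD('n) ^ 3 + 1 \<and> length ys = j - 1 \<and>
               (\<forall>y\<in>set ys. inX \<sigma> x y) \<longrightarrow>
             matnorm \<sigma> x (matrix_of (\<lambda>y. Wder \<alpha> j u (ys @ [y])))
               \<le> ereal (DW * (\<Prod>y\<leftarrow>ys. normX \<sigma> x y))))"
  proof (intro ballI allI impI)
    fix x \<sigma> :: real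
    assume x: "x \<in> {cc, 1}" and \<sigma>: "\<sigma> \<ge> 1/4"
    interpret W: wsp "weight \<sigma> x :: int^'n \<Rightarrow> real" by (rule wsp_weight) (use x \<sigma> in auto)
    have inX_eq: "inX \<sigma> x = W.inW" by (simp add: fun_eq_iff inX_def W.inW_def)
    have nX_eq: "normX \<sigma> x = W.nW" by (simp add: fun_eq_iff normX_def W.nW_def)
    have ball_eq: "ballX \<sigma> x R = W.ballW R" for R by (simp add: ballX_def W.ballW_def inX_eq nX_eq)
    have bml_eq: "bml \<sigma> x = W.bmlW" by (simp add: fun_eq_iff bml_def W.bmlW_def inX_eq nX_eq)
    have w0: "weight \<sigma> x (0::int^'n) = D" by (simp add: weight0 D_def)
    show "(\<forall>u\<in>(ballX \<sigma> x (conv_radius \<alpha>) :: 'n::finite seq set). inX \<sigma> x (Wmap \<alpha> u)) \<and>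
       X_analytic_on \<sigma> x (ballX \<sigma> x (conv_radius \<alpha>) :: 'n seq set) (Wmap \<alpha>) \<and>
       X_higher_derivs \<sigma> x (ballX \<sigma> x (conv_radius \<alpha>) :: 'n seq set) (Wmap \<alpha>) (Wder \<alpha>) \<and>
       (\<forall>u::'n seq. inX \<sigma> x u \<and> normX \<sigma> x u \<le> \<rho>0 \<longrightarrow>
          normX \<sigma> x (Wmap \<alpha> u) \<le> DW * (normX \<sigma> x u)\<^sup>2 \<and>
          matnorm \<sigma> x (matrix_of (\<lambda>y. Wder \<alpha> 1 u [y])) \<le> ereal (DW * normX \<sigma> x u) \<and>
          (\<forall>j ys. 2 \<le> j \<and> j \<le> 22 * CARD('n) ^ 3 + 1 \<and> length ys = j - 1 \<and>
               (\<forall>y\<in>set ys. inX \<sigma> x y) \<longrightarrow>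
             matnorm \<sigma> x (matrix_of (\<lambda>y. Wder \<alpha> j u (ys @ [y])))
               \<le> ereal (DW * (\<Prod>y\<leftarrow>ys. normX \<sigma> x y))))"
    proof (intro conjI)
      show "\<forall>u\<in>(ballX \<sigma> x (conv_radius \<alpha>) :: 'n::finite seq set). inX \<sigma> x (Wmap \<alpha> u)"
        unfolding ball_eq inX_eq W.ballW_def using W.Wmap_bound by blast
      show "X_analytic_on \<sigma> x (ballX \<sigma> x (conv_radius \<alpha>) :: 'n seq set) (Wmap \<alpha>)"
        unfolding X_analytic_on_def ball_eq bml_eq inX_eq nX_eq
      proof
        fix u assume "u \<in> W.ballW (conv_radius \<alpha>)"
        then have u: "W.inW u" "ereal (W.nW u) < conv_radius \<alpha>" by (auto simp: W.ballW_def)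
        show "\<exists>\<rho>>0. \<exists>P C.
            (\<forall>h. W.inW h \<and> W.nW h < \<rho> \<longrightarrow> (\<lambda>m. u m + h m) \<in> W.ballW (conv_radius \<alpha>)) \<and>
            (\<forall>j. W.bmlW j (P j) (C j)) \<and> summable (\<lambda>j. C j * \<rho> ^ j) \<and>
            (\<forall>h. W.inW h \<and> W.nW h < \<rho> \<longrightarrow>
               W.inW (Wmap \<alpha> (\<lambda>k. u k + h k)) \<and>
               (\<lambda>n. W.nW (\<lambda>m. Wmap \<alpha> (\<lambda>k. u k + h k) m - (\<Sum>j<n. P j (replicate j h) m))) \<longlonglongrightarrow> 0)"
          by (rule W.W_analytic[OF u])
      qed
      show "X_higher_derivs \<sigma> x (ballX \<sigma> x (conv_radius \<alpha>) :: 'n seq set) (Wmap \<alpha>) (Wder \<alpha>)"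
        unfolding X_higher_derivs_def ball_eq bml_eq inX_eq nX_eq
      proof (intro conjI allI ballI impI)
        fix u assume "u \<in> W.ballW (conv_radius \<alpha>)"
        show "Wder \<alpha> 0 u [] = Wmap \<alpha> u" by (rule Wder0)
      next
        fix j u assume "u \<in> W.ballW (conv_radius \<alpha>)"
        then have u: "W.inW u" "ereal (W.nW u) < conv_radius \<alpha>" by (auto simp: W.ballW_def)
        show "\<exists>C. W.bmlW j (Wder \<alpha> j u) C" using W.Wder_bml[OF u] by blast
      next
        fix j u and \<epsilon> :: real assume "u \<in> W.ballW (conv_radius \<alpha>)" and e: "\<epsilon> > 0"
        then have u: "W.inW u" "ereal (W.nW u) < conv_radius \<alpha>" by (auto simp: W.ballW_def)
        obtain \<delta> where d: "\<delta> > 0" and H: "\<forall>h. W.inW h \<and> W.nW h < \<delta> \<and> ereal (W.nW (\<lambda>k. u k + h k)) < conv_radius \<alpha> \<longrightarrow>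
            (\<forall>ys. length ys = j \<and> (\<forall>y\<in>set ys. W.inW y) \<longrightarrow>
               W.nW (\<lambda>m. Wder \<alpha> j (\<lambda>k. u k + h k) ys m - Wder \<alpha> j u ys m - Wder \<alpha> (Suc j) u (ys @ [h]) m)
                 \<le> \<epsilon> * W.nW h * (\<Prod>y\<leftarrow>ys. W.nW y))"
          using W.Wder_rem[OF u e, of j] by blast
        show "\<exists>\<delta>>0. \<forall>h. W.inW h \<and> W.nW h < \<delta> \<and> (\<lambda>m. u m + h m) \<in> W.ballW (conv_radius \<alpha>) \<longrightarrow>
            (\<forall>ys. length ys = j \<and> (\<forall>y\<in>set ys. W.inW y) \<longrightarrow>
               W.nW (\<lambda>m. Wder \<alpha> j (\<lambda>k. u k + h k) ys m - Wder \<alpha> j u ys m - Wder \<alpha> (Suc j) u (ys @ [h]) m)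
                 \<le> \<epsilon> * W.nW h * (\<Prod>y\<leftarrow>ys. W.nW y))"
          using d H by (auto simp: W.ballW_def)
      qed
      show "\<forall>u::'n seq. inX \<sigma> x u \<and> normX \<sigma> x u \<le> \<rho>0 \<longrightarrow>
          normX \<sigma> x (Wmap \<alpha> u) \<le> DW * (normX \<sigma> x u)\<^sup>2 \<and>
          matnorm \<sigma> x (matrix_of (\<lambda>y. Wder \<alpha> 1 u [y])) \<le> ereal (DW * normX \<sigma> x u) \<and>
          (\<forall>j ys. 2 \<le> j \<and> j \<le> 22 * CARD('n) ^ 3 + 1 \<and> length ys = j - 1 \<and>
               (\<forall>y\<in>set ys. inX \<sigma> x y) \<longrightarrow>
             matnorm \<sigma> x (matrix_of (\<lambda>y. Wder \<alpha> j u (ys @ [y])))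
               \<le> ereal (DW * (\<Prod>y\<leftarrow>ys. normX \<sigma> x y)))"
      proof (intro allI impI conjI)
        fix u :: "'n seq"
        assume uu: "inX \<sigma> x u \<and> normX \<sigma> x u \<le> \<rho>0"
        define a where "a = W.nW u"
        have u: "W.inW u" and a1: "a \<le> \<rho>0" using uu by (auto simp: inX_eq nX_eq a_def)
        have a0: "0 \<le> a" by (simp add: a_def W.nW_nonneg)
        have ar: "ereal (W.nW u) < conv_radius \<alpha>"
          using a1 p0(2) unfolding a_def by (meson ereal_less_eq(3) order.strict_trans1)
        have "W.nW (Wmap \<alpha> u) \<le> (\<Sum>k. if 2 \<le> k then \<bar>\<alpha> k\<bar> * a ^ k else 0)"
          using W.Wmap_bound[OF u ar] unfolding a_def by blast
        also have "\<dots> \<le> a ^ 2 * A0" unfolding A0_def by (rule A0_bound(2)[OF p0 a0 a1])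
        also have "\<dots> \<le> DW * a ^ 2" using DW_A0 by (simp add: mult.commute mult_right_mono)
        finally show "normX \<sigma> x (Wmap \<alpha> u) \<le> DW * (normX \<sigma> x u)\<^sup>2" by (simp add: nX_eq a_def)
        have e1: "(\<lambda>y. Wder \<alpha> 1 u [y]) = (\<lambda>y. Wder \<alpha> 1 u ([] @ [y]))" by simp
        have V1: "W.inW (Wder \<alpha> 1 u ([] @ [delta0])) \<and> W.nW (Wder \<alpha> 1 u ([] @ [delta0])) \<le> (\<Sum>k. cmod (gam \<alpha> 1 k) * W.nW u ^ (k - 1)) * W.NN (PL [])"
          by (rule W.Wder_delta0_bound[OF u ar]) simp
        have "W.NN (PL []) = D" by (simp add: PL_def W.NN_1 w0)
        then have "W.nW (Wder \<alpha> 1 u ([] @ [delta0])) \<le> (a * A1) * D"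
          using V1 A1_bound(2)[OF p0 a0 a1] D1 unfolding a_def A1_def
          by (meson mult_right_mono order_trans zero_le_one le_less_trans less_imp_le)
        also have "\<dots> \<le> DW * a"
        proof -
          have "(D * A1) * a \<le> DW * a" by (rule mult_right_mono[OF DW_A1 a0])
          then show ?thesis by (simp add: ac_simps)
        qed
        finally have V1b: "W.nW (Wder \<alpha> 1 u ([] @ [delta0])) \<le> DW * a" .
        show "matnorm \<sigma> x (matrix_of (\<lambda>y. Wder \<alpha> 1 u [y])) \<le> ereal (DW * normX \<sigma> x u)"
          unfolding e1 matrix_Wder using matnorm_shift[of \<sigma> x "Wder \<alpha> 1 u ([] @ [delta0])"] V1 V1b
          by (simp add: inX_eq nX_eq a_def)
      next
        fix u :: "'n seq" and j and ys :: "'n seq list"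
        assume uu: "inX \<sigma> x u \<and> normX \<sigma> x u \<le> \<rho>0"
        assume jj: "2 \<le> j \<and> j \<le> 22 * CARD('n) ^ 3 + 1 \<and> length ys = j - 1 \<and> (\<forall>y\<in>set ys. inX \<sigma> x y)"
        define a where "a = W.nW u"
        have u: "W.inW u" and a1: "a \<le> \<rho>0" using uu by (auto simp: inX_eq nX_eq a_def)
        have a0: "0 \<le> a" by (simp add: a_def W.nW_nonneg)
        have ar: "ereal (W.nW u) < conv_radius \<alpha>"
          using a1 p0(2) unfolding a_def by (meson ereal_less_eq(3) order.strict_trans1)
        have ys: "\<forall>y\<in>set ys. W.inW y" using jj by (simp add: inX_eq)
        have V: "W.inW (Wder \<alpha> j u (ys @ [delta0])) \<and> W.nW (Wder \<alpha> j u (ys @ [delta0])) \<le> (\<Sum>k. cmod (gam \<alpha> j k) * W.nW u ^ (k - j)) * W.NN (PL ys)"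
          by (rule W.Wder_delta0_bound[OF u ar ys])
        have PLb: "W.NN (PL ys) \<le> D * (\<Prod>y\<leftarrow>ys. W.nW y)" using W.PL_bound[OF ys] w0 by simp
        have Tb: "(\<Sum>k. cmod (gam \<alpha> j k) * W.nW u ^ (k - j)) \<le> T j"
          unfolding T_def a_def[symmetric] by (rule T_bound(1)[OF p0 a0 a1])
        have cs0: "0 \<le> (\<Sum>k. cmod (gam \<alpha> j k) * W.nW u ^ (k - j))"
          by (rule suminf_nonneg[OF coef_summable]) (use ar W.nW_nonneg in auto)
        have "W.nW (Wder \<alpha> j u (ys @ [delta0])) \<le> T j * (D * (\<Prod>y\<leftarrow>ys. W.nW y))"
          using V PLb Tb cs0 W.NN_nonneg by (meson mult_mono order_trans)
        also have "\<dots> = (D * T j) * (\<Prod>y\<leftarrow>ys. W.nW y)" by simp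
        also have "\<dots> \<le> DW * (\<Prod>y\<leftarrow>ys. W.nW y)"
          by (rule mult_right_mono[OF DW_T W.prod_nW_nonneg]) (use jj in \<open>simp add: J0_def\<close>)
        finally have Vb: "W.nW (Wder \<alpha> j u (ys @ [delta0])) \<le> DW * (\<Prod>y\<leftarrow>ys. W.nW y)" .
        show "matnorm \<sigma> x (matrix_of (\<lambda>y. Wder \<alpha> j u (ys @ [y]))) \<le> ereal (DW * (\<Prod>y\<leftarrow>ys. normX \<sigma> x y))"
          unfolding matrix_Wder using matnorm_shift[of \<sigma> x "Wder \<alpha> j u (ys @ [delta0])"] V Vb
          by (simp add: inX_eq nX_eq)
      qed
    qed
  qed
  have partC: "\<forall>L>0. \<forall>u::'n seq. inX 1 cc u \<and> normX 1 cc u \<le> \<rho>0 \<and>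
        (\<forall>m. maxnorm m \<ge> L \<longrightarrow> u m = 0) \<longrightarrow>
       inX (1/4) cc (\<lambda>m. if maxnorm m \<ge> 3 * L then Wmap \<alpha> u m else 0) \<and>
       normX (1/4) cc (\<lambda>m. if maxnorm m \<ge> 3 * L then Wmap \<alpha> u m else 0)
         \<le> DW * exp (- (9/4) * L powr cc) * (normX 1 cc u)\<^sup>2"
  proof (intro allI impI)
    fix L :: real and u :: "'n seq"
    assume L: "L > 0"
    assume uu: "inX 1 cc u \<and> normX 1 cc u \<le> \<rho>0 \<and> (\<forall>m. maxnorm m \<ge> L \<longrightarrow> u m = 0)"
    interpret O: wsp "omw L :: int^'n \<Rightarrow> real" by (rule wsp_omw[OF L])
    have pw: "omw L m * cmod (u m) \<le> weight 1 cc m * cmod (u m)" for m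
    proof (cases "maxnorm m \<ge> L")
      case True then show ?thesis using uu by simp
    next
      case False
      then show ?thesis using omw_le_weight[OF L, of m] by (intro mult_right_mono) auto
    qed
    have us: "(\<lambda>m. weight 1 cc m * cmod (u m)) summable_on UNIV" using uu by (simp add: inX_def)
    have uO: "O.inW u" unfolding O.inW_def
      by (rule summable_on_comparison_test[OF us]) (use pw O.wt_nonneg in auto)
    have nO: "O.nW u \<le> normX 1 cc u" unfolding O.nW_def normX_def
      by (rule infsum_mono[OF uO[unfolded O.inW_def] us]) (use pw in auto)
    define a where "a = normX 1 cc u"
    define a' where "a' = O.nW u"
    have a'0: "0 \<le> a'" by (simp add: a'_def O.nW_nonneg)
    have aa: "a' \<le> a" using nO by (simp add: a_def a'_def)
    have a1: "a \<le> \<rho>0" using uu by (simp add: a_def)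
    have ar: "ereal (O.nW u) < conv_radius \<alpha>"
      using aa a1 p0(2) unfolding a'_def by (meson ereal_less_eq(3) order.strict_trans1 order_trans)
    have Wb: "O.inW (Wmap \<alpha> u) \<and> O.nW (Wmap \<alpha> u) \<le> (\<Sum>k. if 2 \<le> k then \<bar>\<alpha> k\<bar> * a' ^ k else 0)"
      using O.Wmap_bound[OF uO ar] unfolding a'_def by blast
    have "(\<Sum>k. if 2 \<le> k then \<bar>\<alpha> k\<bar> * a' ^ k else 0) \<le> a' ^ 2 * A0"
      unfolding A0_def by (rule A0_bound(2)[OF p0 a'0]) (use aa a1 in simp)
    also have "\<dots> \<le> a ^ 2 * A0" using aa a'0 A0n by (intro mult_right_mono power_mono) auto
    finally have WO: "O.nW (Wmap \<alpha> u) \<le> a ^ 2 * A0" using Wb by simp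
    define E where "E = exp (- (9/4) * L powr cc)"
    have E0: "0 < E" by (simp add: E_def)
    define t where "t = (\<lambda>m. if maxnorm m \<ge> 3 * L then Wmap \<alpha> u m else 0)"
    have pt: "weight (1/4) cc m * cmod (t m) \<le> E * (omw L m * cmod (Wmap \<alpha> u m))" for m
    proof (cases "maxnorm m \<ge> 3 * L")
      case True
      have "weight (1/4) cc m * cmod (t m) \<le> (E * omw L m) * cmod (Wmap \<alpha> u m)"
        using weight_le_omw[OF L True] True by (simp add: t_def E_def mult_right_mono)
      then show ?thesis by (simp add: ac_simps)
    next
      case False
      then show ?thesis using E0 O.wt_nonneg[of m "Wmap \<alpha> u"] by (simp add: t_def)
    qed
    have Ws: "(\<lambda>m. E * (omw L m * cmod (Wmap \<alpha> u m))) summable_on UNIV"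
      by (rule summable_on_cmult_right) (use Wb in \<open>simp add: O.inW_def\<close>)
    have wt0: "0 \<le> weight (1/4) cc m * cmod (t m)" for m
    proof -
      interpret W4: wsp "weight (1/4) cc :: int^'n \<Rightarrow> real" by (rule wsp_weight) auto
      show ?thesis by (rule W4.wt_nonneg)
    qed
    have ts: "(\<lambda>m. weight (1/4) cc m * cmod (t m)) summable_on UNIV"
      by (rule summable_on_comparison_test[OF Ws]) (use pt wt0 in auto)
    have "normX (1/4) cc t \<le> infsum (\<lambda>m. E * (omw L m * cmod (Wmap \<alpha> u m))) UNIV"
      unfolding normX_def by (rule infsum_mono[OF ts Ws]) (use pt in auto)
    also have "\<dots> = E * O.nW (Wmap \<alpha> u)" unfolding O.nW_def by (rule infsum_cmult_right')
    also have "\<dots> \<le> E * (a ^ 2 * A0)" using WO E0 by simp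
    also have "\<dots> \<le> DW * E * a ^ 2"
      using DW_A0 E0 by (simp add: mult_left_mono mult_right_mono ac_simps)
    finally have nb: "normX (1/4) cc t \<le> DW * E * a ^ 2" .
    show "inX (1/4) cc (\<lambda>m. if maxnorm m \<ge> 3 * L then Wmap \<alpha> u m else 0) \<and>
       normX (1/4) cc (\<lambda>m. if maxnorm m \<ge> 3 * L then Wmap \<alpha> u m else 0)
         \<le> DW * exp (- (9/4) * L powr cc) * (normX 1 cc u)\<^sup>2"
      using ts nb by (simp add: inX_def t_def E_def a_def)
  qed
  show ?thesis
    unfolding \<rho>0_def[symmetric]
    by (rule exI[of _ DW]) (use DW0 partB partC in blast)
qed

end
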